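(* For every non-trivial geometric lattice $\mathcal L$, the product $\bullet$ on $\mathcal{MD}(\mathcal L)$ is associative, graded commutative (i.e. $\Gamma_1\bullet\Gamma_2=(-1)^{\deg\Gamma_1\deg\Gamma_2}\Gamma_2\bullet\Gamma_1$), preserves degrees (degrees add), and has unit the class of the empty modular diagram $(\mathcal L,\mathrm{id}_{\mathcal L},\emptyset)$.
   Context: Geometric lattices. A geometric lattice is a finite lattice $\mathcal L$ (bottom $\hat0$, top $\hat1$, join $\vee$, meet $\wedge$) which is ranked (all maximal chains from $\hat0$ to a given element $F$ have the same length $\mathrm{rk}(F)$), atomic (every element is a join of atoms, i.e. rank-one elements) and semimodular ($\mathrm{rk}(F_1\wedge F_2)+\mathrm{rk}(F_1\vee F_2)\le\mathrm{rk}(F_1)+\mathrm{rk}(F_2)$). Elements are called flats, $\mathrm{At}(\mathcal L)$ denotes the set of atoms, and $\mathcal L$ is non-trivial if it has at least two elements. For a finite family $J$ of atoms, $\bigvee J$ is its join ($\bigvee\emptyset=\hat0$). Every interval $[F_1,F_2]$ is a geometric lattice, and products of geometric lattices are geometric lattices. A flat $F$ is modular if $\mathrm{rk}(F\wedge F')+\mathrm{rk}(F\vee F')=\mathrm{rk}(F)+\mathrm{rk}(F')$ for every flat $F'$. An embedding $\varphi:\mathcal L_1\to\mathcal L_2$ of geometric lattices is an injective order-preserving map preserving joins and sending atoms to atoms. Modular diagrams. Let $\mathcal L$ be a non-trivial geometric lattice. A modular extension of $\mathcal L$ is a pair $(\mathcal E,\iota)$ where $\mathcal E$ is a geometric lattice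 and $\iota:\mathcal L\to\mathcal E$ is an embedding whose image is an interval $[\hat0,F_\iota]$ with $F_\iota$ a modular flat of $\mathcal E$. A modular diagram of $\mathcal L$ is a triple $\Gamma=(\mathcal E,\iota,J)$ with $(\mathcal E,\iota)$ a modular extension and $J=(H_1,\dots,H_n)$ a finite word in the alphabet $\mathrm{At}(\mathcal E)$; its degree is $\deg\Gamma=n-2\big(\mathrm{rk}\bigvee J-\mathrm{rk}((\bigvee J)\wedge F_\iota)\big)$. $\mathcal{MD}(\mathcal L)$ is the $\mathbb Z$-graded $\mathbb Q$-vector space spanned by all modular diagrams, quotiented by the relations: (R1) $(\mathcal E,\iota,J)\sim-(\mathcal E,\iota,J')$ if $J'$ is obtained from $J$ by transposing two letters; (R2) $(\mathcal E,\iota,J)\sim(\mathcal E',\iota',J')$ if there is an embedding $\varphi:\mathcal E\to\mathcal E'$ with $\mathrm{rk}(\mathcal E)=\mathrm{rk}(\mathcal E')$, $\iota'=\varphi\circ\iota$ and $J'=\varphi(J)$ letterwise; (R3) $(\mathcal E,\iota,J)\sim0$ if $F_\iota\vee\bigvee J<\hat1_{\mathcal E}$; (R4) $(\mathcal E,\iota,J)\sim0$ if $\mathcal E\cong\mathcal E_1\times\mathcal E_2$ with $\mathcal E_1,\mathcal E_2$ non-trivial and $F_\iota\in\mathcal E_1\times\{\hat0\}$; (R5) $(\mathcal E,\iota,J)\sim0$ if there is a modular flat $F\ge F_\iota$ of $\mathcal E$ such that exactly two letters of $J$ are not below $F$. Product. For modular extensions $(\mathcal E_1,\iota_1),(\mathcal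 E_2,\iota_2)$ of $\mathcal L$, the pushout $\mathcal E_1\cup_{\mathcal L}\mathcal E_2$ is the subposet of $\mathcal E_1\times\mathcal E_2$ of pairs $(F_1,F_2)$ with $\iota_1^{-1}(F_1\wedge F_{\iota_1})=\iota_2^{-1}(F_2\wedge F_{\iota_2})$; it is a geometric lattice, and $\iota_{12}(A)=(\iota_1(A),\iota_2(A))$ makes it a modular extension of $\mathcal L$. Its atoms are the $(H,\hat0)$ with $H\in\mathrm{At}(\mathcal E_1)\setminus\iota_1(\mathcal L)$, the $(\hat0,H)$ with $H\in\mathrm{At}(\mathcal E_2)\setminus\iota_2(\mathcal L)$, and the $(\iota_1(H),\iota_2(H))$ with $H\in\mathrm{At}(\mathcal L)$, which identifies $\mathrm{At}(\mathcal E_1\cup_{\mathcal L}\mathcal E_2)$ with $\mathrm{At}(\mathcal E_1)\cup_{\mathrm{At}(\mathcal L)}\mathrm{At}(\mathcal E_2)$. The product is $(\mathcal E_1,\iota_1,J_1)\bullet(\mathcal E_2,\iota_2,J_2)=(\mathcal E_1\cup_{\mathcal L}\mathcal E_2,\iota_{12},J_1J_2)$ (concatenated word); it is well defined on $\mathcal{MD}(\mathcal L)$. *)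

theory Defs
  imports Complex_Main "HOL-Library.Nat_Bijection"
begin

text \<open>A (candidate) lattice is a carrier set of natural numbers together with an
order relation; only the values of the relation on the carrier matter.
Every finite lattice is isomorphic to one of this form.\<close>

record lat =
  lcar :: "nat set"
  lle  :: "nat \<Rightarrow> nat \<Rightarrow> bool"

definition is_lub :: "lat \<Rightarrow> nat set \<Rightarrow> nat \<Rightarrow> bool" where
  "is_lub L A x \<longleftrightarrow> x \<in> lcar L \<and> (\<forall>a\<in>A. lle L a x) \<and>
     (\<forall>y\<in>lcar L. (\<forall>a\<in>A. lle L a y) \<longrightarrow> lle L x y)"

definition is_glb :: "lat \<Rightarrow> nat set \<Rightarrow> nat \<Rightarrow> bool" where
  "is_glb L A x \<longleftrightarrow> x \<in> lcar L \<and> (\<forall>a\<in>A. lle L x a) \<and>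
     (\<forall>y\<in>lcar L. (\<forall>a\<in>A. lle L y a) \<longrightarrow> lle L y x)"

definition Join :: "lat \<Rightarrow> nat set \<Rightarrow> nat" where
  "Join L A = (THE x. is_lub L A x)"

definition Meet :: "lat \<Rightarrow> nat set \<Rightarrow> nat" where
  "Meet L A = (THE x. is_glb L A x)"

definition join :: "lat \<Rightarrow> nat \<Rightarrow> nat \<Rightarrow> nat" where
  "join L x y = Join L {x, y}"

definition meet :: "lat \<Rightarrow> nat \<Rightarrow> nat \<Rightarrow> nat" where
  "meet L x y = Meet L {x, y}"

definition bot :: "lat \<Rightarrow> nat" where
  "bot L = Join L {}"

definition top :: "lat \<Rightarrow> nat" where
  "top L = Meet L {}"

definition is_lattice :: "lat \<Rightarrow> bool" where
  "is_lattice L \<longleftrightarrow> finite (lcar L) \<and> lcar L \<noteq> {} \<and>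
     (\<forall>x\<in>lcar L. lle L x x) \<and>
     (\<forall>x\<in>lcar L. \<forall>y\<in>lcar L. lle L x y \<and> lle L y x \<longrightarrow> x = y) \<and>
     (\<forall>x\<in>lcar L. \<forall>y\<in>lcar L. \<forall>z\<in>lcar L. lle L x y \<and> lle L y z \<longrightarrow> lle L x z) \<and>
     (\<forall>x\<in>lcar L. \<forall>y\<in>lcar L. (\<exists>z. is_lub L {x, y} z) \<and> (\<exists>z. is_glb L {x, y} z))"

definition covers :: "lat \<Rightarrow> nat \<Rightarrow> nat \<Rightarrow> bool" where
  "covers L x y \<longleftrightarrow> x \<in> lcar L \<and> y \<in> lcar L \<and> lle L x y \<and> x \<noteq> y \<and>
     \<not> (\<exists>z\<in>lcar L. lle L x z \<and> x \<noteq> z \<and> lle L z y \<and> z \<noteq> y)"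

definition max_chain :: "lat \<Rightarrow> nat list \<Rightarrow> nat \<Rightarrow> bool" where
  "max_chain L xs F \<longleftrightarrow> xs \<noteq> [] \<and> hd xs = bot L \<and> last xs = F \<and>
     (\<forall>i. Suc i < length xs \<longrightarrow> covers L (xs ! i) (xs ! Suc i))"

definition ranked :: "lat \<Rightarrow> bool" where
  "ranked L \<longleftrightarrow> (\<forall>F\<in>lcar L. \<forall>xs ys. max_chain L xs F \<longrightarrow> max_chain L ys F
     \<longrightarrow> length xs = length ys)"

definition rk :: "lat \<Rightarrow> nat \<Rightarrow> nat" where
  "rk L F = length (SOME xs. max_chain L xs F) - 1"

definition atoms :: "lat \<Rightarrow> nat set" where
  "atoms L = {a \<in> lcar L. covers L (bot L) a}"

definition atomic :: "lat \<Rightarrow> bool" where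
  "atomic L \<longleftrightarrow> (\<forall>F\<in>lcar L. \<exists>A\<subseteq>atoms L. F = Join L A)"

definition semimodular :: "lat \<Rightarrow> bool" where
  "semimodular L \<longleftrightarrow> (\<forall>x\<in>lcar L. \<forall>y\<in>lcar L.
     rk L (meet L x y) + rk L (join L x y) \<le> rk L x + rk L y)"

definition geometric :: "lat \<Rightarrow> bool" where
  "geometric L \<longleftrightarrow> is_lattice L \<and> ranked L \<and> atomic L \<and> semimodular L"

definition nontrivial :: "lat \<Rightarrow> bool" where
  "nontrivial L \<longleftrightarrow> 2 \<le> card (lcar L)"

definition modular_flat :: "lat \<Rightarrow> nat \<Rightarrow> bool" where
  "modular_flat L F \<longleftrightarrow> F \<in> lcar L \<and> (\<forall>G\<in>lcar L.
     rk L (meet L F G) + rk L (join L F G) = rk L F + rk L G)"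

definition embedding :: "lat \<Rightarrow> lat \<Rightarrow> (nat \<Rightarrow> nat) \<Rightarrow> bool" where
  "embedding L1 L2 \<phi> \<longleftrightarrow> inj_on \<phi> (lcar L1) \<and> \<phi> ` lcar L1 \<subseteq> lcar L2 \<and>
     (\<forall>x\<in>lcar L1. \<forall>y\<in>lcar L1. lle L1 x y \<longrightarrow> lle L2 (\<phi> x) (\<phi> y)) \<and>
     (\<forall>x\<in>lcar L1. \<forall>y\<in>lcar L1. \<phi> (join L1 x y) = join L2 (\<phi> x) (\<phi> y)) \<and>
     \<phi> ` atoms L1 \<subseteq> atoms L2"

definition interval :: "lat \<Rightarrow> nat \<Rightarrow> nat \<Rightarrow> nat set" where
  "interval L a b = {x \<in> lcar L. lle L a x \<and> lle L x b}"

definition Fi :: "lat \<Rightarrow> (nat \<Rightarrow> nat) \<Rightarrow> nat" where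
  "Fi L \<iota> = \<iota> (top L)"

definition mod_ext :: "lat \<Rightarrow> lat \<Rightarrow> (nat \<Rightarrow> nat) \<Rightarrow> bool" where
  "mod_ext L E \<iota> \<longleftrightarrow> geometric E \<and> embedding L E \<iota> \<and>
     ((\<exists>F. modular_flat E F \<and> \<iota> ` lcar L = interval E (bot E) F))"

type_synonym diag = "lat \<times> (nat \<Rightarrow> nat) \<times> nat list"

fun is_diag :: "lat \<Rightarrow> diag \<Rightarrow> bool" where
  "is_diag L (E, \<iota>, J) \<longleftrightarrow> mod_ext L E \<iota> \<and> set J \<subseteq> atoms E"

fun deg :: "lat \<Rightarrow> diag \<Rightarrow> int" where
  "deg L (E, \<iota>, J) = int (length J) - 2 * (int (rk E (Join E (set J)))
       - int (rk E (meet E (Join E (set J)) (Fi L \<iota>))))"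

definition delta :: "diag \<Rightarrow> diag \<Rightarrow> rat" where
  "delta \<Gamma> = (\<lambda>d. if d = \<Gamma> then 1 else 0)"

text \<open>Generators of the relation subspace (R1)--(R5) in the free Q-vector space
(diag \<Rightarrow> rat, finitely supported) on the modular diagrams.\<close>
definition Rgen :: "lat \<Rightarrow> (diag \<Rightarrow> rat) set" where
  "Rgen L =
    {\<lambda>d. delta (E, \<iota>, J) d + delta (E, \<iota>, J') d | E \<iota> J J' i j.
       is_diag L (E, \<iota>, J) \<and> i < length J \<and> j < length J \<and> i \<noteq> j \<and>
       J' = J[i := J ! j, j := J ! i]}
    \<union> {\<lambda>d. delta (E, \<iota>, J) d - delta (E', \<iota>', J') d | E \<iota> J E' \<iota>' J' \<phi>.
       is_diag L (E, \<iota>, J) \<and> is_diag L (E', \<iota>', J') \<and> embedding E E' \<phi> \<and>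
       rk E (top E) = rk E' (top E') \<and> (\<forall>x\<in>lcar L. \<iota>' x = \<phi> (\<iota> x)) \<and> J' = map \<phi> J}
    \<union> {delta (E, \<iota>, J) | E \<iota> J.
       is_diag L (E, \<iota>, J) \<and> join E (Fi L \<iota>) (Join E (set J)) \<noteq> top E}
    \<union> {delta (E, \<iota>, J) | E \<iota> J.
       is_diag L (E, \<iota>, J) \<and>
       (\<exists>E1 E2 \<psi>. geometric E1 \<and> geometric E2 \<and> nontrivial E1 \<and> nontrivial E2 \<and>
          bij_betw \<psi> (lcar E) (lcar E1 \<times> lcar E2) \<and>
          (\<forall>x\<in>lcar E. \<forall>y\<in>lcar E. lle E x y \<longleftrightarrow>
              lle E1 (fst (\<psi> x)) (fst (\<psi> y)) \<and> lle E2 (snd (\<psi> x)) (snd (\<psi> y))) \<and>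
          snd (\<psi> (Fi L \<iota>)) = bot E2)}
    \<union> {delta (E, \<iota>, J) | E \<iota> J.
       is_diag L (E, \<iota>, J) \<and>
       (\<exists>F. modular_flat E F \<and> lle E (Fi L \<iota>) F \<and>
          card {i. i < length J \<and> \<not> lle E (J ! i) F} = 2)}"

inductive_set Rspan :: "lat \<Rightarrow> (diag \<Rightarrow> rat) set" for L where
  zero: "(\<lambda>_. 0) \<in> Rspan L"
| step: "g \<in> Rgen L \<Longrightarrow> v \<in> Rspan L \<Longrightarrow> (\<lambda>d. c * g d + v d) \<in> Rspan L"

definition MDeq :: "lat \<Rightarrow> (diag \<Rightarrow> rat) \<Rightarrow> (diag \<Rightarrow> rat) \<Rightarrow> bool" where
  "MDeq L x y \<longleftrightarrow> (\<lambda>d. x d - y d) \<in> Rspan L"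

definition pushout :: "lat \<Rightarrow> lat \<Rightarrow> (nat \<Rightarrow> nat) \<Rightarrow> lat \<Rightarrow> (nat \<Rightarrow> nat) \<Rightarrow> lat" where
  "pushout L E1 \<iota>1 E2 \<iota>2 =
     \<lparr> lcar = {prod_encode (F1, F2) | F1 F2. F1 \<in> lcar E1 \<and> F2 \<in> lcar E2 \<and>
                 the_inv_into (lcar L) \<iota>1 (meet E1 F1 (Fi L \<iota>1)) =
                 the_inv_into (lcar L) \<iota>2 (meet E2 F2 (Fi L \<iota>2))},
       lle = (\<lambda>x y. lle E1 (fst (prod_decode x)) (fst (prod_decode y)) \<and>
                    lle E2 (snd (prod_decode x)) (snd (prod_decode y))) \<rparr>"

definition pincl :: "(nat \<Rightarrow> nat) \<Rightarrow> (nat \<Rightarrow> nat) \<Rightarrow> nat \<Rightarrow> nat" where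
  "pincl \<iota>1 \<iota>2 = (\<lambda>A. prod_encode (\<iota>1 A, \<iota>2 A))"

definition lift1 :: "lat \<Rightarrow> (nat \<Rightarrow> nat) \<Rightarrow> lat \<Rightarrow> (nat \<Rightarrow> nat) \<Rightarrow> nat \<Rightarrow> nat" where
  "lift1 L \<iota>1 E2 \<iota>2 H =
     (if H \<in> \<iota>1 ` lcar L then prod_encode (H, \<iota>2 (the_inv_into (lcar L) \<iota>1 H))
      else prod_encode (H, bot E2))"

definition lift2 :: "lat \<Rightarrow> lat \<Rightarrow> (nat \<Rightarrow> nat) \<Rightarrow> (nat \<Rightarrow> nat) \<Rightarrow> nat \<Rightarrow> nat" where
  "lift2 L E1 \<iota>1 \<iota>2 H =
     (if H \<in> \<iota>2 ` lcar L then prod_encode (\<iota>1 (the_inv_into (lcar L) \<iota>2 H), H)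
      else prod_encode (bot E1, H))"

fun dprod :: "lat \<Rightarrow> diag \<Rightarrow> diag \<Rightarrow> diag" where
  "dprod L (E1, \<iota>1, J1) (E2, \<iota>2, J2) =
     (pushout L E1 \<iota>1 E2 \<iota>2, pincl \<iota>1 \<iota>2,
      map (lift1 L \<iota>1 E2 \<iota>2) J1 @ map (lift2 L E1 \<iota>1 \<iota>2) J2)"

end

theory Submission
  imports Defs
begin

section \<open>Basic lattice facts\<close>

locale latt =
  fixes L :: lat
  assumes is_lat: "is_lattice L"
begin

abbreviation "C \<equiv> lcar L"
abbreviation le (infix "\<sqsubseteq>" 50) where "x \<sqsubseteq> y \<equiv> lle L x y"

lemma fin: "finite C" and ne: "C \<noteq> {}"
  using is_lat unfolding is_lattice_def by auto

lemma refl[intro, simp]: "x \<in> C \<Longrightarrow> x \<sqsubseteq> x"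
  using is_lat unfolding is_lattice_def by auto

lemma antisym: "x \<in> C \<Longrightarrow> y \<in> C \<Longrightarrow> x \<sqsubseteq> y \<Longrightarrow> y \<sqsubseteq> x \<Longrightarrow> x = y"
  using is_lat unfolding is_lattice_def by blast

lemma trans: "x \<in> C \<Longrightarrow> y \<in> C \<Longrightarrow> z \<in> C \<Longrightarrow> x \<sqsubseteq> y \<Longrightarrow> y \<sqsubseteq> z \<Longrightarrow> x \<sqsubseteq> z"
  using is_lat unfolding is_lattice_def by blast

lemma lub2_ex: "x \<in> C \<Longrightarrow> y \<in> C \<Longrightarrow> \<exists>z. is_lub L {x, y} z"
  and glb2_ex: "x \<in> C \<Longrightarrow> y \<in> C \<Longrightarrow> \<exists>z. is_glb L {x, y} z"
  using is_lat unfolding is_lattice_def by blast+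

lemma lub_unique: "is_lub L A x \<Longrightarrow> is_lub L A y \<Longrightarrow> x = y"
  unfolding is_lub_def using antisym by blast

lemma glb_unique: "is_glb L A x \<Longrightarrow> is_glb L A y \<Longrightarrow> x = y"
  unfolding is_glb_def using antisym by blast

lemma lub_ne_ex: "finite A \<Longrightarrow> A \<noteq> {} \<Longrightarrow> A \<subseteq> C \<Longrightarrow> \<exists>z. is_lub L A z"
proof (induction A rule: finite_ne_induct)
  case (singleton x)
  then show ?case unfolding is_lub_def by auto
next
  case (insert x F)
  then obtain z where z: "is_lub L F z" by auto
  then have zC: "z \<in> C" unfolding is_lub_def by auto
  have xC: "x \<in> C" using insert.prems by auto
  obtain w where w: "is_lub L {x, z} w" using lub2_ex[OF xC zC] by blast
  have FC: "F \<subseteq> C" using insert.prems by auto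
  have "is_lub L (insert x F) w"
    unfolding is_lub_def
  proof (intro conjI ballI impI)
    show "w \<in> C" using w unfolding is_lub_def by auto
    fix a assume "a \<in> insert x F"
    then show "a \<sqsubseteq> w"
    proof
      assume "a = x" then show ?thesis using w unfolding is_lub_def by auto
    next
      assume "a \<in> F" then have "a \<sqsubseteq> z" using z unfolding is_lub_def by auto
      moreover have "z \<sqsubseteq> w" using w unfolding is_lub_def by auto
      ultimately show ?thesis using trans[of a z w] FC \<open>a \<in> F\<close> zC \<open>w \<in> C\<close> by auto
    qed
  next
    fix y assume yC: "y \<in> C" and ub: "\<forall>a\<in>insert x F. a \<sqsubseteq> y"
    then have "z \<sqsubseteq> y" using z unfolding is_lub_def by auto
    then show "w \<sqsubseteq> y" using w ub yC unfolding is_lub_def by auto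
  qed
  then show ?case by blast
qed

lemma glb_ne_ex: "finite A \<Longrightarrow> A \<noteq> {} \<Longrightarrow> A \<subseteq> C \<Longrightarrow> \<exists>z. is_glb L A z"
proof (induction A rule: finite_ne_induct)
  case (singleton x)
  then show ?case unfolding is_glb_def by auto
next
  case (insert x F)
  then obtain z where z: "is_glb L F z" by auto
  then have zC: "z \<in> C" unfolding is_glb_def by auto
  have xC: "x \<in> C" using insert.prems by auto
  obtain w where w: "is_glb L {x, z} w" using glb2_ex[OF xC zC] by blast
  have FC: "F \<subseteq> C" using insert.prems by auto
  have "is_glb L (insert x F) w"
    unfolding is_glb_def
  proof (intro conjI ballI impI)
    show "w \<in> C" using w unfolding is_glb_def by auto
    fix a assume "a \<in> insert x F"
    then show "w \<sqsubseteq> a"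
    proof
      assume "a = x" then show ?thesis using w unfolding is_glb_def by auto
    next
      assume "a \<in> F" then have "z \<sqsubseteq> a" using z unfolding is_glb_def by auto
      moreover have "w \<sqsubseteq> z" using w unfolding is_glb_def by auto
      ultimately show ?thesis using trans[of w z a] FC \<open>a \<in> F\<close> zC \<open>w \<in> C\<close> by auto
    qed
  next
    fix y assume yC: "y \<in> C" and ub: "\<forall>a\<in>insert x F. y \<sqsubseteq> a"
    then have "y \<sqsubseteq> z" using z unfolding is_glb_def by auto
    then show "y \<sqsubseteq> w" using w ub yC unfolding is_glb_def by auto
  qed
  then show ?case by blast
qed

lemma lub_ex: assumes "A \<subseteq> C" shows "\<exists>z. is_lub L A z"
proof (cases "A = {}")
  case True
  obtain z where "is_glb L C z" using glb_ne_ex fin ne by blast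
  then have "is_lub L A z" using True unfolding is_glb_def is_lub_def by auto
  then show ?thesis by blast
next
  case False
  have "finite A" using assms fin by (rule rev_finite_subset[rotated])
  then show ?thesis using lub_ne_ex[OF _ False assms] by blast
qed

lemma glb_ex: assumes "A \<subseteq> C" shows "\<exists>z. is_glb L A z"
proof (cases "A = {}")
  case True
  obtain z where "is_lub L C z" using lub_ne_ex fin ne by blast
  then have "is_glb L A z" using True unfolding is_glb_def is_lub_def by auto
  then show ?thesis by blast
next
  case False
  have "finite A" using assms fin by (rule rev_finite_subset[rotated])
  then show ?thesis using glb_ne_ex[OF _ False assms] by blast
qed

lemma Join_lub: assumes "A \<subseteq> C" shows "is_lub L A (Join L A)"
proof -
  obtain z where z: "is_lub L A z" using lub_ex[OF assms] by blast
  have "Join L A = z" unfolding Join_def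
    by (rule the_equality[where P="is_lub L A", OF z]) (rule lub_unique[OF _ z])
  then show ?thesis using z by simp
qed

lemma Meet_glb: assumes "A \<subseteq> C" shows "is_glb L A (Meet L A)"
proof -
  obtain z where z: "is_glb L A z" using glb_ex[OF assms] by blast
  have "Meet L A = z" unfolding Meet_def
    by (rule the_equality[where P="is_glb L A", OF z]) (rule glb_unique[OF _ z])
  then show ?thesis using z by simp
qed

lemma Join_eq: "is_lub L A x \<Longrightarrow> Join L A = x"
  unfolding Join_def using lub_unique by blast

lemma Meet_eq: "is_glb L A x \<Longrightarrow> Meet L A = x"
  unfolding Meet_def using glb_unique by blast

lemma Join_in: "A \<subseteq> C \<Longrightarrow> Join L A \<in> C"
  using Join_lub unfolding is_lub_def by blast
lemma Join_ub: "A \<subseteq> C \<Longrightarrow> a \<in> A \<Longrightarrow> a \<sqsubseteq> Join L A"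
  using Join_lub unfolding is_lub_def by blast
lemma Join_least: "A \<subseteq> C \<Longrightarrow> y \<in> C \<Longrightarrow> (\<And>a. a \<in> A \<Longrightarrow> a \<sqsubseteq> y) \<Longrightarrow> Join L A \<sqsubseteq> y"
  using Join_lub unfolding is_lub_def by blast
lemma Join_mono: "A \<subseteq> B \<Longrightarrow> B \<subseteq> C \<Longrightarrow> Join L A \<sqsubseteq> Join L B"
  by (meson Join_in Join_least Join_ub dual_order.trans subsetD)

lemma Meet_in: "A \<subseteq> C \<Longrightarrow> Meet L A \<in> C"
  using Meet_glb unfolding is_glb_def by blast
lemma Meet_lb: "A \<subseteq> C \<Longrightarrow> a \<in> A \<Longrightarrow> Meet L A \<sqsubseteq> a"
  using Meet_glb unfolding is_glb_def by blast
lemma Meet_greatest: "A \<subseteq> C \<Longrightarrow> y \<in> C \<Longrightarrow> (\<And>a. a \<in> A \<Longrightarrow> y \<sqsubseteq> a) \<Longrightarrow> y \<sqsubseteq> Meet L A"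
  using Meet_glb unfolding is_glb_def by blast

abbreviation jn (infixl "\<squnion>" 65) where "x \<squnion> y \<equiv> join L x y"
abbreviation mt (infixl "\<sqinter>" 70) where "x \<sqinter> y \<equiv> meet L x y"

lemma join_in[simp, intro]: "x \<in> C \<Longrightarrow> y \<in> C \<Longrightarrow> x \<squnion> y \<in> C"
  unfolding join_def by (rule Join_in) auto
lemma join_ub1: "x \<in> C \<Longrightarrow> y \<in> C \<Longrightarrow> x \<sqsubseteq> x \<squnion> y"
  unfolding join_def by (rule Join_ub) auto
lemma join_ub2: "x \<in> C \<Longrightarrow> y \<in> C \<Longrightarrow> y \<sqsubseteq> x \<squnion> y"
  unfolding join_def by (rule Join_ub) auto
lemma join_least: "x \<in> C \<Longrightarrow> y \<in> C \<Longrightarrow> z \<in> C \<Longrightarrow> x \<sqsubseteq> z \<Longrightarrow> y \<sqsubseteq> z \<Longrightarrow> x \<squnion> y \<sqsubseteq> z"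
  unfolding join_def by (rule Join_least) auto
lemma meet_in[simp, intro]: "x \<in> C \<Longrightarrow> y \<in> C \<Longrightarrow> x \<sqinter> y \<in> C"
  unfolding meet_def by (rule Meet_in) auto
lemma meet_lb1: "x \<in> C \<Longrightarrow> y \<in> C \<Longrightarrow> x \<sqinter> y \<sqsubseteq> x"
  unfolding meet_def by (rule Meet_lb) auto
lemma meet_lb2: "x \<in> C \<Longrightarrow> y \<in> C \<Longrightarrow> x \<sqinter> y \<sqsubseteq> y"
  unfolding meet_def by (rule Meet_lb) auto
lemma meet_greatest: "x \<in> C \<Longrightarrow> y \<in> C \<Longrightarrow> z \<in> C \<Longrightarrow> z \<sqsubseteq> x \<Longrightarrow> z \<sqsubseteq> y \<Longrightarrow> z \<sqsubseteq> x \<sqinter> y"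
  unfolding meet_def by (rule Meet_greatest) auto

lemma join_eq: "x \<in> C \<Longrightarrow> y \<in> C \<Longrightarrow> z \<in> C \<Longrightarrow> x \<sqsubseteq> z \<Longrightarrow> y \<sqsubseteq> z
  \<Longrightarrow> (\<And>w. w \<in> C \<Longrightarrow> x \<sqsubseteq> w \<Longrightarrow> y \<sqsubseteq> w \<Longrightarrow> z \<sqsubseteq> w) \<Longrightarrow> x \<squnion> y = z"
  unfolding join_def by (rule Join_eq) (auto simp: is_lub_def)
lemma meet_eq: "x \<in> C \<Longrightarrow> y \<in> C \<Longrightarrow> z \<in> C \<Longrightarrow> z \<sqsubseteq> x \<Longrightarrow> z \<sqsubseteq> y
  \<Longrightarrow> (\<And>w. w \<in> C \<Longrightarrow> w \<sqsubseteq> x \<Longrightarrow> w \<sqsubseteq> y \<Longrightarrow> w \<sqsubseteq> z) \<Longrightarrow> x \<sqinter> y = z"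
  unfolding meet_def by (rule Meet_eq) (auto simp: is_glb_def)

lemma join_comm: "x \<squnion> y = y \<squnion> x"
  unfolding join_def by (simp add: insert_commute)
lemma meet_comm: "x \<sqinter> y = y \<sqinter> x"
  unfolding meet_def by (simp add: insert_commute)

lemma join_le_iff: "x \<in> C \<Longrightarrow> y \<in> C \<Longrightarrow> z \<in> C \<Longrightarrow> x \<squnion> y \<sqsubseteq> z \<longleftrightarrow> x \<sqsubseteq> z \<and> y \<sqsubseteq> z"
  by (meson join_in join_least join_ub1 join_ub2 local.trans)
lemma le_meet_iff: "x \<in> C \<Longrightarrow> y \<in> C \<Longrightarrow> z \<in> C \<Longrightarrow> z \<sqsubseteq> x \<sqinter> y \<longleftrightarrow> z \<sqsubseteq> x \<and> z \<sqsubseteq> y"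
  by (meson meet_in meet_greatest meet_lb1 meet_lb2 local.trans)

lemma join_absorb: "x \<in> C \<Longrightarrow> y \<in> C \<Longrightarrow> x \<sqsubseteq> y \<Longrightarrow> x \<squnion> y = y"
  by (rule join_eq) auto
lemma join_absorb2: "x \<in> C \<Longrightarrow> y \<in> C \<Longrightarrow> y \<sqsubseteq> x \<Longrightarrow> x \<squnion> y = x"
  by (rule join_eq) auto
lemma meet_absorb: "x \<in> C \<Longrightarrow> y \<in> C \<Longrightarrow> x \<sqsubseteq> y \<Longrightarrow> x \<sqinter> y = x"
  by (rule meet_eq) auto
lemma meet_absorb2: "x \<in> C \<Longrightarrow> y \<in> C \<Longrightarrow> y \<sqsubseteq> x \<Longrightarrow> x \<sqinter> y = y"
  by (rule meet_eq) auto
lemma le_join_iff: "x \<in> C \<Longrightarrow> y \<in> C \<Longrightarrow> x \<sqsubseteq> y \<longleftrightarrow> x \<squnion> y = y"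
  using join_absorb join_ub1 by metis

lemma join_assoc: assumes C: "x \<in> C" "y \<in> C" "z \<in> C" shows "x \<squnion> y \<squnion> z = x \<squnion> (y \<squnion> z)"
proof -
  have T: "x \<squnion> (y \<squnion> z) \<in> C" "y \<squnion> z \<in> C" "x \<squnion> y \<in> C" using C by auto
  have 1: "x \<sqsubseteq> x \<squnion> (y \<squnion> z)" "y \<squnion> z \<sqsubseteq> x \<squnion> (y \<squnion> z)"
    using join_ub1 join_ub2 C T by auto
  have 2: "y \<sqsubseteq> y \<squnion> z" "z \<sqsubseteq> y \<squnion> z" using join_ub1 join_ub2 C by auto
  show ?thesis
  proof (rule join_eq)
    show "x \<squnion> y \<sqsubseteq> x \<squnion> (y \<squnion> z)"
      using join_least[OF C(1,2) T(1) 1(1)] trans[OF C(2) T(2) T(1) 2(1) 1(2)] by blast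
    show "z \<sqsubseteq> x \<squnion> (y \<squnion> z)" using trans[OF C(3) T(2) T(1) 2(2) 1(2)] .
    fix w assume w: "w \<in> C" "x \<squnion> y \<sqsubseteq> w" "z \<sqsubseteq> w"
    have "x \<sqsubseteq> w" "y \<sqsubseteq> w" using w join_le_iff C by auto
    then show "x \<squnion> (y \<squnion> z) \<sqsubseteq> w" using w join_le_iff C T by auto
  qed (use C T in auto)
qed
lemma meet_assoc: assumes C: "x \<in> C" "y \<in> C" "z \<in> C" shows "x \<sqinter> y \<sqinter> z = x \<sqinter> (y \<sqinter> z)"
proof -
  have T: "x \<sqinter> (y \<sqinter> z) \<in> C" "y \<sqinter> z \<in> C" "x \<sqinter> y \<in> C" using C by auto
  have 1: "x \<sqinter> (y \<sqinter> z) \<sqsubseteq> x" "x \<sqinter> (y \<sqinter> z) \<sqsubseteq> y \<sqinter> z"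
    using meet_lb1 meet_lb2 C T by auto
  have 2: "y \<sqinter> z \<sqsubseteq> y" "y \<sqinter> z \<sqsubseteq> z" using meet_lb1 meet_lb2 C by auto
  show ?thesis
  proof (rule meet_eq)
    show "x \<sqinter> (y \<sqinter> z) \<sqsubseteq> x \<sqinter> y"
      using meet_greatest[OF C(1,2) T(1) 1(1)] trans[OF T(1) T(2) C(2) 1(2) 2(1)] by blast
    show "x \<sqinter> (y \<sqinter> z) \<sqsubseteq> z" using trans[OF T(1) T(2) C(3) 1(2) 2(2)] .
    fix w assume w: "w \<in> C" "w \<sqsubseteq> x \<sqinter> y" "w \<sqsubseteq> z"
    have "w \<sqsubseteq> x" "w \<sqsubseteq> y" using w le_meet_iff C by auto
    then show "w \<sqsubseteq> x \<sqinter> (y \<sqinter> z)" using w le_meet_iff C T by auto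
  qed (use C T in auto)
qed

lemma join_mono: "x \<in> C \<Longrightarrow> y \<in> C \<Longrightarrow> x' \<in> C \<Longrightarrow> y' \<in> C \<Longrightarrow> x \<sqsubseteq> x' \<Longrightarrow> y \<sqsubseteq> y' \<Longrightarrow> x \<squnion> y \<sqsubseteq> x' \<squnion> y'"
  by (simp add: join_le_iff) (meson join_in join_ub1 join_ub2 local.trans)
lemma meet_mono: "x \<in> C \<Longrightarrow> y \<in> C \<Longrightarrow> x' \<in> C \<Longrightarrow> y' \<in> C \<Longrightarrow> x \<sqsubseteq> x' \<Longrightarrow> y \<sqsubseteq> y' \<Longrightarrow> x \<sqinter> y \<sqsubseteq> x' \<sqinter> y'"
  by (simp add: le_meet_iff) (meson meet_in meet_lb1 meet_lb2 local.trans)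

lemma bot_in[simp, intro]: "bot L \<in> C"
  unfolding bot_def by (rule Join_in) auto
lemma bot_le: "x \<in> C \<Longrightarrow> bot L \<sqsubseteq> x"
  unfolding bot_def using Join_lub[of "{}"] unfolding is_lub_def by auto
lemma top_in[simp, intro]: "top L \<in> C"
  unfolding top_def by (rule Meet_in) auto
lemma le_top: "x \<in> C \<Longrightarrow> x \<sqsubseteq> top L"
  unfolding top_def using Meet_glb[of "{}"] unfolding is_glb_def by auto
lemma bot_eq: "b \<in> C \<Longrightarrow> (\<And>x. x \<in> C \<Longrightarrow> b \<sqsubseteq> x) \<Longrightarrow> bot L = b"
  unfolding bot_def by (rule Join_eq) (auto simp: is_lub_def)
lemma top_eq: "b \<in> C \<Longrightarrow> (\<And>x. x \<in> C \<Longrightarrow> x \<sqsubseteq> b) \<Longrightarrow> top L = b"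
  unfolding top_def by (rule Meet_eq) (auto simp: is_glb_def)

lemma Join_empty: "Join L {} = bot L" by (simp add: bot_def)

lemma Join_insert: assumes "insert a A \<subseteq> C" shows "Join L (insert a A) = a \<squnion> Join L A"
proof -
  have aC: "a \<in> C" and AC: "A \<subseteq> C" using assms by auto
  have JA: "Join L A \<in> C" using Join_in AC by blast
  have JI: "Join L (insert a A) \<in> C" using Join_in assms by blast
  show ?thesis
  proof (rule sym, rule join_eq[OF aC JA JI])
    show "a \<sqsubseteq> Join L (insert a A)" using Join_ub[OF assms] by simp
    show "Join L A \<sqsubseteq> Join L (insert a A)" using Join_mono[OF _ assms] by (simp add: subset_insertI)
    fix w assume wC: "w \<in> C" and aw: "a \<sqsubseteq> w" and Aw: "Join L A \<sqsubseteq> w"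
    show "Join L (insert a A) \<sqsubseteq> w"
    proof (rule Join_least[OF assms wC])
      fix b assume "b \<in> insert a A"
      then show "b \<sqsubseteq> w"
      proof
        assume "b \<in> A"
        have bC: "b \<in> C" using AC \<open>b \<in> A\<close> by blast
        have "b \<sqsubseteq> Join L A" using Join_ub[OF AC \<open>b \<in> A\<close>] .
        then show ?thesis using trans[OF bC JA wC _ Aw] by blast
      qed (use aw in simp)
    qed
  qed
qed

lemma Join_union: assumes "A \<subseteq> C" "B \<subseteq> C" shows "Join L (A \<union> B) = Join L A \<squnion> Join L B"
proof -
  have JA: "Join L A \<in> C" and JB: "Join L B \<in> C" and JU: "Join L (A \<union> B) \<in> C"
    using Join_in assms by auto
  show ?thesis
  proof (rule sym, rule join_eq[OF JA JB JU])
    have U: "A \<union> B \<subseteq> C" using assms by simp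
    show "Join L A \<sqsubseteq> Join L (A \<union> B)" using Join_mono[OF _ U] by simp
    show "Join L B \<sqsubseteq> Join L (A \<union> B)" using Join_mono[OF _ U] by simp
    fix w assume wC: "w \<in> C" and aw: "Join L A \<sqsubseteq> w" and bw: "Join L B \<sqsubseteq> w"
    show "Join L (A \<union> B) \<sqsubseteq> w"
    proof (rule Join_least)
      show "A \<union> B \<subseteq> C" using assms by auto
      fix b assume "b \<in> A \<union> B"
      then show "b \<sqsubseteq> w"
      proof
        assume bA: "b \<in> A"
        have bC: "b \<in> C" using assms bA by blast
        show ?thesis using trans[OF bC JA wC Join_ub[OF assms(1) bA] aw] .
      next
        assume bB: "b \<in> B"
        have bC: "b \<in> C" using assms bB by blast
        show ?thesis using trans[OF bC JB wC Join_ub[OF assms(2) bB] bw] .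
      qed
    qed fact
  qed
qed

end


context latt
begin

lemma covers_in: "covers L x y \<Longrightarrow> x \<in> C \<and> y \<in> C \<and> x \<sqsubseteq> y \<and> x \<noteq> y"
  unfolding covers_def by blast

lemma coversI: "x \<in> C \<Longrightarrow> y \<in> C \<Longrightarrow> x \<sqsubseteq> y \<Longrightarrow> x \<noteq> y \<Longrightarrow>
   (\<And>z. z \<in> C \<Longrightarrow> x \<sqsubseteq> z \<Longrightarrow> z \<sqsubseteq> y \<Longrightarrow> z = x \<or> z = y) \<Longrightarrow> covers L x y"
  unfolding covers_def by blast

lemma coversD: "covers L x y \<Longrightarrow> z \<in> C \<Longrightarrow> x \<sqsubseteq> z \<Longrightarrow> z \<sqsubseteq> y \<Longrightarrow> z = x \<or> z = y"
  unfolding covers_def by blast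

lemma below_card_less:
  assumes "w \<in> C" "z \<in> C" "w \<sqsubseteq> z" "w \<noteq> z"
  shows "card {u \<in> C. u \<sqsubseteq> w} < card {u \<in> C. u \<sqsubseteq> z}"
proof (rule psubset_card_mono)
  show "finite {u \<in> C. u \<sqsubseteq> z}" using fin by simp
  have "{u \<in> C. u \<sqsubseteq> w} \<subseteq> {u \<in> C. u \<sqsubseteq> z}"
  proof
    fix u assume "u \<in> {u \<in> C. u \<sqsubseteq> w}"
    then have "u \<in> C" "u \<sqsubseteq> w" by auto
    then show "u \<in> {u \<in> C. u \<sqsubseteq> z}" using trans[OF _ assms(1,2) _ assms(3)] by blast
  qed
  moreover have "z \<in> {u \<in> C. u \<sqsubseteq> z}" using assms by auto
  moreover have "z \<notin> {u \<in> C. u \<sqsubseteq> w}" using antisym[OF assms(1,2) assms(3)] assms(4) by auto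
  ultimately show "{u \<in> C. u \<sqsubseteq> w} \<subset> {u \<in> C. u \<sqsubseteq> z}" by blast
qed

lemma cover_below:
  assumes xC: "x \<in> C" and yC: "y \<in> C" and xy: "x \<sqsubseteq> y" "x \<noteq> y"
  shows "\<exists>w. x \<sqsubseteq> w \<and> covers L w y"
proof -
  define S where "S = {z \<in> C. x \<sqsubseteq> z \<and> z \<sqsubseteq> y \<and> z \<noteq> y}"
  define f where "f = (\<lambda>w. card {z \<in> C. z \<sqsubseteq> w})"
  have finS: "finite S" using fin unfolding S_def by simp
  have xS: "x \<in> S" using assms unfolding S_def by auto
  then have neS: "f ` S \<noteq> {}" by blast
  have "Max (f ` S) \<in> f ` S" using Max_in[OF finite_imageI[OF finS] neS] .
  then obtain w where wS: "w \<in> S" and wmax: "f w = Max (f ` S)" by auto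
  have wge: "\<And>w'. w' \<in> S \<Longrightarrow> f w' \<le> f w"
    using wmax finS by simp
  have wC: "w \<in> C" and xw: "x \<sqsubseteq> w" and wy: "w \<sqsubseteq> y" "w \<noteq> y" using wS unfolding S_def by auto
  have "covers L w y"
  proof (rule coversI[OF wC yC wy])
    fix z assume zC: "z \<in> C" and wz: "w \<sqsubseteq> z" and zy: "z \<sqsubseteq> y"
    show "z = w \<or> z = y"
    proof (rule ccontr)
      assume "\<not> (z = w \<or> z = y)"
      then have ne: "z \<noteq> w" "z \<noteq> y" by auto
      have "x \<sqsubseteq> z" using trans[OF xC wC zC xw wz] .
      then have "z \<in> S" using zC zy ne unfolding S_def by auto
      then have "f z \<le> f w" by (rule wge)
      moreover have "f w < f z" unfolding f_def using below_card_less[OF wC zC wz] ne by auto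
      ultimately show False by simp
    qed
  qed
  then show ?thesis using xw by blast
qed

lemma max_chain_snoc:
  assumes mc: "max_chain L xs x" and cv: "covers L x y"
  shows "max_chain L (xs @ [y]) y"
  unfolding max_chain_def
proof (intro conjI allI impI)
  have ne: "xs \<noteq> []" "hd xs = bot L" "last xs = x"
    and st: "\<And>i. Suc i < length xs \<Longrightarrow> covers L (xs ! i) (xs ! Suc i)"
    using mc unfolding max_chain_def by auto
  show "xs @ [y] \<noteq> []" by simp
  show "hd (xs @ [y]) = bot L" using ne by simp
  show "last (xs @ [y]) = y" by simp
  fix i assume i: "Suc i < length (xs @ [y])"
  show "covers L ((xs @ [y]) ! i) ((xs @ [y]) ! Suc i)"
  proof (cases "Suc i < length xs")
    case True
    then show ?thesis using st[OF True] by (simp add: nth_append)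
  next
    case False
    then have si: "Suc i = length xs" using i by simp
    then have il: "i < length xs" "i = length xs - 1" by simp_all
    have "xs ! i = last xs" using il(2) last_conv_nth[OF ne(1)] by simp
    then have "(xs @ [y]) ! i = x" using ne il(1) by (simp add: nth_append)
    moreover have "(xs @ [y]) ! Suc i = y" using si by (simp add: nth_append)
    ultimately show ?thesis using cv by simp
  qed
qed

lemma max_chain_bot: "max_chain L [bot L] (bot L)"
  unfolding max_chain_def by simp

lemma chain_ex: "F \<in> C \<Longrightarrow> \<exists>xs. max_chain L xs F"
proof (induction "card {z \<in> C. z \<sqsubseteq> F}" arbitrary: F rule: less_induct)
  case less
  show ?case
  proof (cases "F = bot L")
    case True
    then show ?thesis using max_chain_bot by blast
  next
    case False
    obtain w where "bot L \<sqsubseteq> w" and cv: "covers L w F"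
      using cover_below[OF bot_in less.prems bot_le[OF less.prems]] False by metis
    have wC: "w \<in> C" and wF: "w \<sqsubseteq> F" "w \<noteq> F" using covers_in[OF cv] by auto
    have "card {z \<in> C. z \<sqsubseteq> w} < card {z \<in> C. z \<sqsubseteq> F}"
      using below_card_less[OF wC less.prems wF] .
    then obtain xs where "max_chain L xs w" using less.hyps wC by blast
    then show ?thesis using max_chain_snoc cv by blast
  qed
qed

lemma chain_len:
  assumes cov: "\<And>x y. covers L x y \<Longrightarrow> r y = Suc (r x)" and r0: "r (bot L) = 0"
    and mc: "max_chain L xs F"
  shows "length xs = Suc (r F)"
proof -
  have ne: "xs \<noteq> []" "hd xs = bot L" "last xs = F"
    and st: "\<And>i. Suc i < length xs \<Longrightarrow> covers L (xs ! i) (xs ! Suc i)"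
    using mc unfolding max_chain_def by auto
  have "\<forall>i. i < length xs \<longrightarrow> r (xs ! i) = i"
  proof
    fix i show "i < length xs \<longrightarrow> r (xs ! i) = i"
    proof (induction i)
      case 0
      then show ?case using ne hd_conv_nth[OF ne(1)] r0 by simp
    next
      case (Suc i)
      then show ?case using st[of i] cov by auto
    qed
  qed
  moreover have "length xs - 1 < length xs" using ne by simp
  ultimately have "r (xs ! (length xs - 1)) = length xs - 1" by blast
  then have "r F = length xs - 1" using last_conv_nth[OF ne(1)] ne by simp
  then show ?thesis using ne by simp
qed

lemma ranked_cov:
  assumes rk: "ranked L" and cv: "covers L x y"
  shows "rk L y = Suc (rk L x)"
proof -
  have xC: "x \<in> C" and yC: "y \<in> C" using covers_in[OF cv] by auto
  obtain xs where xs: "max_chain L xs x" using chain_ex[OF xC] by blast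
  have ys: "max_chain L (xs @ [y]) y" using max_chain_snoc[OF xs cv] .
  have sx: "max_chain L (SOME zs. max_chain L zs x) x" using someI[of "\<lambda>zs. max_chain L zs x"] xs by blast
  have sy: "max_chain L (SOME zs. max_chain L zs y) y" using someI[of "\<lambda>zs. max_chain L zs y"] ys by blast
  have lx: "length (SOME zs. max_chain L zs x) = length xs"
    using rk xC sx xs unfolding ranked_def by blast
  have ly: "length (SOME zs. max_chain L zs y) = length (xs @ [y])"
    using rk yC sy ys unfolding ranked_def by blast
  have "xs \<noteq> []" using xs unfolding max_chain_def by simp
  then show ?thesis unfolding rk_def using lx ly by simp
qed

lemma ranked_bot:
  assumes rk: "ranked L" shows "rk L (bot L) = 0"
proof -
  have sx: "max_chain L (SOME zs. max_chain L zs (bot L)) (bot L)"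
    using someI[of "\<lambda>zs. max_chain L zs (bot L)"] max_chain_bot by blast
  have "length (SOME zs. max_chain L zs (bot L)) = length [bot L]"
    using rk sx max_chain_bot unfolding ranked_def by blast
  then show ?thesis unfolding rk_def by simp
qed

lemma mono_of_cov:
  assumes cov: "\<And>x y. covers L x y \<Longrightarrow> r y = Suc (r x)"
  shows "x \<in> C \<Longrightarrow> y \<in> C \<Longrightarrow> x \<sqsubseteq> y \<Longrightarrow> x \<noteq> y \<Longrightarrow> r x < r y"
proof (induction "card {z \<in> C. z \<sqsubseteq> y}" arbitrary: y rule: less_induct)
  case less
  obtain w where xw: "x \<sqsubseteq> w" and cv: "covers L w y" using cover_below less.prems by blast
  have wC: "w \<in> C" and wy: "w \<sqsubseteq> y" "w \<noteq> y" using covers_in[OF cv] by auto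
  have c: "card {z \<in> C. z \<sqsubseteq> w} < card {z \<in> C. z \<sqsubseteq> y}" using below_card_less[OF wC less.prems(2) wy] .
  have "r x \<le> r w"
  proof (cases "x = w")
    case False
    then show ?thesis using less.hyps[OF c _ wC] less.prems xw by simp
  qed simp
  then show ?case using cov[OF cv] by simp
qed

end

locale graded = latt +
  fixes r :: "nat \<Rightarrow> nat"
  assumes r_bot: "r (bot L) = 0"
    and r_mono: "x \<in> C \<Longrightarrow> y \<in> C \<Longrightarrow> x \<sqsubseteq> y \<Longrightarrow> x \<noteq> y \<Longrightarrow> r x < r y"
    and r_atom: "x \<in> C \<Longrightarrow> q \<in> atoms L \<Longrightarrow> r (x \<squnion> q) \<le> Suc (r x)"
    and sep: "x \<in> C \<Longrightarrow> y \<in> C \<Longrightarrow> \<not> x \<sqsubseteq> y \<Longrightarrow> \<exists>q\<in>atoms L. q \<sqsubseteq> x \<and> \<not> q \<sqsubseteq> y"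
begin

lemma atoms_in: "q \<in> atoms L \<Longrightarrow> q \<in> C"
  unfolding atoms_def by auto

lemma r_le: assumes "x \<in> C" "y \<in> C" "x \<sqsubseteq> y" shows "r x \<le> r y"
proof (cases "x = y")
  case False
  then show ?thesis using r_mono[OF assms False] by simp
qed simp

lemma cover_by_atom:
  assumes cv: "covers L x y"
  shows "\<exists>q\<in>atoms L. y = x \<squnion> q"
proof -
  have xC: "x \<in> C" and yC: "y \<in> C" and xy: "x \<sqsubseteq> y" "x \<noteq> y" using covers_in[OF cv] by auto
  have "\<not> y \<sqsubseteq> x" using antisym[OF xC yC xy(1)] xy(2) by auto
  then obtain q where q: "q \<in> atoms L" "q \<sqsubseteq> y" "\<not> q \<sqsubseteq> x" using sep[OF yC xC] by blast
  have qC: "q \<in> C" using atoms_in q(1) .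
  have jC: "x \<squnion> q \<in> C" using xC qC by simp
  have "x \<sqsubseteq> x \<squnion> q" using join_ub1[OF xC qC] .
  moreover have "x \<squnion> q \<sqsubseteq> y" using join_least[OF xC qC yC xy(1) q(2)] .
  moreover have "x \<squnion> q \<noteq> x" using join_ub2[OF xC qC] q(3) by auto
  ultimately have "x \<squnion> q = y" using coversD[OF cv jC] by blast
  then show ?thesis using q(1) by blast
qed

lemma cov_suc: "covers L x y \<Longrightarrow> r y = Suc (r x)"
proof -
  assume cv: "covers L x y"
  have xC: "x \<in> C" and yC: "y \<in> C" and xy: "x \<sqsubseteq> y" "x \<noteq> y" using covers_in[OF cv] by auto
  obtain q where q: "q \<in> atoms L" "y = x \<squnion> q" using cover_by_atom[OF cv] by blast
  have "r y \<le> Suc (r x)" using r_atom[OF xC q(1)] q(2) by simp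
  moreover have "r x < r y" using r_mono[OF xC yC xy] .
  ultimately show ?thesis by simp
qed

lemma is_ranked: "ranked L"
  unfolding ranked_def using chain_len[where r=r, OF cov_suc r_bot] by simp

lemma rk_eq: assumes "F \<in> C" shows "rk L F = r F"
proof -
  obtain xs where xs: "max_chain L xs F" using chain_ex[OF assms] by blast
  have "max_chain L (SOME zs. max_chain L zs F) F" using someI[of "\<lambda>zs. max_chain L zs F"] xs by blast
  then show ?thesis unfolding rk_def using chain_len[where r=r, OF cov_suc r_bot] by simp
qed

lemma semimod_step:
  assumes xC: "x \<in> C"
  shows "u \<in> C \<Longrightarrow> v \<in> C \<Longrightarrow> u \<sqsubseteq> v \<Longrightarrow> r (v \<squnion> x) + r u \<le> r (u \<squnion> x) + r v"
proof (induction "card {z \<in> C. z \<sqsubseteq> v}" arbitrary: v rule: less_induct)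
  case less
  show ?case
  proof (cases "u = v")
    case False
    obtain w where uw: "u \<sqsubseteq> w" and cv: "covers L w v" using cover_below less.prems False by blast
    have wC: "w \<in> C" and wv: "w \<sqsubseteq> v" "w \<noteq> v" using covers_in[OF cv] by auto
    have c: "card {z \<in> C. z \<sqsubseteq> w} < card {z \<in> C. z \<sqsubseteq> v}" using below_card_less[OF wC less.prems(2) wv] .
    have IH: "r (w \<squnion> x) + r u \<le> r (u \<squnion> x) + r w" using less.hyps[OF c less.prems(1) wC uw] .
    obtain q where q: "q \<in> atoms L" "v = w \<squnion> q" using cover_by_atom[OF cv] by blast
    have qC: "q \<in> C" using atoms_in q(1) .
    have "v \<squnion> x = (w \<squnion> x) \<squnion> q"
      using q(2) join_assoc[OF wC qC xC] join_assoc[OF wC xC qC] join_comm[of q x] by simp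
    then have "r (v \<squnion> x) \<le> Suc (r (w \<squnion> x))" using r_atom[OF _ q(1)] wC xC by simp
    moreover have "r v = Suc (r w)" using cov_suc[OF cv] .
    ultimately show ?thesis using IH by simp
  qed simp
qed

lemma semimod: assumes "x \<in> C" "y \<in> C" shows "r (x \<sqinter> y) + r (x \<squnion> y) \<le> r x + r y"
proof -
  have mC: "x \<sqinter> y \<in> C" using assms by simp
  have "r (y \<squnion> x) + r (x \<sqinter> y) \<le> r ((x \<sqinter> y) \<squnion> x) + r y"
    using semimod_step[OF assms(1) mC assms(2) meet_lb2[OF assms]] .
  moreover have "(x \<sqinter> y) \<squnion> x = x" using join_absorb[OF mC assms(1) meet_lb1[OF assms]] .
  ultimately show ?thesis using join_comm[of y x] by simp
qed

lemma atoms_below_Join: assumes FC: "F \<in> C" shows "Join L {q \<in> atoms L. q \<sqsubseteq> F} = F"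
proof -
  let ?A = "{q \<in> atoms L. q \<sqsubseteq> F}"
  have AC: "?A \<subseteq> C" using atoms_in by auto
  have JC: "Join L ?A \<in> C" using Join_in[OF AC] .
  have 1: "Join L ?A \<sqsubseteq> F" using Join_least[OF AC FC] by blast
  have 2: "F \<sqsubseteq> Join L ?A"
  proof (rule ccontr)
    assume "\<not> F \<sqsubseteq> Join L ?A"
    then obtain q where q: "q \<in> atoms L" "q \<sqsubseteq> F" "\<not> q \<sqsubseteq> Join L ?A" using sep[OF FC JC] by blast
    then have "q \<in> ?A" by simp
    then show False using Join_ub[OF AC] q(3) by blast
  qed
  show ?thesis using antisym[OF JC FC 1 2] .
qed

lemma is_geometric: "geometric L"
  unfolding geometric_def
proof (intro conjI)
  show "is_lattice L" by (rule is_lat)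
  show "ranked L" by (rule is_ranked)
  show "atomic L" unfolding atomic_def
  proof
    fix F assume "F \<in> C"
    then have e: "F = Join L {q \<in> atoms L. q \<sqsubseteq> F}" using atoms_below_Join[of F] by simp
    have s: "{q \<in> atoms L. q \<sqsubseteq> F} \<subseteq> atoms L" by (rule Collect_restrict)
    show "\<exists>A\<subseteq>atoms L. F = Join L A" using e s by blast
  qed
  show "semimodular L" unfolding semimodular_def
    using semimod rk_eq by simp
qed

lemma atom_r: assumes "q \<in> atoms L" shows "r q = 1"
proof -
  have "covers L (bot L) q" using assms unfolding atoms_def by simp
  then have "r q = Suc (r (bot L))" by (rule cov_suc)
  then show ?thesis using r_bot by simp
qed

lemma atom_iff: "q \<in> atoms L \<longleftrightarrow> q \<in> C \<and> r q = 1"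
proof
  assume "q \<in> C \<and> r q = 1"
  then have qC: "q \<in> C" and rq: "r q = 1" by auto
  have ne: "bot L \<noteq> q" using rq r_bot by auto
  have "covers L (bot L) q"
  proof (rule coversI[OF bot_in qC bot_le[OF qC] ne])
    fix z assume zC: "z \<in> C" and bz: "bot L \<sqsubseteq> z" and zq: "z \<sqsubseteq> q"
    show "z = bot L \<or> z = q"
    proof (rule ccontr)
      assume "\<not> (z = bot L \<or> z = q)"
      then have "r (bot L) < r z" "r z < r q" using r_mono[OF bot_in zC bz] r_mono[OF zC qC zq] by auto
      then show False using rq r_bot by simp
    qed
  qed
  then show "q \<in> atoms L" unfolding atoms_def using qC by simp
qed (use atoms_in atom_r in auto)

lemma atom_join: assumes xC: "x \<in> C" and q: "q \<in> atoms L" "\<not> q \<sqsubseteq> x"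
  shows "r (x \<squnion> q) = Suc (r x)"
proof -
  have qC: "q \<in> C" using atoms_in q(1) .
  have "x \<squnion> q \<noteq> x" using join_ub2[OF xC qC] q(2) by auto
  then have "r x < r (x \<squnion> q)" using r_mono[OF xC _ join_ub1[OF xC qC]] xC qC by simp
  then show ?thesis using r_atom[OF xC q(1)] by simp
qed

lemma below_atom: assumes q: "q \<in> atoms L" and zC: "z \<in> C" and zq: "z \<sqsubseteq> q"
  shows "z = bot L \<or> z = q"
  using q zC zq unfolding atoms_def covers_def using bot_le by blast

lemma modular_law:
  assumes FC: "F \<in> C" and Fmod: "\<And>G. G \<in> C \<Longrightarrow> r (F \<sqinter> G) + r (F \<squnion> G) = r F + r G"
    and XC: "X \<in> C" and aC: "a \<in> C" and aF: "a \<sqsubseteq> F"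
  shows "(X \<squnion> a) \<sqinter> F = (X \<sqinter> F) \<squnion> a"
proof -
  define m where "m = (X \<sqinter> F) \<squnion> a"
  define n where "n = (X \<squnion> a) \<sqinter> F"
  have XF: "X \<sqinter> F \<in> C" and Xa: "X \<squnion> a \<in> C" using XC FC aC by auto
  have mC: "m \<in> C" and nC: "n \<in> C" unfolding m_def n_def using XF Xa FC aC by auto
  have XF_X: "X \<sqinter> F \<sqsubseteq> X" and XF_F: "X \<sqinter> F \<sqsubseteq> F" using meet_lb1 meet_lb2 XC FC by auto
  have X_Xa: "X \<sqsubseteq> X \<squnion> a" and a_Xa: "a \<sqsubseteq> X \<squnion> a" using join_ub1 join_ub2 XC aC by auto
  have XF_Xa: "X \<sqinter> F \<sqsubseteq> X \<squnion> a" using trans[OF XF XC Xa XF_X X_Xa] .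
  have mn: "m \<sqsubseteq> n" unfolding m_def n_def
    using join_least[OF XF aC nC[unfolded n_def]] meet_greatest[OF Xa FC XF XF_Xa XF_F]
      meet_greatest[OF Xa FC aC a_Xa aF] by blast
  have nF: "n \<sqsubseteq> F" unfolding n_def using meet_lb2[OF Xa FC] .
  have mF: "m \<sqsubseteq> F" using trans[OF mC nC FC mn nF] .
  have XF_m: "X \<sqinter> F \<sqsubseteq> m" unfolding m_def using join_ub1[OF XF aC] .
  have a_m: "a \<sqsubseteq> m" unfolding m_def using join_ub2[OF XF aC] .
  have mX: "m \<squnion> X = X \<squnion> a"
  proof (rule antisym)
    show "m \<squnion> X \<in> C" "X \<squnion> a \<in> C" using mC XC Xa by auto
    have "m \<sqsubseteq> X \<squnion> a" unfolding m_def using join_least[OF XF aC Xa XF_Xa a_Xa] .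
    then show "m \<squnion> X \<sqsubseteq> X \<squnion> a" using join_least[OF mC XC Xa _ X_Xa] by blast
    have "X \<sqsubseteq> m \<squnion> X" using join_ub2[OF mC XC] .
    moreover have "a \<sqsubseteq> m \<squnion> X" using trans[OF aC mC _ a_m join_ub1[OF mC XC]] mC XC by simp
    ultimately show "X \<squnion> a \<sqsubseteq> m \<squnion> X" using join_least[OF XC aC] mC XC by simp
  qed
  have mXm: "X \<sqinter> F \<sqsubseteq> m \<sqinter> X" using meet_greatest[OF mC XC XF XF_m XF_X] .
  have r1: "r (X \<sqinter> F) \<le> r (m \<sqinter> X)" using r_le[OF XF _ mXm] mC XC by simp
  have sm: "r (m \<sqinter> X) + r (m \<squnion> X) \<le> r m + r X" using semimod[OF mC XC] .
  have e1: "r (F \<sqinter> (X \<squnion> a)) + r (F \<squnion> (X \<squnion> a)) = r F + r (X \<squnion> a)" using Fmod[OF Xa] .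
  have e2: "r (F \<sqinter> X) + r (F \<squnion> X) = r F + r X" using Fmod[OF XC] .
  have "F \<squnion> (X \<squnion> a) = F \<squnion> X"
  proof -
    have "F \<squnion> (X \<squnion> a) = F \<squnion> (a \<squnion> X)" using join_comm[of X a] by simp
    also have "\<dots> = (F \<squnion> a) \<squnion> X" using join_assoc[OF FC aC XC] by simp
    also have "F \<squnion> a = F" using join_absorb2[OF FC aC aF] .
    finally show ?thesis by simp
  qed
  moreover have "F \<sqinter> (X \<squnion> a) = n" unfolding n_def using meet_comm by simp
  moreover have "F \<sqinter> X = X \<sqinter> F" using meet_comm by simp
  ultimately have "r n + r (F \<squnion> X) = r F + r (X \<squnion> a)" "r (X \<sqinter> F) + r (F \<squnion> X) = r F + r X"
    using e1 e2 by simp_all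
  then have "r n \<le> r m" using r1 sm mX by simp
  moreover have "m \<noteq> n \<Longrightarrow> r m < r n" using r_mono[OF mC nC mn] by simp
  ultimately have "m = n" by linarith
  then show ?thesis unfolding m_def n_def by simp
qed

end

lemma geometric_graded:
  assumes g: "geometric E"
  shows "graded E (rk E)"
proof -
  have lat: "is_lattice E" and rk: "ranked E" and at: "atomic E" and sm: "semimodular E"
    using g unfolding geometric_def by auto
  interpret latt E by (rule latt.intro[OF lat])
  have cov: "\<And>x y. covers E x y \<Longrightarrow> rk E y = Suc (rk E x)" using ranked_cov[OF rk] .
  show ?thesis
  proof (unfold_locales)
    show "rk E (bot E) = 0" using ranked_bot[OF rk] .
    show "\<And>x y. x \<in> lcar E \<Longrightarrow> y \<in> lcar E \<Longrightarrow> lle E x y \<Longrightarrow> x \<noteq> y \<Longrightarrow> rk E x < rk E y"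
      using mono_of_cov[where r="rk E", OF cov] by blast
  next
    fix x q assume xC: "x \<in> lcar E" and q: "q \<in> atoms E"
    have qC: "q \<in> lcar E" and cq: "covers E (bot E) q" using q unfolding atoms_def by auto
    have "rk E q = 1" using cov[OF cq] ranked_bot[OF rk] by simp
    moreover have "rk E (meet E x q) + rk E (join E x q) \<le> rk E x + rk E q"
      using sm xC qC unfolding semimodular_def by blast
    ultimately show "rk E (join E x q) \<le> Suc (rk E x)" by simp
  next
    fix x y assume xC: "x \<in> lcar E" and yC: "y \<in> lcar E" and nxy: "\<not> lle E x y"
    obtain A where A: "A \<subseteq> atoms E" "x = Join E A" using at xC unfolding atomic_def by blast
    have AC: "A \<subseteq> lcar E" using A(1) unfolding atoms_def by auto
    show "\<exists>q\<in>atoms E. lle E q x \<and> \<not> lle E q y"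
    proof (rule ccontr)
      assume "\<not> ?thesis"
      then have "\<And>a. a \<in> A \<Longrightarrow> lle E a y" using A(1) A(2) Join_ub[OF AC] by blast
      then have "lle E x y" using Join_least[OF AC yC] A(2) by blast
      then show False using nxy by simp
    qed
  qed
qed


locale mext =
  fixes L E :: lat and \<iota> :: "nat \<Rightarrow> nat"
  assumes gL: "geometric L" and me: "mod_ext L E \<iota>"
begin

lemma gE: "geometric E" using me unfolding mod_ext_def by simp

sublocale Lg: graded L "rk L" using geometric_graded[OF gL] .
sublocale Eg: graded E "rk E" using geometric_graded[OF gE] .

abbreviation "FF \<equiv> Fi L \<iota>"

lemma emb: "embedding L E \<iota>" using me unfolding mod_ext_def by simp

lemma inj: "inj_on \<iota> (lcar L)" and img: "\<iota> ` lcar L \<subseteq> lcar E"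
  and mono: "x \<in> lcar L \<Longrightarrow> y \<in> lcar L \<Longrightarrow> lle L x y \<Longrightarrow> lle E (\<iota> x) (\<iota> y)"
  and pjoin: "x \<in> lcar L \<Longrightarrow> y \<in> lcar L \<Longrightarrow> \<iota> (join L x y) = join E (\<iota> x) (\<iota> y)"
  and patoms: "\<iota> ` atoms L \<subseteq> atoms E"
  using emb unfolding embedding_def by auto

lemma img_in: "x \<in> lcar L \<Longrightarrow> \<iota> x \<in> lcar E" using img by blast

lemma refl_ord: assumes "x \<in> lcar L" "y \<in> lcar L" "lle E (\<iota> x) (\<iota> y)" shows "lle L x y"
proof -
  have "join E (\<iota> x) (\<iota> y) = \<iota> y" using Eg.join_absorb[OF img_in img_in] assms by blast
  then have "\<iota> (join L x y) = \<iota> y" using pjoin assms by simp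
  then have "join L x y = y" using inj assms Lg.join_in unfolding inj_on_def by blast
  then show ?thesis using Lg.le_join_iff assms by blast
qed

lemma ord_iff: "x \<in> lcar L \<Longrightarrow> y \<in> lcar L \<Longrightarrow> lle E (\<iota> x) (\<iota> y) \<longleftrightarrow> lle L x y"
  using refl_ord mono by blast

lemma FF_in: "FF \<in> lcar E" unfolding Fi_def using img_in[OF Lg.top_in] .

lemma interval_eq: "\<iota> ` lcar L = {x \<in> lcar E. lle E x FF}"
proof -
  obtain F where F: "modular_flat E F" "\<iota> ` lcar L = interval E (bot E) F"
    using me unfolding mod_ext_def by blast
  have FC: "F \<in> lcar E" using F(1) unfolding modular_flat_def by simp
  have "F \<in> interval E (bot E) F" unfolding interval_def using FC Eg.bot_le[OF FC] by simp
  then obtain t where t: "t \<in> lcar L" "F = \<iota> t" using F(2) by auto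
  have "FF \<in> interval E (bot E) F" using F(2) Lg.top_in unfolding Fi_def by blast
  then have "lle E FF F" unfolding interval_def by simp
  moreover have "lle E F FF" unfolding Fi_def using t mono[OF t(1) Lg.top_in Lg.le_top[OF t(1)]] by simp
  ultimately have "F = FF" using Eg.antisym FC FF_in by blast
  then have "\<iota> ` lcar L = interval E (bot E) FF" using F(2) by simp
  then show ?thesis unfolding interval_def using Eg.bot_le by auto
qed

lemma in_img: "x \<in> lcar E \<Longrightarrow> lle E x FF \<Longrightarrow> \<exists>t\<in>lcar L. x = \<iota> t"
  using interval_eq by auto

lemma le_FF: "x \<in> lcar L \<Longrightarrow> lle E (\<iota> x) FF"
  using interval_eq by auto

lemma Fmod: "modular_flat E FF"
proof -
  obtain F where F: "modular_flat E F" "\<iota> ` lcar L = interval E (bot E) F"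
    using me unfolding mod_ext_def by blast
  have FC: "F \<in> lcar E" using F(1) unfolding modular_flat_def by simp
  have "F \<in> interval E (bot E) F" unfolding interval_def using FC Eg.bot_le[OF FC] by simp
  then have "lle E F FF" using interval_eq F(2) by auto
  moreover have "lle E FF F" using F(2) Lg.top_in unfolding Fi_def interval_def by blast
  ultimately have "F = FF" using Eg.antisym FC FF_in by blast
  then show ?thesis using F(1) by simp
qed

lemma Fmod_eq: "G \<in> lcar E \<Longrightarrow> rk E (meet E FF G) + rk E (join E FF G) = rk E FF + rk E G"
  using Fmod unfolding modular_flat_def by blast

lemma i_bot: "\<iota> (bot L) = bot E"
proof -
  obtain t where t: "t \<in> lcar L" "bot E = \<iota> t" using in_img[OF Eg.bot_in Eg.bot_le[OF FF_in]] by blast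
  have "lle E (\<iota> (bot L)) (\<iota> t)" using mono[OF Lg.bot_in t(1) Lg.bot_le[OF t(1)]] .
  then show ?thesis using t Eg.antisym[OF img_in[OF Lg.bot_in] Eg.bot_in] Eg.bot_le[OF img_in[OF Lg.bot_in]] by simp
qed

lemma i_meet: assumes "x \<in> lcar L" "y \<in> lcar L" shows "\<iota> (meet L x y) = meet E (\<iota> x) (\<iota> y)"
proof (rule sym, rule Eg.meet_eq)
  show "\<iota> x \<in> lcar E" "\<iota> y \<in> lcar E" "\<iota> (meet L x y) \<in> lcar E" using assms img_in by auto
  show "lle E (\<iota> (meet L x y)) (\<iota> x)" using mono Lg.meet_lb1 assms by auto
  show "lle E (\<iota> (meet L x y)) (\<iota> y)" using mono Lg.meet_lb2 assms by auto
  fix w assume w: "w \<in> lcar E" "lle E w (\<iota> x)" "lle E w (\<iota> y)"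
  have "lle E w FF" using Eg.trans[OF w(1) img_in[OF assms(1)] FF_in w(2) le_FF[OF assms(1)]] .
  then obtain z where z: "z \<in> lcar L" "w = \<iota> z" using in_img w(1) by blast
  have "lle L z x" "lle L z y" using refl_ord z assms w by auto
  then have "lle L z (meet L x y)" using Lg.meet_greatest z assms by blast
  then show "lle E w (\<iota> (meet L x y))" using mono z assms by simp
qed

lemma covers_map: assumes "covers L a b" shows "covers E (\<iota> a) (\<iota> b)"
proof -
  have a: "a \<in> lcar L" "b \<in> lcar L" "lle L a b" "a \<noteq> b" using Lg.covers_in[OF assms] by auto
  show ?thesis
  proof (rule Eg.coversI)
    show "\<iota> a \<in> lcar E" "\<iota> b \<in> lcar E" using a img_in by auto
    show "lle E (\<iota> a) (\<iota> b)" using mono a by simp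
    show "\<iota> a \<noteq> \<iota> b" using inj a unfolding inj_on_def by blast
    fix z assume z: "z \<in> lcar E" "lle E (\<iota> a) z" "lle E z (\<iota> b)"
    have "lle E z FF" using Eg.trans[OF z(1) img_in[OF a(2)] FF_in z(3) le_FF[OF a(2)]] .
    then obtain w where w: "w \<in> lcar L" "z = \<iota> w" using in_img z(1) by blast
    have "lle L a w" "lle L w b" using refl_ord w a z by auto
    then have "w = a \<or> w = b" using Lg.coversD[OF assms w(1)] by blast
    then show "z = \<iota> a \<or> z = \<iota> b" using w by auto
  qed
qed

lemma rk_i: assumes xL: "x \<in> lcar L" shows "rk E (\<iota> x) = rk L x"
proof -
  obtain xs where xs: "max_chain L xs x" using Lg.chain_ex[OF xL] by blast
  have "max_chain E (map \<iota> xs) (\<iota> x)"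
    using xs unfolding max_chain_def
    by (auto simp: hd_map last_map i_bot covers_map)
  then have "length (map \<iota> xs) = Suc (rk E (\<iota> x))"
    using Eg.chain_len[where r="rk E", OF Eg.cov_suc Eg.r_bot] by blast
  moreover have "length xs = Suc (rk L x)"
    using Lg.chain_len[where r="rk L", OF Lg.cov_suc Lg.r_bot xs] .
  ultimately show ?thesis by simp
qed

definition tr :: "nat \<Rightarrow> nat" where
  "tr X = the_inv_into (lcar L) \<iota> (meet E X FF)"

lemma tr_props: assumes XC: "X \<in> lcar E"
  shows "tr X \<in> lcar L" "\<iota> (tr X) = meet E X FF"
proof -
  have mC: "meet E X FF \<in> lcar E" using XC FF_in by simp
  have "lle E (meet E X FF) FF" using Eg.meet_lb2[OF XC FF_in] .
  then have mi: "meet E X FF \<in> \<iota> ` lcar L" using interval_eq mC by auto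
  show "tr X \<in> lcar L" unfolding tr_def using the_inv_into_into[OF inj mi] by simp
  show "\<iota> (tr X) = meet E X FF" unfolding tr_def using f_the_inv_into_f[OF inj mi] .
qed

lemma tr_in: "X \<in> lcar E \<Longrightarrow> tr X \<in> lcar L" using tr_props by simp
lemma i_tr: "X \<in> lcar E \<Longrightarrow> \<iota> (tr X) = meet E X FF" using tr_props by simp

lemma tr_eqI: "X \<in> lcar E \<Longrightarrow> t \<in> lcar L \<Longrightarrow> \<iota> t = meet E X FF \<Longrightarrow> tr X = t"
  using tr_props inj unfolding inj_on_def by metis

lemma tr_i: assumes "x \<in> lcar L" shows "tr (\<iota> x) = x"
  using tr_eqI[OF img_in[OF assms] assms] Eg.meet_absorb[OF img_in[OF assms] FF_in le_FF[OF assms]] by simp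

lemma tr_mono: assumes "X \<in> lcar E" "Y \<in> lcar E" "lle E X Y" shows "lle L (tr X) (tr Y)"
proof -
  have "lle E (meet E X FF) (meet E Y FF)" using Eg.meet_mono[OF _ FF_in _ FF_in assms(3)] assms FF_in by simp
  then have "lle E (\<iota> (tr X)) (\<iota> (tr Y))" using i_tr assms by simp
  then show ?thesis using refl_ord tr_in assms by blast
qed

lemma rk_tr: "X \<in> lcar E \<Longrightarrow> rk L (tr X) = rk E (meet E X FF)"
  using rk_i[OF tr_in] i_tr by metis

lemma tr_le: "X \<in> lcar E \<Longrightarrow> lle E (\<iota> (tr X)) X"
  using i_tr Eg.meet_lb1 FF_in by simp

lemma rk_tr_le: "X \<in> lcar E \<Longrightarrow> rk L (tr X) \<le> rk E X"
  using rk_i[OF tr_in] Eg.r_le[OF img_in[OF tr_in] _ tr_le] by metis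

lemma modlaw: assumes "X \<in> lcar E" "a \<in> lcar E" "lle E a FF"
  shows "meet E (join E X a) FF = join E (meet E X FF) a"
  using Eg.modular_law[OF FF_in Fmod_eq assms] .

lemma tr_join_i: assumes XC: "X \<in> lcar E" and aL: "a \<in> lcar L"
  shows "tr (join E X (\<iota> a)) = join L (tr X) a"
proof (rule tr_eqI)
  show "join E X (\<iota> a) \<in> lcar E" using XC img_in[OF aL] by simp
  show "join L (tr X) a \<in> lcar L" using tr_in[OF XC] aL by simp
  have "meet E (join E X (\<iota> a)) FF = join E (meet E X FF) (\<iota> a)"
    using modlaw[OF XC img_in[OF aL] le_FF[OF aL]] .
  also have "\<dots> = join E (\<iota> (tr X)) (\<iota> a)" using i_tr[OF XC] by simp
  also have "\<dots> = \<iota> (join L (tr X) a)" using pjoin[OF tr_in[OF XC] aL] by simp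
  finally show "\<iota> (join L (tr X) a) = meet E (join E X (\<iota> a)) FF" by simp
qed

lemma rk_mod: assumes XC: "X \<in> lcar E"
  shows "rk E X + rk L (top L) = rk L (tr X) + rk E (join E X FF)"
proof -
  have "rk E (meet E FF X) + rk E (join E FF X) = rk E FF + rk E X" using Fmod_eq[OF XC] .
  moreover have "rk E FF = rk L (top L)" unfolding Fi_def using rk_i[OF Lg.top_in] .
  moreover have "meet E FF X = meet E X FF" using Eg.meet_comm by simp
  moreover have "join E FF X = join E X FF" using Eg.join_comm by simp
  ultimately show ?thesis using rk_tr[OF XC] by simp
qed

lemma tr_bot: "tr (bot E) = bot L"
  using tr_i[OF Lg.bot_in] i_bot by simp

lemma tr_FF: "tr FF = top L"
  unfolding Fi_def using tr_i[OF Lg.top_in] .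

lemma atom_in_F: assumes H: "H \<in> atoms E" "lle E H FF"
  shows "tr H \<in> atoms L" "\<iota> (tr H) = H"
proof -
  have HC: "H \<in> lcar E" using Eg.atoms_in H(1) .
  obtain h where h: "h \<in> lcar L" "H = \<iota> h" using in_img[OF HC H(2)] by blast
  have "tr H = h" using tr_i h by simp
  moreover have "rk L h = 1" using rk_i[OF h(1)] h(2) Eg.atom_r[OF H(1)] by simp
  ultimately show "tr H \<in> atoms L" using Lg.atom_iff h(1) by simp
  show "\<iota> (tr H) = H" using tr_i h by simp
qed

lemma atom_notin_F: assumes H: "H \<in> atoms E" "\<not> lle E H FF"
  shows "tr H = bot L"
proof -
  have HC: "H \<in> lcar E" using Eg.atoms_in H(1) .
  have mC: "meet E H FF \<in> lcar E" using HC FF_in by simp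
  have "meet E H FF = bot E \<or> meet E H FF = H" using Eg.below_atom[OF H(1) mC Eg.meet_lb1[OF HC FF_in]] .
  moreover have "meet E H FF \<noteq> H" using Eg.meet_lb2[OF HC FF_in] H(2) by auto
  ultimately have "meet E H FF = bot E" by simp
  then show ?thesis using tr_eqI[OF HC Lg.bot_in] i_bot by simp
qed

end


context latt
begin

lemma join_idem: "x \<in> C \<Longrightarrow> x \<squnion> x = x"
  using join_absorb[OF _ _ refl] by simp

lemma meet_idem: "x \<in> C \<Longrightarrow> x \<sqinter> x = x"
  using meet_absorb[OF _ _ refl] by simp

lemma meet_meet_F: assumes C: "x \<in> C" "y \<in> C" "f \<in> C"
  shows "(x \<sqinter> f) \<sqinter> (y \<sqinter> f) = (x \<sqinter> y) \<sqinter> f"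
proof (rule meet_eq)
  show "x \<sqinter> f \<in> C" "y \<sqinter> f \<in> C" "x \<sqinter> y \<sqinter> f \<in> C" using C by auto
  have z1: "x \<sqinter> y \<sqinter> f \<sqsubseteq> x \<sqinter> y" "x \<sqinter> y \<sqinter> f \<sqsubseteq> f" using meet_lb1 meet_lb2 C by auto
  have z2: "x \<sqinter> y \<sqsubseteq> x" "x \<sqinter> y \<sqsubseteq> y" using meet_lb1 meet_lb2 C by auto
  have zx: "x \<sqinter> y \<sqinter> f \<sqsubseteq> x" using trans[OF _ _ _ z1(1) z2(1)] C by simp
  have zy: "x \<sqinter> y \<sqinter> f \<sqsubseteq> y" using trans[OF _ _ _ z1(1) z2(2)] C by simp
  show "x \<sqinter> y \<sqinter> f \<sqsubseteq> x \<sqinter> f" using meet_greatest[OF C(1,3) _ zx z1(2)] C by simp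
  show "x \<sqinter> y \<sqinter> f \<sqsubseteq> y \<sqinter> f" using meet_greatest[OF C(2,3) _ zy z1(2)] C by simp
  fix w assume w: "w \<in> C" "w \<sqsubseteq> x \<sqinter> f" "w \<sqsubseteq> y \<sqinter> f"
  have "w \<sqsubseteq> x" "w \<sqsubseteq> f" "w \<sqsubseteq> y" using w le_meet_iff C by auto
  then show "w \<sqsubseteq> x \<sqinter> y \<sqinter> f" using le_meet_iff C w by auto
qed

end

context mext
begin

lemma tr_meet: assumes XC: "X \<in> lcar E" and YC: "Y \<in> lcar E"
  shows "tr (meet E X Y) = meet L (tr X) (tr Y)"
proof (rule tr_eqI)
  show "meet E X Y \<in> lcar E" using XC YC by simp
  show "meet L (tr X) (tr Y) \<in> lcar L" using tr_in XC YC by simp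
  have "\<iota> (meet L (tr X) (tr Y)) = meet E (\<iota> (tr X)) (\<iota> (tr Y))" using i_meet tr_in XC YC by simp
  also have "\<dots> = meet E (meet E X FF) (meet E Y FF)" using i_tr XC YC by simp
  also have "\<dots> = meet E (meet E X Y) FF" using Eg.meet_meet_F[OF XC YC FF_in] .
  finally show "\<iota> (meet L (tr X) (tr Y)) = meet E (meet E X Y) FF" .
qed

lemma in_img_iff: "H \<in> lcar E \<Longrightarrow> H \<in> \<iota> ` lcar L \<longleftrightarrow> lle E H FF"
  using interval_eq by auto

lemma inv_eq_tr: "H \<in> lcar E \<Longrightarrow> lle E H FF \<Longrightarrow> the_inv_into (lcar L) \<iota> H = tr H"
  using in_img the_inv_into_f_f[OF inj] tr_i by metis

end

locale po =
  m1: mext L E1 \<iota>1 + m2: mext L E2 \<iota>2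
  for L E1 E2 :: lat and \<iota>1 \<iota>2 :: "nat \<Rightarrow> nat"
begin

abbreviation "F1 \<equiv> Fi L \<iota>1"
abbreviation "F2 \<equiv> Fi L \<iota>2"

definition Pc :: "(nat \<times> nat) set" where
  "Pc = {(X1, X2). X1 \<in> lcar E1 \<and> X2 \<in> lcar E2 \<and> m1.tr X1 = m2.tr X2}"

definition pl :: "nat \<times> nat \<Rightarrow> nat \<times> nat \<Rightarrow> bool" where
  "pl a b \<longleftrightarrow> lle E1 (fst a) (fst b) \<and> lle E2 (snd a) (snd b)"

definition pj :: "nat \<times> nat \<Rightarrow> nat \<times> nat \<Rightarrow> nat \<times> nat" where
  "pj a b = (let c = join L (m1.tr (join E1 (fst a) (fst b))) (m2.tr (join E2 (snd a) (snd b)))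
     in (join E1 (join E1 (fst a) (fst b)) (\<iota>1 c), join E2 (join E2 (snd a) (snd b)) (\<iota>2 c)))"

definition pm :: "nat \<times> nat \<Rightarrow> nat \<times> nat \<Rightarrow> nat \<times> nat" where
  "pm a b = (meet E1 (fst a) (fst b), meet E2 (snd a) (snd b))"

definition rr :: "nat \<times> nat \<Rightarrow> nat" where
  "rr a = rk E1 (fst a) + rk E2 (snd a) - rk L (m1.tr (fst a))"

definition l1 :: "nat \<Rightarrow> nat \<times> nat" where
  "l1 H = (if lle E1 H F1 then (H, \<iota>2 (m1.tr H)) else (H, bot E2))"

definition l2 :: "nat \<Rightarrow> nat \<times> nat" where
  "l2 H = (if lle E2 H F2 then (\<iota>1 (m2.tr H), H) else (bot E1, H))"

lemma PcI: "X1 \<in> lcar E1 \<Longrightarrow> X2 \<in> lcar E2 \<Longrightarrow> m1.tr X1 = m2.tr X2 \<Longrightarrow> (X1, X2) \<in> Pc"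
  unfolding Pc_def by simp

lemma PcD: "a \<in> Pc \<Longrightarrow> fst a \<in> lcar E1 \<and> snd a \<in> lcar E2 \<and> m1.tr (fst a) = m2.tr (snd a)"
  unfolding Pc_def by auto

lemma fin_Pc: "finite Pc"
proof -
  have "Pc \<subseteq> lcar E1 \<times> lcar E2" unfolding Pc_def by auto
  moreover have "finite (lcar E1 \<times> lcar E2)" using m1.Eg.fin m2.Eg.fin by simp
  ultimately show ?thesis by (rule finite_subset)
qed

lemma bot_Pc: "(bot E1, bot E2) \<in> Pc"
  using PcI m1.tr_bot m2.tr_bot by simp

lemma pl_refl: "a \<in> Pc \<Longrightarrow> pl a a"
  unfolding pl_def using PcD by simp

lemma pl_antisym: assumes "a \<in> Pc" "b \<in> Pc" "pl a b" "pl b a" shows "a = b"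
proof -
  have A: "fst a \<in> lcar E1" "snd a \<in> lcar E2" "fst b \<in> lcar E1" "snd b \<in> lcar E2"
    using PcD assms by auto
  have "fst a = fst b" using m1.Eg.antisym[OF A(1,3)] assms(3,4) unfolding pl_def by simp
  moreover have "snd a = snd b" using m2.Eg.antisym[OF A(2,4)] assms(3,4) unfolding pl_def by simp
  ultimately show ?thesis by (simp add: prod_eq_iff)
qed

lemma pl_trans: assumes "a \<in> Pc" "b \<in> Pc" "c \<in> Pc" "pl a b" "pl b c" shows "pl a c"
proof -
  have A: "fst a \<in> lcar E1" "snd a \<in> lcar E2" "fst b \<in> lcar E1" "snd b \<in> lcar E2"
     "fst c \<in> lcar E1" "snd c \<in> lcar E2"
    using PcD assms by auto
  show ?thesis unfolding pl_def using m1.Eg.trans[OF A(1,3,5)] m2.Eg.trans[OF A(2,4,6)] assms(4,5)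
    unfolding pl_def by simp
qed

lemma ipair_Pc: "x \<in> lcar L \<Longrightarrow> (\<iota>1 x, \<iota>2 x) \<in> Pc"
  using PcI m1.img_in m2.img_in m1.tr_i m2.tr_i by simp

lemma pm_Pc: assumes "a \<in> Pc" "b \<in> Pc" shows "pm a b \<in> Pc"
  using PcD[OF assms(1)] PcD[OF assms(2)] m1.tr_meet m2.tr_meet unfolding pm_def
  by (intro PcI) auto

lemma pm_glb: assumes a: "a \<in> Pc" and b: "b \<in> Pc"
  shows "pl (pm a b) a" "pl (pm a b) b" "\<And>z. z \<in> Pc \<Longrightarrow> pl z a \<Longrightarrow> pl z b \<Longrightarrow> pl z (pm a b)"
  using PcD[OF a] PcD[OF b] unfolding pl_def pm_def
  by (auto intro: m1.Eg.meet_lb1 m1.Eg.meet_lb2 m2.Eg.meet_lb1 m2.Eg.meet_lb2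
     m1.Eg.meet_greatest m2.Eg.meet_greatest dest: PcD)

lemma pj_facts:
  assumes a: "a \<in> Pc" and b: "b \<in> Pc"
  defines "U1 \<equiv> join E1 (fst a) (fst b)" and "U2 \<equiv> join E2 (snd a) (snd b)"
  defines "c \<equiv> join L (m1.tr U1) (m2.tr U2)"
  shows "pj a b = (join E1 U1 (\<iota>1 c), join E2 U2 (\<iota>2 c))"
    and "c \<in> lcar L" "U1 \<in> lcar E1" "U2 \<in> lcar E2"
    and "m1.tr (join E1 U1 (\<iota>1 c)) = c" "m2.tr (join E2 U2 (\<iota>2 c)) = c"
proof -
  show "pj a b = (join E1 U1 (\<iota>1 c), join E2 U2 (\<iota>2 c))"
    unfolding pj_def U1_def U2_def c_def Let_def by simp
  show U1C: "U1 \<in> lcar E1" and U2C: "U2 \<in> lcar E2" unfolding U1_def U2_def using PcD a b by auto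
  have t1: "m1.tr U1 \<in> lcar L" and t2: "m2.tr U2 \<in> lcar L" using m1.tr_in[OF U1C] m2.tr_in[OF U2C] .
  show cL: "c \<in> lcar L" unfolding c_def using t1 t2 by simp
  have "m1.tr (join E1 U1 (\<iota>1 c)) = join L (m1.tr U1) c" using m1.tr_join_i[OF U1C cL] .
  also have "\<dots> = c" unfolding c_def using m1.Lg.join_absorb[OF t1 _ m1.Lg.join_ub1[OF t1 t2]] t1 t2 by simp
  finally show "m1.tr (join E1 U1 (\<iota>1 c)) = c" .
  have "m2.tr (join E2 U2 (\<iota>2 c)) = join L (m2.tr U2) c" using m2.tr_join_i[OF U2C cL] .
  also have "\<dots> = c" unfolding c_def using m1.Lg.join_absorb[OF t2 _ m1.Lg.join_ub2[OF t1 t2]] t1 t2 by simp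
  finally show "m2.tr (join E2 U2 (\<iota>2 c)) = c" .
qed

lemma pj_Pc: assumes "a \<in> Pc" "b \<in> Pc" shows "pj a b \<in> Pc"
  using pj_facts[OF assms] by (auto intro!: PcI m1.img_in m2.img_in)

lemma pj_ub: assumes a: "a \<in> Pc" and b: "b \<in> Pc" shows "pl a (pj a b)" "pl b (pj a b)"
proof -
  note f = pj_facts[OF a b]
  let ?U1 = "join E1 (fst a) (fst b)" and ?U2 = "join E2 (snd a) (snd b)"
  let ?c = "join L (m1.tr ?U1) (m2.tr ?U2)"
  have A: "fst a \<in> lcar E1" "snd a \<in> lcar E2" "fst b \<in> lcar E1" "snd b \<in> lcar E2" using PcD a b by auto
  have i1: "\<iota>1 ?c \<in> lcar E1" and i2: "\<iota>2 ?c \<in> lcar E2" using f(2) m1.img_in m2.img_in by auto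
  have W1: "lle E1 ?U1 (join E1 ?U1 (\<iota>1 ?c))" using m1.Eg.join_ub1[OF f(3) i1] .
  have W2: "lle E2 ?U2 (join E2 ?U2 (\<iota>2 ?c))" using m2.Eg.join_ub1[OF f(4) i2] .
  have "lle E1 (fst a) ?U1" "lle E1 (fst b) ?U1" using m1.Eg.join_ub1 m1.Eg.join_ub2 A by auto
  moreover have "lle E2 (snd a) ?U2" "lle E2 (snd b) ?U2" using m2.Eg.join_ub1 m2.Eg.join_ub2 A by auto
  ultimately show "pl a (pj a b)" "pl b (pj a b)" unfolding pl_def f(1)
    using m1.Eg.trans[OF _ f(3) _ _ W1] m2.Eg.trans[OF _ f(4) _ _ W2] A f(3) f(4) i1 i2 by auto
qed

lemma pj_least: assumes a: "a \<in> Pc" and b: "b \<in> Pc" and z: "z \<in> Pc" and az: "pl a z" and bz: "pl b z"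
  shows "pl (pj a b) z"
proof -
  note f = pj_facts[OF a b]
  let ?U1 = "join E1 (fst a) (fst b)" and ?U2 = "join E2 (snd a) (snd b)"
  let ?c = "join L (m1.tr ?U1) (m2.tr ?U2)"
  have A: "fst a \<in> lcar E1" "snd a \<in> lcar E2" "fst b \<in> lcar E1" "snd b \<in> lcar E2"
    "fst z \<in> lcar E1" "snd z \<in> lcar E2" and tz: "m1.tr (fst z) = m2.tr (snd z)" using PcD a b z by auto
  have U1z: "lle E1 ?U1 (fst z)" using m1.Eg.join_least A az bz unfolding pl_def by simp
  have U2z: "lle E2 ?U2 (snd z)" using m2.Eg.join_least A az bz unfolding pl_def by simp
  have c1: "lle L (m1.tr ?U1) (m1.tr (fst z))" using m1.tr_mono[OF f(3) A(5) U1z] .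
  have c2: "lle L (m2.tr ?U2) (m1.tr (fst z))" using m2.tr_mono[OF f(4) A(6) U2z] tz by simp
  have tzL: "m1.tr (fst z) \<in> lcar L" using m1.tr_in A by simp
  have cz: "lle L ?c (m1.tr (fst z))"
    using m1.Lg.join_least[OF m1.tr_in[OF f(3)] m2.tr_in[OF f(4)] tzL c1 c2] .
  have "lle E1 (\<iota>1 ?c) (\<iota>1 (m1.tr (fst z)))" using m1.mono[OF f(2) tzL cz] .
  then have i1z: "lle E1 (\<iota>1 ?c) (fst z)"
    using m1.Eg.trans[OF m1.img_in[OF f(2)] m1.img_in[OF tzL] A(5) _ m1.tr_le[OF A(5)]] by simp
  have "lle E2 (\<iota>2 ?c) (\<iota>2 (m2.tr (snd z)))" using m2.mono[OF f(2) _ cz] tz tzL by simp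
  then have i2z: "lle E2 (\<iota>2 ?c) (snd z)"
    using m2.Eg.trans[OF m2.img_in[OF f(2)] m2.img_in[OF m2.tr_in[OF A(6)]] A(6) _ m2.tr_le[OF A(6)]] by simp
  show ?thesis unfolding pl_def f(1)
    using m1.Eg.join_least[OF f(3) m1.img_in[OF f(2)] A(5) U1z i1z]
      m2.Eg.join_least[OF f(4) m2.img_in[OF f(2)] A(6) U2z i2z] by simp
qed


lemma rr_alt1: assumes a: "a \<in> Pc"
  shows "rr a + rk L (top L) = rk E1 (join E1 (fst a) F1) + rk E2 (snd a)"
proof -
  have A: "fst a \<in> lcar E1" using PcD a by simp
  have "rk E1 (fst a) + rk L (top L) = rk L (m1.tr (fst a)) + rk E1 (join E1 (fst a) F1)" using m1.rk_mod[OF A] .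
  moreover have "rk L (m1.tr (fst a)) \<le> rk E1 (fst a)" using m1.rk_tr_le[OF A] .
  ultimately show ?thesis unfolding rr_def by simp
qed

lemma rr_alt2: assumes a: "a \<in> Pc"
  shows "rr a + rk L (top L) = rk E1 (fst a) + rk E2 (join E2 (snd a) F2)"
proof -
  have A: "snd a \<in> lcar E2" and t: "m1.tr (fst a) = m2.tr (snd a)" using PcD a by auto
  have "rk E2 (snd a) + rk L (top L) = rk L (m2.tr (snd a)) + rk E2 (join E2 (snd a) F2)" using m2.rk_mod[OF A] .
  moreover have "rk L (m2.tr (snd a)) \<le> rk E2 (snd a)" using m2.rk_tr_le[OF A] .
  ultimately show ?thesis unfolding rr_def using t by simp
qed

lemma rr_mono: assumes a: "a \<in> Pc" and b: "b \<in> Pc" and ab: "pl a b" "a \<noteq> b"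
  shows "rr a < rr b"
proof -
  have A: "fst a \<in> lcar E1" "snd a \<in> lcar E2" "fst b \<in> lcar E1" "snd b \<in> lcar E2" using PcD a b by auto
  have l1: "lle E1 (fst a) (fst b)" and l2: "lle E2 (snd a) (snd b)" using ab unfolding pl_def by auto
  have j1: "lle E1 (join E1 (fst a) F1) (join E1 (fst b) F1)"
    using m1.Eg.join_mono[OF A(1) m1.FF_in A(3) m1.FF_in l1 m1.Eg.refl[OF m1.FF_in]] .
  have j2: "lle E2 (join E2 (snd a) F2) (join E2 (snd b) F2)"
    using m2.Eg.join_mono[OF A(2) m2.FF_in A(4) m2.FF_in l2 m2.Eg.refl[OF m2.FF_in]] .
  have r1: "rk E1 (join E1 (fst a) F1) \<le> rk E1 (join E1 (fst b) F1)"
    using m1.Eg.r_le[OF _ _ j1] A m1.FF_in by simp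
  have r2: "rk E2 (join E2 (snd a) F2) \<le> rk E2 (join E2 (snd b) F2)"
    using m2.Eg.r_le[OF _ _ j2] A m2.FF_in by simp
  show ?thesis
  proof (cases "snd a = snd b")
    case False
    then have "rk E2 (snd a) < rk E2 (snd b)" using m2.Eg.r_mono[OF A(2,4) l2] by simp
    then show ?thesis using rr_alt1[OF a] rr_alt1[OF b] r1 by simp
  next
    case True
    then have "fst a \<noteq> fst b" using ab(2) by (simp add: prod_eq_iff)
    then have "rk E1 (fst a) < rk E1 (fst b)" using m1.Eg.r_mono[OF A(1,3) l1] by simp
    then show ?thesis using rr_alt2[OF a] rr_alt2[OF b] r2 by simp
  qed
qed

lemma rr_le: assumes "a \<in> Pc" "b \<in> Pc" "pl a b" shows "rr a \<le> rr b"
proof (cases "a = b")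
  case False
  then show ?thesis using rr_mono[OF assms False] by simp
qed simp

lemma rr_bot: "rr (bot E1, bot E2) = 0"
  unfolding rr_def using m1.Eg.r_bot m2.Eg.r_bot m1.tr_bot by simp

lemma l2_Pc: assumes H: "H \<in> atoms E2" shows "l2 H \<in> Pc"
proof (cases "lle E2 H F2")
  case True
  then show ?thesis unfolding l2_def
    using m2.atom_in_F[OF H True] m1.tr_i m1.img_in m1.Lg.atoms_in m2.Eg.atoms_in[OF H] by (simp add: PcI)
next
  case False
  then show ?thesis unfolding l2_def
    using m2.atom_notin_F[OF H False] m1.tr_bot m2.Eg.atoms_in[OF H] by (simp add: PcI)
qed

lemma rr_l2: assumes H: "H \<in> atoms E2" shows "rr (l2 H) = 1"
proof (cases "lle E2 H F2")
  case True
  have h: "m2.tr H \<in> atoms L" "\<iota>2 (m2.tr H) = H" using m2.atom_in_F[OF H True] by auto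
  have hL: "m2.tr H \<in> lcar L" using m1.Lg.atoms_in[OF h(1)] .
  have "rk E1 (\<iota>1 (m2.tr H)) = 1" using m1.rk_i[OF hL] m1.Lg.atom_r[OF h(1)] by simp
  moreover have "rk E2 H = 1" using m2.Eg.atom_r[OF H] .
  moreover have "m1.tr (\<iota>1 (m2.tr H)) = m2.tr H" using m1.tr_i[OF hL] .
  ultimately show ?thesis unfolding rr_def l2_def using True m1.Lg.atom_r[OF h(1)] by simp
next
  case False
  then show ?thesis unfolding rr_def l2_def using m2.Eg.atom_r[OF H] m1.Eg.r_bot m1.tr_bot m1.Lg.r_bot by simp
qed

lemma l2_le: assumes a: "a \<in> Pc" and H: "H \<in> atoms E2" and Ha: "lle E2 H (snd a)"
  shows "pl (l2 H) a"
proof -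
  have A: "fst a \<in> lcar E1" "snd a \<in> lcar E2" and t: "m1.tr (fst a) = m2.tr (snd a)" using PcD a by auto
  have HC: "H \<in> lcar E2" using m2.Eg.atoms_in[OF H] .
  show ?thesis
  proof (cases "lle E2 H F2")
    case True
    have hL: "m2.tr H \<in> lcar L" using m2.tr_in[OF HC] .
    have "lle L (m2.tr H) (m2.tr (snd a))" using m2.tr_mono[OF HC A(2) Ha] .
    then have "lle E1 (\<iota>1 (m2.tr H)) (\<iota>1 (m1.tr (fst a)))" using m1.mono[OF hL m1.tr_in[OF A(1)]] t by simp
    then have "lle E1 (\<iota>1 (m2.tr H)) (fst a)"
      using m1.Eg.trans[OF m1.img_in[OF hL] m1.img_in[OF m1.tr_in[OF A(1)]] A(1) _ m1.tr_le[OF A(1)]] by simp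
    then show ?thesis unfolding pl_def l2_def using True Ha by simp
  next
    case False
    then show ?thesis unfolding pl_def l2_def using Ha m1.Eg.bot_le[OF A(1)] by simp
  qed
qed

lemma sep2: assumes a: "a \<in> Pc" and b: "b \<in> Pc" and n: "\<not> lle E2 (snd a) (snd b)"
  shows "\<exists>H\<in>atoms E2. pl (l2 H) a \<and> \<not> pl (l2 H) b"
proof -
  have A: "snd a \<in> lcar E2" "snd b \<in> lcar E2" using PcD a b by auto
  obtain H where H: "H \<in> atoms E2" "lle E2 H (snd a)" "\<not> lle E2 H (snd b)" using m2.Eg.sep[OF A n] by blast
  have "snd (l2 H) = H" unfolding l2_def by simp
  then have "\<not> pl (l2 H) b" using H(3) unfolding pl_def by simp
  then show ?thesis using l2_le[OF a H(1,2)] H(1) by blast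
qed

lemma l2_bound: assumes a: "a \<in> Pc" and H: "H \<in> atoms E2"
  shows "rr (pj a (l2 H)) \<le> Suc (rr a)"
proof -
  have A: "fst a \<in> lcar E1" "snd a \<in> lcar E2" and t: "m1.tr (fst a) = m2.tr (snd a)" using PcD a by auto
  have lP: "l2 H \<in> Pc" using l2_Pc[OF H] .
  have HC: "H \<in> lcar E2" using m2.Eg.atoms_in[OF H] .
  note f = pj_facts[OF a lP]
  have W: "pj a (l2 H) \<in> Pc" using pj_Pc[OF a lP] .
  define t0 where "t0 = m1.tr (fst a)"
  have t0L: "t0 \<in> lcar L" unfolding t0_def using m1.tr_in[OF A(1)] .
  show ?thesis
  proof (cases "lle E2 H F2")
    case True
    define h where "h = m2.tr H"
    have h: "h \<in> atoms L" "\<iota>2 h = H" unfolding h_def using m2.atom_in_F[OF H True] by auto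
    have hL: "h \<in> lcar L" using m1.Lg.atoms_in[OF h(1)] .
    have l2H: "l2 H = (\<iota>1 h, \<iota>2 h)" unfolding l2_def h_def using True h(2) h_def by simp
    define U1 where "U1 = join E1 (fst a) (\<iota>1 h)"
    define U2 where "U2 = join E2 (snd a) (\<iota>2 h)"
    have U1C: "U1 \<in> lcar E1" and U2C: "U2 \<in> lcar E2" unfolding U1_def U2_def using A hL m1.img_in m2.img_in by auto
    have tU1: "m1.tr U1 = join L t0 h" unfolding U1_def t0_def using m1.tr_join_i[OF A(1) hL] .
    have tU2: "m2.tr U2 = join L t0 h" unfolding U2_def t0_def using m2.tr_join_i[OF A(2) hL] t by simp
    have cL: "join L t0 h \<in> lcar L" using t0L hL by simp
    have cc: "join L (join L t0 h) (join L t0 h) = join L t0 h" using m1.Lg.join_idem[OF cL] .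
    have ic1: "lle E1 (\<iota>1 (join L t0 h)) U1"
    proof -
      have "\<iota>1 (join L t0 h) = join E1 (\<iota>1 t0) (\<iota>1 h)" using m1.pjoin[OF t0L hL] .
      moreover have "lle E1 (\<iota>1 t0) (fst a)" unfolding t0_def using m1.tr_le[OF A(1)] .
      ultimately show ?thesis unfolding U1_def
        using m1.Eg.join_mono[OF m1.img_in[OF t0L] m1.img_in[OF hL] A(1) m1.img_in[OF hL]] m1.Eg.refl m1.img_in[OF hL]
        by simp
    qed
    have ic2: "lle E2 (\<iota>2 (join L t0 h)) U2"
    proof -
      have "\<iota>2 (join L t0 h) = join E2 (\<iota>2 t0) (\<iota>2 h)" using m2.pjoin[OF t0L hL] .
      moreover have "lle E2 (\<iota>2 t0) (snd a)" unfolding t0_def using m2.tr_le[OF A(2)] t by simp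
      ultimately show ?thesis unfolding U2_def
        using m2.Eg.join_mono[OF m2.img_in[OF t0L] m2.img_in[OF hL] A(2) m2.img_in[OF hL]] m2.Eg.refl m2.img_in[OF hL]
        by simp
    qed
    have pjeq: "pj a (l2 H) = (U1, U2)"
      using f(1) l2H tU1 tU2 cc m1.Eg.join_absorb2[OF U1C m1.img_in[OF cL] ic1]
        m2.Eg.join_absorb2[OF U2C m2.img_in[OF cL] ic2] unfolding U1_def U2_def by simp
    show ?thesis
    proof (cases "lle L h t0")
      case True
      have "lle E1 (\<iota>1 h) (fst a)"
        using m1.Eg.trans[OF m1.img_in[OF hL] m1.img_in[OF t0L] A(1) m1.mono[OF hL t0L True]] m1.tr_le[OF A(1)]
        unfolding t0_def by simp
      then have "U1 = fst a" unfolding U1_def using m1.Eg.join_absorb2[OF A(1) m1.img_in[OF hL]] by simp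
      moreover have "lle E2 (\<iota>2 h) (snd a)"
        using m2.Eg.trans[OF m2.img_in[OF hL] m2.img_in[OF t0L] A(2) m2.mono[OF hL t0L True]] m2.tr_le[OF A(2)] t
        unfolding t0_def by simp
      then have "U2 = snd a" unfolding U2_def using m2.Eg.join_absorb2[OF A(2) m2.img_in[OF hL]] by simp
      ultimately have "pj a (l2 H) = a" using pjeq by simp
      then show ?thesis by simp
    next
      case False
      have rc: "rk L (join L t0 h) = Suc (rk L t0)" using m1.Lg.atom_join[OF t0L h(1) False] .
      have ia1: "\<iota>1 h \<in> atoms E1" using m1.patoms h(1) by blast
      have ia2: "\<iota>2 h \<in> atoms E2" using m2.patoms h(1) by blast
      have r1: "rk E1 U1 \<le> Suc (rk E1 (fst a))" unfolding U1_def using m1.Eg.r_atom[OF A(1) ia1] .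
      have r2: "rk E2 U2 \<le> Suc (rk E2 (snd a))" unfolding U2_def using m2.Eg.r_atom[OF A(2) ia2] .
      have "rr (U1, U2) = rk E1 U1 + rk E2 U2 - Suc (rk L t0)" unfolding rr_def using tU1 rc by simp
      moreover have "rr a = rk E1 (fst a) + rk E2 (snd a) - rk L t0" unfolding rr_def t0_def by simp
      moreover have "rk L t0 \<le> rk E1 (fst a)" unfolding t0_def using m1.rk_tr_le[OF A(1)] .
      moreover have "rk L (join L t0 h) \<le> rk E1 U1" using m1.rk_tr_le[OF U1C] tU1 by simp
      ultimately show ?thesis using pjeq r1 r2 rc by simp
    qed
  next
    case False
    have l2H: "l2 H = (bot E1, H)" unfolding l2_def using False by simp
    define U2 where "U2 = join E2 (snd a) H"
    have U2C: "U2 \<in> lcar E2" unfolding U2_def using A HC by simp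
    have U1: "join E1 (fst a) (bot E1) = fst a" using m1.Eg.join_absorb2[OF A(1) m1.Eg.bot_in m1.Eg.bot_le[OF A(1)]] .
    define c where "c = m2.tr U2"
    have cL: "c \<in> lcar L" unfolding c_def using m2.tr_in[OF U2C] .
    have "lle E2 (snd a) U2" unfolding U2_def using m2.Eg.join_ub1[OF A(2) HC] .
    then have t0c: "lle L t0 c" unfolding c_def t0_def using m2.tr_mono[OF A(2) U2C] t by simp
    have cc: "join L t0 c = c" using m1.Lg.join_absorb[OF t0L cL t0c] .
    have ic2: "lle E2 (\<iota>2 c) U2" unfolding c_def using m2.tr_le[OF U2C] .
    have W2: "join E2 U2 (\<iota>2 c) = U2" using m2.Eg.join_absorb2[OF U2C m2.img_in[OF cL] ic2] .
    have pjeq: "pj a (l2 H) = (join E1 (fst a) (\<iota>1 c), U2)"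
      using f(1) l2H U1 cc W2 unfolding U2_def c_def t0_def by simp
    have W1C: "join E1 (fst a) (\<iota>1 c) \<in> lcar E1" using A(1) m1.img_in[OF cL] by simp
    have "join E1 (join E1 (fst a) (\<iota>1 c)) F1 = join E1 (fst a) (join E1 (\<iota>1 c) F1)"
      using m1.Eg.join_assoc[OF A(1) m1.img_in[OF cL] m1.FF_in] .
    also have "join E1 (\<iota>1 c) F1 = F1" using m1.Eg.join_absorb[OF m1.img_in[OF cL] m1.FF_in m1.le_FF[OF cL]] .
    finally have JF: "join E1 (join E1 (fst a) (\<iota>1 c)) F1 = join E1 (fst a) F1" .
    have "rr (pj a (l2 H)) + rk L (top L) = rk E1 (join E1 (fst a) F1) + rk E2 U2"
      using rr_alt1[OF W] pjeq JF by simp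
    moreover have "rk E2 U2 \<le> Suc (rk E2 (snd a))" unfolding U2_def using m2.Eg.r_atom[OF A(2) H] .
    ultimately show ?thesis using rr_alt1[OF a] by simp
  qed
qed


lemma po_sw: "po L E2 E1 \<iota>2 \<iota>1"
  by (intro po.intro) (rule m2.mext_axioms, rule m1.mext_axioms)

lemma sw_facts:
  shows "po.Pc L E2 E1 \<iota>2 \<iota>1 = prod.swap ` Pc"
    and "\<And>H. po.l2 L E2 E1 \<iota>2 \<iota>1 H = prod.swap (l1 H)"
    and "\<And>a b. po.pl E2 E1 (prod.swap a) (prod.swap b) = pl a b"
    and "\<And>a b. po.pj L E2 E1 \<iota>2 \<iota>1 (prod.swap a) (prod.swap b) = prod.swap (pj a b)"
    and "\<And>a. a \<in> Pc \<Longrightarrow> po.rr L E2 E1 \<iota>2 (prod.swap a) = rr a"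
proof -
  interpret sw: po L E2 E1 \<iota>2 \<iota>1 by (rule po_sw)
  show "sw.Pc = prod.swap ` Pc" unfolding sw.Pc_def Pc_def by force
  show "\<And>H. sw.l2 H = prod.swap (l1 H)" unfolding sw.l2_def l1_def by simp
  show "\<And>a b. sw.pl (prod.swap a) (prod.swap b) = pl a b" unfolding sw.pl_def pl_def by auto
  show "\<And>a b. sw.pj (prod.swap a) (prod.swap b) = prod.swap (pj a b)"
    unfolding sw.pj_def pj_def Let_def by (simp add: m1.Lg.join_comm)
  show "\<And>a. a \<in> Pc \<Longrightarrow> sw.rr (prod.swap a) = rr a"
    unfolding sw.rr_def rr_def using PcD by auto
qed

lemma swap_Pc: "a \<in> Pc \<Longrightarrow> prod.swap a \<in> po.Pc L E2 E1 \<iota>2 \<iota>1"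
  using sw_facts(1) by simp

lemma l1_Pc: assumes H: "H \<in> atoms E1" shows "l1 H \<in> Pc"
proof -
  interpret sw: po L E2 E1 \<iota>2 \<iota>1 by (rule po_sw)
  have "sw.l2 H \<in> sw.Pc" using sw.l2_Pc[OF H] .
  then have "prod.swap (l1 H) \<in> prod.swap ` Pc" using sw_facts(1,2) by simp
  then obtain a where "a \<in> Pc" "prod.swap (l1 H) = prod.swap a" by blast
  then show ?thesis by (metis swap_swap)
qed

lemma rr_l1: assumes H: "H \<in> atoms E1" shows "rr (l1 H) = 1"
proof -
  interpret sw: po L E2 E1 \<iota>2 \<iota>1 by (rule po_sw)
  have "sw.rr (sw.l2 H) = 1" using sw.rr_l2[OF H] .
  then show ?thesis using sw_facts(2,5) l1_Pc[OF H] by simp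
qed

lemma l1_le: assumes a: "a \<in> Pc" and H: "H \<in> atoms E1" and Ha: "lle E1 H (fst a)"
  shows "pl (l1 H) a"
proof -
  interpret sw: po L E2 E1 \<iota>2 \<iota>1 by (rule po_sw)
  have "sw.pl (sw.l2 H) (prod.swap a)" using sw.l2_le[OF swap_Pc[OF a] H] Ha by simp
  then show ?thesis using sw_facts(2,3) by simp
qed

lemma sep1: assumes a: "a \<in> Pc" and b: "b \<in> Pc" and n: "\<not> lle E1 (fst a) (fst b)"
  shows "\<exists>H\<in>atoms E1. pl (l1 H) a \<and> \<not> pl (l1 H) b"
proof -
  interpret sw: po L E2 E1 \<iota>2 \<iota>1 by (rule po_sw)
  obtain H where "H \<in> atoms E1" "sw.pl (sw.l2 H) (prod.swap a)" "\<not> sw.pl (sw.l2 H) (prod.swap b)"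
    using sw.sep2[OF swap_Pc[OF a] swap_Pc[OF b]] n by auto
  then show ?thesis using sw_facts(2,3) by auto
qed

lemma l1_bound: assumes a: "a \<in> Pc" and H: "H \<in> atoms E1"
  shows "rr (pj a (l1 H)) \<le> Suc (rr a)"
proof -
  interpret sw: po L E2 E1 \<iota>2 \<iota>1 by (rule po_sw)
  have "sw.rr (sw.pj (prod.swap a) (sw.l2 H)) \<le> Suc (sw.rr (prod.swap a))"
    using sw.l2_bound[OF swap_Pc[OF a] H] .
  then show ?thesis using sw_facts(2,4,5) a pj_Pc[OF a l1_Pc[OF H]] by simp
qed

abbreviation "P \<equiv> pushout L E1 \<iota>1 E2 \<iota>2"
abbreviation "N \<equiv> prod_encode"
abbreviation "D \<equiv> prod_decode"

lemma P_car: "lcar P = N ` Pc"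
  unfolding pushout_def Pc_def m1.tr_def m2.tr_def by auto

lemma P_le: "lle P x y \<longleftrightarrow> pl (D x) (D y)"
  unfolding pushout_def pl_def by simp

lemma DN[simp]: "D (N a) = a" by (rule prod_encode_inverse)
lemma ND[simp]: "N (D x) = x" by (rule prod_decode_inverse)

lemma P_mem: "x \<in> lcar P \<longleftrightarrow> D x \<in> Pc"
  unfolding P_car by (metis DN ND image_iff)

lemma N_mem: "N a \<in> lcar P \<longleftrightarrow> a \<in> Pc"
  using P_mem by simp

lemma P_lub: assumes x: "x \<in> lcar P" and y: "y \<in> lcar P" shows "is_lub P {x, y} (N (pj (D x) (D y)))"
proof -
  have xP: "D x \<in> Pc" and yP: "D y \<in> Pc" using x y P_mem by auto
  have jP: "pj (D x) (D y) \<in> Pc" using pj_Pc[OF xP yP] .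
  show ?thesis
    unfolding is_lub_def
  proof (intro conjI ballI impI)
    show "N (pj (D x) (D y)) \<in> lcar P" using N_mem jP by simp
    fix a assume "a \<in> {x, y}"
    then show "lle P a (N (pj (D x) (D y)))" unfolding P_le using pj_ub[OF xP yP] by auto
  next
    fix w assume w: "w \<in> lcar P" and ub: "\<forall>a\<in>{x, y}. lle P a w"
    have wP: "D w \<in> Pc" using w P_mem by simp
    show "lle P (N (pj (D x) (D y))) w" unfolding P_le using pj_least[OF xP yP wP] ub unfolding P_le by simp
  qed
qed

lemma P_glb: assumes x: "x \<in> lcar P" and y: "y \<in> lcar P" shows "is_glb P {x, y} (N (pm (D x) (D y)))"
proof -
  have xP: "D x \<in> Pc" and yP: "D y \<in> Pc" using x y P_mem by auto
  have mP: "pm (D x) (D y) \<in> Pc" using pm_Pc[OF xP yP] .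
  show ?thesis
    unfolding is_glb_def
  proof (intro conjI ballI impI)
    show "N (pm (D x) (D y)) \<in> lcar P" using N_mem mP by simp
    fix a assume "a \<in> {x, y}"
    then show "lle P (N (pm (D x) (D y))) a" unfolding P_le using pm_glb[OF xP yP] by auto
  next
    fix w assume w: "w \<in> lcar P" and lb: "\<forall>a\<in>{x, y}. lle P w a"
    have wP: "D w \<in> Pc" using w P_mem by simp
    show "lle P w (N (pm (D x) (D y)))" unfolding P_le using pm_glb(3)[OF xP yP wP] lb unfolding P_le by simp
  qed
qed

lemma P_lattice: "is_lattice P"
proof -
  have f: "finite (lcar P)" unfolding P_car using fin_Pc by simp
  have ne: "lcar P \<noteq> {}" unfolding P_car using bot_Pc by blast
  have r: "\<forall>x\<in>lcar P. lle P x x" unfolding P_le using pl_refl P_mem by simp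
  have a: "\<forall>x\<in>lcar P. \<forall>y\<in>lcar P. lle P x y \<and> lle P y x \<longrightarrow> x = y"
  proof (intro ballI impI)
    fix x y assume xy: "x \<in> lcar P" "y \<in> lcar P" "lle P x y \<and> lle P y x"
    have "D x \<in> Pc" "D y \<in> Pc" using xy P_mem by auto
    then have "D x = D y" using pl_antisym xy unfolding P_le by blast
    then show "x = y" by (metis ND)
  qed
  have t: "\<forall>x\<in>lcar P. \<forall>y\<in>lcar P. \<forall>z\<in>lcar P. lle P x y \<and> lle P y z \<longrightarrow> lle P x z"
    unfolding P_le using pl_trans P_mem by blast
  have l: "\<forall>x\<in>lcar P. \<forall>y\<in>lcar P. (\<exists>z. is_lub P {x, y} z) \<and> (\<exists>z. is_glb P {x, y} z)"
    using P_lub P_glb by blast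
  show ?thesis unfolding is_lattice_def using f ne r a t l by blast
qed

sublocale Pl: latt P by (rule latt.intro[OF P_lattice])

lemma P_join: assumes "a \<in> Pc" "b \<in> Pc" shows "join P (N a) (N b) = N (pj a b)"
proof (rule Pl.join_eq)
  show "N a \<in> lcar P" "N b \<in> lcar P" "N (pj a b) \<in> lcar P" using assms pj_Pc N_mem by auto
  show "lle P (N a) (N (pj a b))" "lle P (N b) (N (pj a b))" unfolding P_le using pj_ub[OF assms] by auto
  fix w assume "w \<in> lcar P" "lle P (N a) w" "lle P (N b) w"
  then show "lle P (N (pj a b)) w" unfolding P_le using pj_least[OF assms] P_mem by simp
qed

lemma P_meet: assumes "a \<in> Pc" "b \<in> Pc" shows "meet P (N a) (N b) = N (pm a b)"
proof (rule Pl.meet_eq)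
  show "N a \<in> lcar P" "N b \<in> lcar P" "N (pm a b) \<in> lcar P" using assms pm_Pc N_mem by auto
  show "lle P (N (pm a b)) (N a)" "lle P (N (pm a b)) (N b)" unfolding P_le using pm_glb[OF assms] by auto
  fix w assume "w \<in> lcar P" "lle P w (N a)" "lle P w (N b)"
  then show "lle P w (N (pm a b))" unfolding P_le using pm_glb(3)[OF assms] P_mem by simp
qed

lemma P_bot: "bot P = N (bot E1, bot E2)"
proof (rule Pl.bot_eq)
  show "N (bot E1, bot E2) \<in> lcar P" using N_mem bot_Pc by simp
  fix x assume "x \<in> lcar P"
  then have "D x \<in> Pc" using P_mem by simp
  then show "lle P (N (bot E1, bot E2)) x" unfolding P_le pl_def
    using PcD m1.Eg.bot_le m2.Eg.bot_le by simp
qed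

lemma lift_atom: assumes lP: "l \<in> Pc" and rl: "rr l = 1" shows "N l \<in> atoms P"
proof -
  have bP: "bot P \<in> lcar P" by simp
  have lC: "N l \<in> lcar P" using N_mem lP by simp
  have ne: "bot P \<noteq> N l" using rl rr_bot P_bot by auto
  have "covers P (bot P) (N l)"
  proof (rule Pl.coversI[OF bP lC Pl.bot_le[OF lC] ne])
    fix z assume zC: "z \<in> lcar P" and bz: "lle P (bot P) z" and zl: "lle P z (N l)"
    have zP: "D z \<in> Pc" using zC P_mem by simp
    show "z = bot P \<or> z = N l"
    proof (rule ccontr)
      assume "\<not> (z = bot P \<or> z = N l)"
      then have n1: "(bot E1, bot E2) \<noteq> D z" and n2: "D z \<noteq> l" using P_bot by (metis ND DN)+
      have "rr (bot E1, bot E2) < rr (D z)" using rr_mono[OF bot_Pc zP _ n1] bz P_bot unfolding P_le by simp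
      moreover have "rr (D z) < rr l" using rr_mono[OF zP lP _ n2] zl unfolding P_le by simp
      ultimately show False using rl rr_bot by simp
    qed
  qed
  then show ?thesis unfolding atoms_def using lC by simp
qed

lemma l1_atom: "H \<in> atoms E1 \<Longrightarrow> N (l1 H) \<in> atoms P"
  using lift_atom l1_Pc rr_l1 by simp
lemma l2_atom: "H \<in> atoms E2 \<Longrightarrow> N (l2 H) \<in> atoms P"
  using lift_atom l2_Pc rr_l2 by simp

lemma P_atoms_lift: assumes q: "q \<in> atoms P"
  shows "(\<exists>H\<in>atoms E1. D q = l1 H) \<or> (\<exists>H\<in>atoms E2. D q = l2 H)"
proof -
  have qC: "q \<in> lcar P" and cv: "covers P (bot P) q" using q unfolding atoms_def by auto
  have qP: "D q \<in> Pc" using qC P_mem by simp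
  have "q \<noteq> bot P" using Pl.covers_in[OF cv] by simp
  then have "D q \<noteq> (bot E1, bot E2)" using P_bot by (metis ND)
  then have npl: "\<not> pl (D q) (bot E1, bot E2)" using pl_antisym[OF qP bot_Pc] PcD[OF qP]
    m1.Eg.bot_le m2.Eg.bot_le unfolding pl_def by auto
  have key: "\<And>l. l \<in> Pc \<Longrightarrow> pl l (D q) \<Longrightarrow> \<not> pl l (bot E1, bot E2) \<Longrightarrow> D q = l"
  proof -
    fix l assume lP: "l \<in> Pc" and lq: "pl l (D q)" and lb: "\<not> pl l (bot E1, bot E2)"
    have lC: "N l \<in> lcar P" using N_mem lP by simp
    have "N l = bot P \<or> N l = q"
      using Pl.coversD[OF cv lC Pl.bot_le[OF lC]] lq unfolding P_le by simp
    moreover have "N l \<noteq> bot P" using lb P_bot pl_refl[OF bot_Pc] by auto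
    ultimately show "D q = l" by auto
  qed
  show ?thesis
  proof (cases "lle E1 (fst (D q)) (bot E1)")
    case False
    then obtain H where "H \<in> atoms E1" "pl (l1 H) (D q)" "\<not> pl (l1 H) (bot E1, bot E2)"
      using sep1[OF qP bot_Pc] by auto
    then show ?thesis using key l1_Pc by blast
  next
    case True
    then have "\<not> lle E2 (snd (D q)) (bot E2)" using npl unfolding pl_def by simp
    then obtain H where "H \<in> atoms E2" "pl (l2 H) (D q)" "\<not> pl (l2 H) (bot E1, bot E2)"
      using sep2[OF qP bot_Pc] by auto
    then show ?thesis using key l2_Pc by blast
  qed
qed

lemma P_graded: "graded P (\<lambda>z. rr (D z))"
proof (unfold_locales)
  show "rr (D (bot P)) = 0" using P_bot rr_bot by simp
  fix x y assume "x \<in> lcar P" "y \<in> lcar P" "lle P x y" "x \<noteq> y"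
  then show "rr (D x) < rr (D y)" using rr_mono P_mem unfolding P_le by (metis ND)
next
  fix x q assume x: "x \<in> lcar P" and q: "q \<in> atoms P"
  have xP: "D x \<in> Pc" using x P_mem by simp
  have qP: "D q \<in> Pc" using q P_mem unfolding atoms_def by simp
  have j: "join P x q = N (pj (D x) (D q))" using P_join[OF xP qP] by simp
  show "rr (D (join P x q)) \<le> Suc (rr (D x))"
    using P_atoms_lift[OF q] l1_bound[OF xP] l2_bound[OF xP] j by auto
next
  fix x y assume x: "x \<in> lcar P" and y: "y \<in> lcar P" and n: "\<not> lle P x y"
  have xP: "D x \<in> Pc" and yP: "D y \<in> Pc" using x y P_mem by auto
  show "\<exists>q\<in>atoms P. lle P q x \<and> \<not> lle P q y"
  proof (cases "lle E1 (fst (D x)) (fst (D y))")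
    case False
    then obtain H where "H \<in> atoms E1" "pl (l1 H) (D x)" "\<not> pl (l1 H) (D y)" using sep1[OF xP yP] by auto
    then show ?thesis using l1_atom unfolding P_le by (metis DN)
  next
    case True
    then have "\<not> lle E2 (snd (D x)) (snd (D y))" using n unfolding P_le pl_def by simp
    then obtain H where "H \<in> atoms E2" "pl (l2 H) (D x)" "\<not> pl (l2 H) (D y)" using sep2[OF xP yP] by auto
    then show ?thesis using l2_atom unfolding P_le by (metis DN)
  qed
qed

sublocale Pg: graded P "\<lambda>z. rr (D z)" by (rule P_graded)

lemma P_geometric: "geometric P" by (rule Pg.is_geometric)

lemma rk_P: "x \<in> lcar P \<Longrightarrow> rk P x = rr (D x)" using Pg.rk_eq by simp

end


context po
begin

abbreviation "ipc \<equiv> pincl \<iota>1 \<iota>2"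
abbreviation "FP \<equiv> N (F1, F2)"

lemma ipc_eq: "ipc x = N (\<iota>1 x, \<iota>2 x)" unfolding pincl_def by simp

lemma Fi_P: "Fi L ipc = FP" unfolding Fi_def ipc_eq by simp

lemma FF_Pc: "(F1, F2) \<in> Pc"
  using PcI m1.FF_in m2.FF_in m1.tr_FF m2.tr_FF by simp

lemma FP_in: "FP \<in> lcar P" using N_mem FF_Pc by simp

lemma lift1_eq: assumes "H \<in> lcar E1" shows "lift1 L \<iota>1 E2 \<iota>2 H = N (l1 H)"
  unfolding lift1_def l1_def using m1.in_img_iff[OF assms] m1.inv_eq_tr[OF assms] by simp

lemma lift2_eq: assumes "H \<in> lcar E2" shows "lift2 L E1 \<iota>1 \<iota>2 H = N (l2 H)"
  unfolding lift2_def l2_def using m2.in_img_iff[OF assms] m2.inv_eq_tr[OF assms] by simp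

lemma ipc_join: assumes x: "x \<in> lcar L" and y: "y \<in> lcar L"
  shows "ipc (join L x y) = join P (ipc x) (ipc y)"
proof -
  have xy: "join L x y \<in> lcar L" using x y by simp
  have "pj (\<iota>1 x, \<iota>2 x) (\<iota>1 y, \<iota>2 y) = (\<iota>1 (join L x y), \<iota>2 (join L x y))"
    unfolding pj_def Let_def
    using m1.pjoin[OF x y] m2.pjoin[OF x y] m1.tr_i[OF xy] m2.tr_i[OF xy] m1.Lg.join_idem[OF xy]
      m1.Eg.join_idem[OF m1.img_in[OF xy]] m2.Eg.join_idem[OF m2.img_in[OF xy]] by simp
  then show ?thesis using P_join[OF ipair_Pc[OF x] ipair_Pc[OF y]] ipc_eq by simp
qed

lemma ipc_atom: assumes a: "a \<in> atoms L" shows "ipc a \<in> atoms P"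
proof -
  have aL: "a \<in> lcar L" using m1.Lg.atoms_in[OF a] .
  have ia: "\<iota>1 a \<in> atoms E1" using m1.patoms a by blast
  have "l1 (\<iota>1 a) = (\<iota>1 a, \<iota>2 a)" unfolding l1_def using m1.le_FF[OF aL] m1.tr_i[OF aL] by simp
  then show ?thesis using l1_atom[OF ia] ipc_eq by simp
qed

lemma ipc_emb: "embedding L P ipc"
  unfolding embedding_def
proof (intro conjI ballI impI)
  show "inj_on ipc (lcar L)"
  proof (rule inj_onI)
    fix x y assume "x \<in> lcar L" "y \<in> lcar L" "ipc x = ipc y"
    then show "x = y" using m1.inj inj_prod_encode unfolding ipc_eq inj_on_def inj_def by auto
  qed
  show "ipc ` lcar L \<subseteq> lcar P" using ipair_Pc N_mem ipc_eq by auto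
  show "ipc ` atoms L \<subseteq> atoms P" using ipc_atom by blast
  fix x y assume x: "x \<in> lcar L" and y: "y \<in> lcar L"
  show "ipc (join L x y) = join P (ipc x) (ipc y)" using ipc_join[OF x y] .
  assume "lle L x y"
  then show "lle P (ipc x) (ipc y)" unfolding P_le ipc_eq pl_def using m1.mono m2.mono x y by simp
qed

lemma ipc_interval: "ipc ` lcar L = interval P (bot P) FP"
proof
  show "ipc ` lcar L \<subseteq> interval P (bot P) FP"
  proof
    fix z assume "z \<in> ipc ` lcar L"
    then obtain x where x: "x \<in> lcar L" "z = ipc x" by blast
    have zC: "z \<in> lcar P" using x ipair_Pc N_mem ipc_eq by simp
    moreover have "lle P z FP" unfolding x(2) ipc_eq P_le pl_def using m1.le_FF[OF x(1)] m2.le_FF[OF x(1)] by simp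
    ultimately show "z \<in> interval P (bot P) FP" unfolding interval_def using Pl.bot_le by simp
  qed
  show "interval P (bot P) FP \<subseteq> ipc ` lcar L"
  proof
    fix z assume "z \<in> interval P (bot P) FP"
    then have zC: "z \<in> lcar P" and zF: "lle P z FP" unfolding interval_def by auto
    have zP: "D z \<in> Pc" using zC P_mem by simp
    have A: "fst (D z) \<in> lcar E1" "snd (D z) \<in> lcar E2" and t: "m1.tr (fst (D z)) = m2.tr (snd (D z))"
      using PcD[OF zP] by auto
    have l: "lle E1 (fst (D z)) F1" "lle E2 (snd (D z)) F2" using zF unfolding P_le pl_def by auto
    obtain z1 where z1: "z1 \<in> lcar L" "fst (D z) = \<iota>1 z1" using m1.in_img[OF A(1) l(1)] by blast
    obtain z2 where z2: "z2 \<in> lcar L" "snd (D z) = \<iota>2 z2" using m2.in_img[OF A(2) l(2)] by blast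
    have "z1 = z2" using t z1 z2 m1.tr_i m2.tr_i by simp
    then have "D z = (\<iota>1 z1, \<iota>2 z1)" using z1 z2 by (simp add: prod_eq_iff)
    then have "z = ipc z1" unfolding ipc_eq by (metis ND)
    then show "z \<in> ipc ` lcar L" using z1 by blast
  qed
qed

lemma P_modular: "modular_flat P FP"
  unfolding modular_flat_def
proof (intro conjI ballI)
  show "FP \<in> lcar P" by (rule FP_in)
  fix G assume G: "G \<in> lcar P"
  have gP: "D G \<in> Pc" using G P_mem by simp
  define G1 where "G1 = fst (D G)"
  define G2 where "G2 = snd (D G)"
  have A: "G1 \<in> lcar E1" "G2 \<in> lcar E2" and t: "m1.tr G1 = m2.tr G2"
    using PcD[OF gP] unfolding G1_def G2_def by auto
  define t0 where "t0 = m1.tr G1"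
  have t0L: "t0 \<in> lcar L" unfolding t0_def using m1.tr_in[OF A(1)] .
  have DG: "D G = (G1, G2)" unfolding G1_def G2_def by simp
  have "meet P FP G = N (pm (F1, F2) (G1, G2))" using P_meet[OF FF_Pc gP] DG by (metis ND)
  moreover have "pm (F1, F2) (G1, G2) = (\<iota>1 t0, \<iota>2 t0)"
    unfolding pm_def t0_def using m1.i_tr[OF A(1)] m2.i_tr[OF A(2)] t m1.Eg.meet_comm m2.Eg.meet_comm by simp
  ultimately have rm: "rk P (meet P FP G) = rk L t0"
    using rk_P[OF Pl.meet_in[OF FP_in G]] unfolding rr_def
    using m1.rk_i[OF t0L] m2.rk_i[OF t0L] m1.tr_i[OF t0L] by simp
  have topL: "top L \<in> lcar L" by simp
  have j1: "join E1 F1 G1 = join E1 G1 (\<iota>1 (top L))" unfolding Fi_def using m1.Eg.join_comm by simp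
  have j2: "join E2 F2 G2 = join E2 G2 (\<iota>2 (top L))" unfolding Fi_def using m2.Eg.join_comm by simp
  have tj1: "m1.tr (join E1 F1 G1) = top L"
    using j1 m1.tr_join_i[OF A(1) topL] m1.Lg.join_absorb[OF m1.tr_in[OF A(1)] topL m1.Lg.le_top[OF m1.tr_in[OF A(1)]]] by simp
  have tj2: "m2.tr (join E2 F2 G2) = top L"
    using j2 m2.tr_join_i[OF A(2) topL] m1.Lg.join_absorb[OF m2.tr_in[OF A(2)] topL m1.Lg.le_top[OF m2.tr_in[OF A(2)]]] by simp
  have U1C: "join E1 F1 G1 \<in> lcar E1" using A m1.FF_in by simp
  have U2C: "join E2 F2 G2 \<in> lcar E2" using A m2.FF_in by simp
  have "pj (F1, F2) (G1, G2) = (join E1 F1 G1, join E2 F2 G2)"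
    unfolding pj_def Let_def using tj1 tj2 m1.Lg.join_idem[OF topL]
      m1.Eg.join_absorb2[OF U1C m1.FF_in m1.Eg.join_ub1[OF m1.FF_in A(1)]]
      m2.Eg.join_absorb2[OF U2C m2.FF_in m2.Eg.join_ub1[OF m2.FF_in A(2)]]
    unfolding Fi_def by simp
  moreover have "join P FP G = N (pj (F1, F2) (G1, G2))" using P_join[OF FF_Pc gP] DG by (metis ND)
  ultimately have rj: "rk P (join P FP G) = rk E1 (join E1 F1 G1) + rk E2 (join E2 F2 G2) - rk L (top L)"
    using rk_P[OF Pl.join_in[OF FP_in G]] tj1 unfolding rr_def by simp
  have rF: "rk P FP = rk L (top L)"
    using rk_P[OF FP_in] unfolding rr_def using m1.rk_i[OF topL] m2.rk_i[OF topL] m1.tr_FF unfolding Fi_def by simp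
  have rG: "rk P G = rk E1 G1 + rk E2 G2 - rk L t0" using rk_P[OF G] DG unfolding rr_def t0_def by simp
  have m1e: "rk E1 G1 + rk L (top L) = rk L t0 + rk E1 (join E1 G1 F1)" using m1.rk_mod[OF A(1)] unfolding t0_def .
  have m2e: "rk E2 G2 + rk L (top L) = rk L t0 + rk E2 (join E2 G2 F2)" using m2.rk_mod[OF A(2)] t unfolding t0_def by simp
  have c1: "join E1 G1 F1 = join E1 F1 G1" using m1.Eg.join_comm by simp
  have c2: "join E2 G2 F2 = join E2 F2 G2" using m2.Eg.join_comm by simp
  have le1: "rk L t0 \<le> rk E1 G1" unfolding t0_def using m1.rk_tr_le[OF A(1)] .
  show "rk P (meet P FP G) + rk P (join P FP G) = rk P FP + rk P G"
    using rm rj rF rG m1e m2e c1 c2 le1 by simp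
qed

lemma P_mod_ext: "mod_ext L P ipc"
  unfolding mod_ext_def using P_geometric ipc_emb P_modular ipc_interval by blast

end

lemma mext_of_diag: "geometric L \<Longrightarrow> is_diag L (E, \<iota>, J) \<Longrightarrow> mext L E \<iota>"
  by (rule mext.intro) auto

lemma po_of_diag: "geometric L \<Longrightarrow> is_diag L (E1, \<iota>1, J1) \<Longrightarrow> is_diag L (E2, \<iota>2, J2) \<Longrightarrow> po L E1 E2 \<iota>1 \<iota>2"
  using mext_of_diag by (intro po.intro) blast+

lemma dprod_diag:
  assumes gL: "geometric L" and d1: "is_diag L (E1, \<iota>1, J1)" and d2: "is_diag L (E2, \<iota>2, J2)"
  shows "is_diag L (dprod L (E1, \<iota>1, J1) (E2, \<iota>2, J2))"
proof -
  interpret po L E1 E2 \<iota>1 \<iota>2 using po_of_diag[OF gL d1 d2] .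
  have J1: "set J1 \<subseteq> atoms E1" and J2: "set J2 \<subseteq> atoms E2" using d1 d2 by auto
  have "set (map (lift1 L \<iota>1 E2 \<iota>2) J1) \<subseteq> atoms P"
    using J1 lift1_eq l1_atom m1.Eg.atoms_in by auto
  moreover have "set (map (lift2 L E1 \<iota>1 \<iota>2) J2) \<subseteq> atoms P"
    using J2 lift2_eq l2_atom m2.Eg.atoms_in by auto
  ultimately show ?thesis using P_mod_ext by simp
qed


context po
begin

lemma top_join_tr1: assumes "S \<in> lcar E1" shows "m1.tr (join E1 S F1) = top L"
  unfolding Fi_def using m1.tr_join_i[OF assms m1.Lg.top_in]
    m1.Lg.join_absorb[OF m1.tr_in[OF assms] m1.Lg.top_in m1.Lg.le_top[OF m1.tr_in[OF assms]]] by simp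

lemma top_join_tr2: assumes "S \<in> lcar E2" shows "m2.tr (join E2 S F2) = top L"
  unfolding Fi_def using m2.tr_join_i[OF assms m1.Lg.top_in]
    m1.Lg.join_absorb[OF m2.tr_in[OF assms] m1.Lg.top_in m1.Lg.le_top[OF m2.tr_in[OF assms]]] by simp

lemma deg_add:
  assumes J1: "set J1 \<subseteq> atoms E1" and J2: "set J2 \<subseteq> atoms E2"
  shows "deg L (P, ipc, map (lift1 L \<iota>1 E2 \<iota>2) J1 @ map (lift2 L E1 \<iota>1 \<iota>2) J2)
       = deg L (E1, \<iota>1, J1) + deg L (E2, \<iota>2, J2)"
proof -
  define J where "J = map (lift1 L \<iota>1 E2 \<iota>2) J1 @ map (lift2 L E1 \<iota>1 \<iota>2) J2"
  have J1C: "set J1 \<subseteq> lcar E1" using J1 m1.Eg.atoms_in by auto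
  have J2C: "set J2 \<subseteq> lcar E2" using J2 m2.Eg.atoms_in by auto
  have s1: "lift1 L \<iota>1 E2 \<iota>2 ` set J1 = (\<lambda>H. N (l1 H)) ` set J1"
    by (rule image_cong) (use lift1_eq J1C in auto)
  have s2: "lift2 L E1 \<iota>1 \<iota>2 ` set J2 = (\<lambda>H. N (l2 H)) ` set J2"
    by (rule image_cong) (use lift2_eq J2C in auto)
  have setJ: "set J = N ` l1 ` set J1 \<union> N ` l2 ` set J2"
    unfolding J_def using s1 s2 by (simp add: image_image)
  have JC: "set J \<subseteq> lcar P" unfolding setJ using l1_atom l2_atom J1 J2 atoms_def by auto
  define X where "X = Join P (set J)"
  have XC: "X \<in> lcar P" unfolding X_def using Pl.Join_in[OF JC] .
  have xP: "D X \<in> Pc" using XC P_mem by simp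
  define X1 where "X1 = fst (D X)"
  define X2 where "X2 = snd (D X)"
  have XA: "X1 \<in> lcar E1" "X2 \<in> lcar E2" and tX: "m1.tr X1 = m2.tr X2"
    using PcD[OF xP] unfolding X1_def X2_def by auto
  define S1 where "S1 = Join E1 (set J1)"
  define S2 where "S2 = Join E2 (set J2)"
  have S1C: "S1 \<in> lcar E1" unfolding S1_def using m1.Eg.Join_in[OF J1C] .
  have S2C: "S2 \<in> lcar E2" unfolding S2_def using m2.Eg.Join_in[OF J2C] .
  have S1X: "lle E1 S1 X1" unfolding S1_def
  proof (rule m1.Eg.Join_least[OF J1C XA(1)])
    fix H assume H: "H \<in> set J1"
    have "N (l1 H) \<in> set J" unfolding setJ using H by blast
    then have "lle P (N (l1 H)) X" unfolding X_def using Pl.Join_ub[OF JC] by blast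
    then show "lle E1 H X1" unfolding P_le pl_def X1_def l1_def by (simp split: if_splits)
  qed
  have S2X: "lle E2 S2 X2" unfolding S2_def
  proof (rule m2.Eg.Join_least[OF J2C XA(2)])
    fix H assume H: "H \<in> set J2"
    have "N (l2 H) \<in> set J" unfolding setJ using H by blast
    then have "lle P (N (l2 H)) X" unfolding X_def using Pl.Join_ub[OF JC] by blast
    then show "lle E2 H X2" unfolding P_le pl_def X2_def l2_def by (simp split: if_splits)
  qed
  have YS: "(join E1 S1 F1, join E2 S2 F2) \<in> Pc"
    using PcI S1C S2C m1.FF_in m2.FF_in top_join_tr1[OF S1C] top_join_tr2[OF S2C] by simp
  have F1S: "lle E1 F1 (join E1 S1 F1)" using m1.Eg.join_ub2[OF S1C m1.FF_in] .
  have F2S: "lle E2 F2 (join E2 S2 F2)" using m2.Eg.join_ub2[OF S2C m2.FF_in] .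
  have S1S: "lle E1 S1 (join E1 S1 F1)" using m1.Eg.join_ub1[OF S1C m1.FF_in] .
  have S2S: "lle E2 S2 (join E2 S2 F2)" using m2.Eg.join_ub1[OF S2C m2.FF_in] .
  have YC: "N (join E1 S1 F1, join E2 S2 F2) \<in> lcar P" using N_mem YS by simp
  have XY: "lle P X (N (join E1 S1 F1, join E2 S2 F2))" unfolding X_def
  proof (rule Pl.Join_least[OF JC YC])
    fix a assume "a \<in> set J"
    then consider (one) H where "H \<in> set J1" "a = N (l1 H)" | (two) H where "H \<in> set J2" "a = N (l2 H)"
      unfolding setJ by blast
    then show "lle P a (N (join E1 S1 F1, join E2 S2 F2))"
    proof cases
      case one
      have HC: "H \<in> lcar E1" using one J1C by auto
      have H1: "lle E1 H (join E1 S1 F1)"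
        using m1.Eg.trans[OF HC S1C _ m1.Eg.Join_ub[OF J1C one(1), folded S1_def] S1S] S1C m1.FF_in
        by simp
      have "lle E2 (snd (l1 H)) (join E2 S2 F2)"
      proof (cases "lle E1 H F1")
        case True
        have tL: "m1.tr H \<in> lcar L" using m1.tr_in[OF HC] .
        have "lle E2 (\<iota>2 (m1.tr H)) (join E2 S2 F2)"
          using m2.Eg.trans[OF m2.img_in[OF tL] m2.FF_in _ m2.le_FF[OF tL] F2S] S2C m2.FF_in by simp
        then show ?thesis unfolding l1_def using True by simp
      next
        case False
        then show ?thesis unfolding l1_def using m2.Eg.bot_le S2C m2.FF_in by simp
      qed
      then show ?thesis unfolding one(2) P_le pl_def using H1 unfolding l1_def by simp
    next
      case two
      have HC: "H \<in> lcar E2" using two J2C by auto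
      have H2: "lle E2 H (join E2 S2 F2)"
        using m2.Eg.trans[OF HC S2C _ m2.Eg.Join_ub[OF J2C two(1), folded S2_def] S2S] S2C m2.FF_in
        by simp
      have "lle E1 (fst (l2 H)) (join E1 S1 F1)"
      proof (cases "lle E2 H F2")
        case True
        have tL: "m2.tr H \<in> lcar L" using m2.tr_in[OF HC] .
        have "lle E1 (\<iota>1 (m2.tr H)) (join E1 S1 F1)"
          using m1.Eg.trans[OF m1.img_in[OF tL] m1.FF_in _ m1.le_FF[OF tL] F1S] S1C m1.FF_in by simp
        then show ?thesis unfolding l2_def using True by simp
      next
        case False
        then show ?thesis unfolding l2_def using m1.Eg.bot_le S1C m1.FF_in by simp
      qed
      then show ?thesis unfolding two(2) P_le pl_def using H2 unfolding l2_def by simp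
    qed
  qed
  have X1S: "lle E1 X1 (join E1 S1 F1)" using XY unfolding P_le pl_def X1_def by simp
  have X2S: "lle E2 X2 (join E2 S2 F2)" using XY unfolding P_le pl_def X2_def by simp
  have e1: "join E1 X1 F1 = join E1 S1 F1"
  proof (rule m1.Eg.antisym)
    show "join E1 X1 F1 \<in> lcar E1" "join E1 S1 F1 \<in> lcar E1" using XA S1C m1.FF_in by auto
    show "lle E1 (join E1 X1 F1) (join E1 S1 F1)" using m1.Eg.join_least[OF XA(1) m1.FF_in _ X1S F1S] S1C m1.FF_in by simp
    show "lle E1 (join E1 S1 F1) (join E1 X1 F1)"
      using m1.Eg.join_mono[OF S1C m1.FF_in XA(1) m1.FF_in S1X m1.Eg.refl[OF m1.FF_in]] .
  qed
  have e2: "join E2 X2 F2 = join E2 S2 F2"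
  proof (rule m2.Eg.antisym)
    show "join E2 X2 F2 \<in> lcar E2" "join E2 S2 F2 \<in> lcar E2" using XA S2C m2.FF_in by auto
    show "lle E2 (join E2 X2 F2) (join E2 S2 F2)" using m2.Eg.join_least[OF XA(2) m2.FF_in _ X2S F2S] S2C m2.FF_in by simp
    show "lle E2 (join E2 S2 F2) (join E2 X2 F2)"
      using m2.Eg.join_mono[OF S2C m2.FF_in XA(2) m2.FF_in S2X m2.Eg.refl[OF m2.FF_in]] .
  qed
  define t where "t = m1.tr X1"
  have tL: "t \<in> lcar L" unfolding t_def using m1.tr_in[OF XA(1)] .
  have rX: "rk P X = rk E1 X1 + rk E2 X2 - rk L t" using rk_P[OF XC] unfolding rr_def X1_def X2_def t_def by simp
  have DX: "D X = (X1, X2)" unfolding X1_def X2_def by simp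
  have "meet P X FP = N (pm (X1, X2) (F1, F2))" using P_meet[OF xP FF_Pc] DX by (metis ND)
  moreover have "m1.tr (meet E1 X1 F1) = t"
    unfolding t_def using m1.tr_meet[OF XA(1) m1.FF_in] m1.tr_FF
      m1.Lg.meet_absorb[OF m1.tr_in[OF XA(1)] m1.Lg.top_in m1.Lg.le_top[OF m1.tr_in[OF XA(1)]]] by simp
  moreover have "rk E1 (meet E1 X1 F1) = rk L t" unfolding t_def using m1.rk_tr[OF XA(1)] by simp
  moreover have "rk E2 (meet E2 X2 F2) = rk L t" unfolding t_def using m2.rk_tr[OF XA(2)] tX by simp
  ultimately have rM: "rk P (meet P X FP) = rk L t"
    using rk_P[OF Pl.meet_in[OF XC FP_in]] unfolding rr_def pm_def by simp
  have mX1: "rk E1 X1 + rk L (top L) = rk L t + rk E1 (join E1 X1 F1)" using m1.rk_mod[OF XA(1)] unfolding t_def .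
  have mX2: "rk E2 X2 + rk L (top L) = rk L t + rk E2 (join E2 X2 F2)" using m2.rk_mod[OF XA(2)] tX unfolding t_def by simp
  have mS1: "rk E1 S1 + rk L (top L) = rk E1 (meet E1 S1 F1) + rk E1 (join E1 S1 F1)"
    using m1.rk_mod[OF S1C] m1.rk_tr[OF S1C] by simp
  have mS2: "rk E2 S2 + rk L (top L) = rk E2 (meet E2 S2 F2) + rk E2 (join E2 S2 F2)"
    using m2.rk_mod[OF S2C] m2.rk_tr[OF S2C] by simp
  have lt: "rk L t \<le> rk E1 X1" unfolding t_def using m1.rk_tr_le[OF XA(1)] .
  have d1: "deg L (E1, \<iota>1, J1) = int (length J1) - 2 * (int (rk E1 S1) - int (rk E1 (meet E1 S1 F1)))"
    unfolding S1_def by simp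
  have d2: "deg L (E2, \<iota>2, J2) = int (length J2) - 2 * (int (rk E2 S2) - int (rk E2 (meet E2 S2 F2)))"
    unfolding S2_def by simp
  have dP: "deg L (P, ipc, J) = int (length J) - 2 * (int (rk P X) - int (rk P (meet P X FP)))"
    unfolding X_def using Fi_P by simp
  have "length J = length J1 + length J2" unfolding J_def by simp
  then show ?thesis unfolding J_def[symmetric]
    using d1 d2 dP rX rM mX1 mX2 mS1 mS2 e1 e2 lt by simp
qed

end


lemma iso_facts:
  assumes gE: "geometric E" and gE': "geometric E'"
    and bij: "bij_betw \<phi> (lcar E) (lcar E')"
    and ord: "\<And>x y. x \<in> lcar E \<Longrightarrow> y \<in> lcar E \<Longrightarrow> lle E x y \<longleftrightarrow> lle E' (\<phi> x) (\<phi> y)"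
  shows "embedding E E' \<phi>" and "rk E (top E) = rk E' (top E')"
proof -
  interpret A: graded E "rk E" using geometric_graded[OF gE] .
  interpret B: graded E' "rk E'" using geometric_graded[OF gE'] .
  have inj: "inj_on \<phi> (lcar E)" and img: "\<phi> ` lcar E = lcar E'" using bij unfolding bij_betw_def by auto
  have inB: "\<And>x. x \<in> lcar E \<Longrightarrow> \<phi> x \<in> lcar E'" using img by blast
  have surj: "\<And>w. w \<in> lcar E' \<Longrightarrow> \<exists>x\<in>lcar E. w = \<phi> x" using img by blast
  have pbot: "\<phi> (bot E) = bot E'"
  proof (rule sym, rule B.bot_eq)
    show "\<phi> (bot E) \<in> lcar E'" using inB by simp
    fix w assume "w \<in> lcar E'"
    then obtain x where "x \<in> lcar E" "w = \<phi> x" using surj by blast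
    then show "lle E' (\<phi> (bot E)) w" using ord A.bot_le by simp
  qed
  have ptop: "\<phi> (top E) = top E'"
  proof (rule sym, rule B.top_eq)
    show "\<phi> (top E) \<in> lcar E'" using inB by simp
    fix w assume "w \<in> lcar E'"
    then obtain x where "x \<in> lcar E" "w = \<phi> x" using surj by blast
    then show "lle E' w (\<phi> (top E))" using ord A.le_top by simp
  qed
  have pcov: "\<And>a b. covers E a b \<Longrightarrow> covers E' (\<phi> a) (\<phi> b)"
  proof -
    fix a b assume cv: "covers E a b"
    have a: "a \<in> lcar E" "b \<in> lcar E" "lle E a b" "a \<noteq> b" using A.covers_in[OF cv] by auto
    show "covers E' (\<phi> a) (\<phi> b)"
    proof (rule B.coversI)
      show "\<phi> a \<in> lcar E'" "\<phi> b \<in> lcar E'" using inB a by auto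
      show "lle E' (\<phi> a) (\<phi> b)" using ord a by simp
      show "\<phi> a \<noteq> \<phi> b" using inj a unfolding inj_on_def by blast
      fix z assume z: "z \<in> lcar E'" "lle E' (\<phi> a) z" "lle E' z (\<phi> b)"
      obtain w where w: "w \<in> lcar E" "z = \<phi> w" using surj z(1) by blast
      have "lle E a w" "lle E w b" using ord w a z by auto
      then have "w = a \<or> w = b" using A.coversD[OF cv w(1)] by blast
      then show "z = \<phi> a \<or> z = \<phi> b" using w by auto
    qed
  qed
  show "embedding E E' \<phi>"
    unfolding embedding_def
  proof (intro conjI ballI impI)
    show "inj_on \<phi> (lcar E)" by (rule inj)
    show "\<phi> ` lcar E \<subseteq> lcar E'" using img by simp
    show "\<phi> ` atoms E \<subseteq> atoms E'"
    proof
      fix q assume "q \<in> \<phi> ` atoms E"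
      then obtain a where a: "a \<in> atoms E" "q = \<phi> a" by blast
      then have "a \<in> lcar E" "covers E (bot E) a" unfolding atoms_def by auto
      then have "covers E' (\<phi> (bot E)) (\<phi> a)" "\<phi> a \<in> lcar E'" using pcov inB by auto
      then show "q \<in> atoms E'" unfolding atoms_def using pbot a(2) by simp
    qed
    fix x y assume x: "x \<in> lcar E" and y: "y \<in> lcar E"
    show "\<phi> (join E x y) = join E' (\<phi> x) (\<phi> y)"
    proof (rule sym, rule B.join_eq)
      show "\<phi> x \<in> lcar E'" "\<phi> y \<in> lcar E'" "\<phi> (join E x y) \<in> lcar E'" using inB x y by auto
      show "lle E' (\<phi> x) (\<phi> (join E x y))" using ord A.join_ub1 x y by simp
      show "lle E' (\<phi> y) (\<phi> (join E x y))" using ord A.join_ub2 x y by simp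
      fix w assume w: "w \<in> lcar E'" "lle E' (\<phi> x) w" "lle E' (\<phi> y) w"
      obtain v where v: "v \<in> lcar E" "w = \<phi> v" using surj w(1) by blast
      have "lle E x v" "lle E y v" using ord v w x y by auto
      then have "lle E (join E x y) v" using A.join_least x y v by simp
      then show "lle E' (\<phi> (join E x y)) w" using ord x y v by simp
    qed
    assume "lle E x y"
    then show "lle E' (\<phi> x) (\<phi> y)" using ord x y by simp
  qed
  obtain xs where xs: "max_chain E xs (top E)" using A.chain_ex[OF A.top_in] by blast
  have "max_chain E' (map \<phi> xs) (top E')"
    using xs pcov pbot ptop unfolding max_chain_def by (auto simp: hd_map last_map)
  then have "length (map \<phi> xs) = Suc (rk E' (top E'))"
    using B.chain_len[where r="rk E'", OF B.cov_suc B.r_bot] by blast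
  moreover have "length xs = Suc (rk E (top E))"
    using A.chain_len[where r="rk E", OF A.cov_suc A.r_bot xs] .
  ultimately show "rk E (top E) = rk E' (top E')" by simp
qed

lemma iso_Rgen:
  assumes d: "is_diag L (E, \<iota>, J)" and d': "is_diag L (E', \<iota>', J')"
    and bij: "bij_betw \<phi> (lcar E) (lcar E')"
    and ord: "\<And>x y. x \<in> lcar E \<Longrightarrow> y \<in> lcar E \<Longrightarrow> lle E x y \<longleftrightarrow> lle E' (\<phi> x) (\<phi> y)"
    and iota: "\<And>x. x \<in> lcar L \<Longrightarrow> \<iota>' x = \<phi> (\<iota> x)" and JJ: "J' = map \<phi> J"
  shows "(\<lambda>d. delta (E, \<iota>, J) d - delta (E', \<iota>', J') d) \<in> Rgen L"
proof -
  have gE: "geometric E" and gE': "geometric E'" using d d' by (auto simp: mod_ext_def)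
  note f = iso_facts[OF gE gE' bij ord]
  have "(\<lambda>d. delta (E, \<iota>, J) d - delta (E', \<iota>', J') d) \<in>
    {\<lambda>d. delta (E, \<iota>, J) d - delta (E', \<iota>', J') d | E \<iota> J E' \<iota>' J' \<phi>.
       is_diag L (E, \<iota>, J) \<and> is_diag L (E', \<iota>', J') \<and> embedding E E' \<phi> \<and>
       rk E (top E) = rk E' (top E') \<and> (\<forall>x\<in>lcar L. \<iota>' x = \<phi> (\<iota> x)) \<and> J' = map \<phi> J}"
    using d d' f iota JJ by blast
  then show ?thesis unfolding Rgen_def by blast
qed


context po
begin

lemma mext_P: "mext L P ipc" by (rule mext.intro[OF m1.gL P_mod_ext])

lemma tr_P: assumes a: "a \<in> Pc" shows "mext.tr L P ipc (N a) = m1.tr (fst a)"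
proof -
  interpret mP: mext L P ipc by (rule mext_P)
  have A: "fst a \<in> lcar E1" "snd a \<in> lcar E2" and t: "m1.tr (fst a) = m2.tr (snd a)" using PcD[OF a] by auto
  have tL: "m1.tr (fst a) \<in> lcar L" using m1.tr_in[OF A(1)] .
  show ?thesis
  proof (rule mP.tr_eqI)
    show "N a \<in> lcar P" using N_mem a by simp
    show "m1.tr (fst a) \<in> lcar L" by (rule tL)
    have m: "meet P (N a) FP = N (pm a (F1, F2))" using P_meet[OF a FF_Pc] .
    have p: "pm a (F1, F2) = (\<iota>1 (m1.tr (fst a)), \<iota>2 (m1.tr (fst a)))"
      unfolding pm_def using m1.i_tr[OF A(1)] m2.i_tr[OF A(2)] t by simp
    show "ipc (m1.tr (fst a)) = meet P (N a) mP.FF" by (simp only: Fi_P m p ipc_eq)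
  qed
qed

lemma le_FP: "a \<in> Pc \<Longrightarrow> lle P (N a) FP \<longleftrightarrow> lle E1 (fst a) F1 \<and> lle E2 (snd a) F2"
  unfolding P_le pl_def by simp

lemma dprod_eq: "dprod L (E1, \<iota>1, J1) (E2, \<iota>2, J2) = (P, ipc, map (lift1 L \<iota>1 E2 \<iota>2) J1 @ map (lift2 L E1 \<iota>1 \<iota>2) J2)"
  by simp

end

lemma diag_perm: "is_diag L (E, \<iota>, J) \<Longrightarrow> set J' = set J \<Longrightarrow> is_diag L (E, \<iota>, J')"
  by simp

lemma unit_diag: assumes gL: "geometric L" shows "is_diag L (L, id, [])"
proof -
  interpret g: graded L "rk L" using geometric_graded[OF gL] .
  have emb: "embedding L L id" unfolding embedding_def by simp
  have mf: "modular_flat L (top L)" unfolding modular_flat_def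
  proof (intro conjI ballI)
    show "top L \<in> lcar L" by simp
    fix G assume G: "G \<in> lcar L"
    have "meet L (top L) G = G" using g.meet_absorb2[OF g.top_in G g.le_top[OF G]] .
    moreover have "join L (top L) G = top L" using g.join_absorb2[OF g.top_in G g.le_top[OF G]] .
    ultimately show "rk L (meet L (top L) G) + rk L (join L (top L) G) = rk L (top L) + rk L G" by simp
  qed
  have "id ` lcar L = interval L (bot L) (top L)" unfolding interval_def using g.bot_le g.le_top by auto
  then have "mod_ext L L id" unfolding mod_ext_def using gL emb mf by blast
  then show ?thesis by simp
qed

lemma unit_left_Rgen:
  assumes gL: "geometric L" and d: "is_diag L (E, \<iota>, J)"
  shows "(\<lambda>x. delta (E, \<iota>, J) x - delta (dprod L (L, id, []) (E, \<iota>, J)) x) \<in> Rgen L"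
proof -
  have du: "is_diag L (L, id, [])" using unit_diag[OF gL] .
  interpret po L L E id \<iota> using po_of_diag[OF gL du d] .
  have J: "set J \<subseteq> atoms E" using d by simp
  have t1: "\<And>x. x \<in> lcar L \<Longrightarrow> m1.tr x = x" using m1.tr_i by simp
  define \<phi> where "\<phi> = (\<lambda>X. N (m2.tr X, X))"
  have dd: "is_diag L (dprod L (L, id, []) (E, \<iota>, J))" using dprod_diag[OF gL du d] .
  have inP: "\<And>X. X \<in> lcar E \<Longrightarrow> (m2.tr X, X) \<in> Pc" using PcI m2.tr_in t1 by simp
  have bij: "bij_betw \<phi> (lcar E) (lcar P)"
  proof (rule bij_betwI')
    fix X Y assume "X \<in> lcar E" "Y \<in> lcar E"
    show "(\<phi> X = \<phi> Y) = (X = Y)" unfolding \<phi>_def by (metis DN snd_conv)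
  next
    fix X assume "X \<in> lcar E"
    then show "\<phi> X \<in> lcar P" unfolding \<phi>_def using N_mem inP by simp
  next
    fix z assume z: "z \<in> lcar P"
    then have zP: "D z \<in> Pc" using P_mem by simp
    have A: "fst (D z) \<in> lcar L" "snd (D z) \<in> lcar E" "m1.tr (fst (D z)) = m2.tr (snd (D z))" using PcD[OF zP] by auto
    have "D z = (m2.tr (snd (D z)), snd (D z))" using A t1 by (simp add: prod_eq_iff)
    then have "z = \<phi> (snd (D z))" unfolding \<phi>_def by (metis ND)
    then show "\<exists>X\<in>lcar E. z = \<phi> X" using A by blast
  qed
  have ord: "\<And>X Y. X \<in> lcar E \<Longrightarrow> Y \<in> lcar E \<Longrightarrow> lle E X Y \<longleftrightarrow> lle P (\<phi> X) (\<phi> Y)"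
    unfolding \<phi>_def P_le pl_def using m2.tr_mono by auto
  have iota: "\<And>x. x \<in> lcar L \<Longrightarrow> ipc x = \<phi> (\<iota> x)" unfolding \<phi>_def ipc_eq using m2.tr_i by simp
  have words: "map (lift2 L L id \<iota>) J = map \<phi> J"
  proof (rule map_cong[OF refl])
    fix H assume "H \<in> set J"
    then have H: "H \<in> atoms E" using J by blast
    have HC: "H \<in> lcar E" using m2.Eg.atoms_in[OF H] .
    show "lift2 L L id \<iota> H = \<phi> H"
      unfolding lift2_eq[OF HC] l2_def \<phi>_def using m2.atom_notin_F[OF H] by simp
  qed
  have "(\<lambda>x. delta (E, \<iota>, J) x - delta (P, ipc, map (lift2 L L id \<iota>) J) x) \<in> Rgen L"
    by (rule iso_Rgen[OF d _ bij ord iota words]) (use dd in simp)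
  then show ?thesis by simp
qed

lemma unit_right_Rgen:
  assumes gL: "geometric L" and d: "is_diag L (E, \<iota>, J)"
  shows "(\<lambda>x. delta (E, \<iota>, J) x - delta (dprod L (E, \<iota>, J) (L, id, [])) x) \<in> Rgen L"
proof -
  have du: "is_diag L (L, id, [])" using unit_diag[OF gL] .
  interpret po L E L \<iota> id using po_of_diag[OF gL d du] .
  have J: "set J \<subseteq> atoms E" using d by simp
  have t2: "\<And>x. x \<in> lcar L \<Longrightarrow> m2.tr x = x" using m2.tr_i by simp
  define \<phi> where "\<phi> = (\<lambda>X. N (X, m1.tr X))"
  have dd: "is_diag L (dprod L (E, \<iota>, J) (L, id, []))" using dprod_diag[OF gL d du] .
  have inP: "\<And>X. X \<in> lcar E \<Longrightarrow> (X, m1.tr X) \<in> Pc" using PcI m1.tr_in t2 by simp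
  have bij: "bij_betw \<phi> (lcar E) (lcar P)"
  proof (rule bij_betwI')
    fix X Y assume "X \<in> lcar E" "Y \<in> lcar E"
    show "(\<phi> X = \<phi> Y) = (X = Y)" unfolding \<phi>_def by (metis DN fst_conv)
  next
    fix X assume "X \<in> lcar E"
    then show "\<phi> X \<in> lcar P" unfolding \<phi>_def using N_mem inP by simp
  next
    fix z assume z: "z \<in> lcar P"
    then have zP: "D z \<in> Pc" using P_mem by simp
    have A: "fst (D z) \<in> lcar E" "snd (D z) \<in> lcar L" "m1.tr (fst (D z)) = m2.tr (snd (D z))" using PcD[OF zP] by auto
    have "D z = (fst (D z), m1.tr (fst (D z)))" using A t2 by (simp add: prod_eq_iff)
    then have "z = \<phi> (fst (D z))" unfolding \<phi>_def by (metis ND)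
    then show "\<exists>X\<in>lcar E. z = \<phi> X" using A by blast
  qed
  have ord: "\<And>X Y. X \<in> lcar E \<Longrightarrow> Y \<in> lcar E \<Longrightarrow> lle E X Y \<longleftrightarrow> lle P (\<phi> X) (\<phi> Y)"
    unfolding \<phi>_def P_le pl_def using m1.tr_mono by auto
  have iota: "\<And>x. x \<in> lcar L \<Longrightarrow> ipc x = \<phi> (\<iota> x)" unfolding \<phi>_def ipc_eq using m1.tr_i by simp
  have words: "map (lift1 L \<iota> L id) J = map \<phi> J"
  proof (rule map_cong[OF refl])
    fix H assume "H \<in> set J"
    then have H: "H \<in> atoms E" using J by blast
    have HC: "H \<in> lcar E" using m1.Eg.atoms_in[OF H] .
    show "lift1 L \<iota> L id H = \<phi> H"
      unfolding lift1_eq[OF HC] l1_def \<phi>_def using m1.atom_notin_F[OF H] by simp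
  qed
  have "(\<lambda>x. delta (E, \<iota>, J) x - delta (P, ipc, map (lift1 L \<iota> L id) J) x) \<in> Rgen L"
    by (rule iso_Rgen[OF d _ bij ord iota words]) (use dd in simp)
  then show ?thesis by simp
qed

lemma comm_Rgen:
  assumes gL: "geometric L" and d1: "is_diag L (E1, \<iota>1, J1)" and d2: "is_diag L (E2, \<iota>2, J2)"
  shows "(\<lambda>x. delta (dprod L (E2, \<iota>2, J2) (E1, \<iota>1, J1)) x
     - delta (pushout L E1 \<iota>1 E2 \<iota>2, pincl \<iota>1 \<iota>2, map (lift2 L E1 \<iota>1 \<iota>2) J2 @ map (lift1 L \<iota>1 E2 \<iota>2) J1) x) \<in> Rgen L"
proof -
  interpret po L E1 E2 \<iota>1 \<iota>2 using po_of_diag[OF gL d1 d2] .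
  interpret sw: po L E2 E1 \<iota>2 \<iota>1 by (rule po_sw)
  have J1: "set J1 \<subseteq> atoms E1" and J2: "set J2 \<subseteq> atoms E2" using d1 d2 by auto
  have d21: "is_diag L (dprod L (E2, \<iota>2, J2) (E1, \<iota>1, J1))" using dprod_diag[OF gL d2 d1] .
  have d12: "is_diag L (dprod L (E1, \<iota>1, J1) (E2, \<iota>2, J2))" using dprod_diag[OF gL d1 d2] .
  have d12': "is_diag L (P, ipc, map (lift2 L E1 \<iota>1 \<iota>2) J2 @ map (lift1 L \<iota>1 E2 \<iota>2) J1)"
    using d12 by auto
  define \<phi> where "\<phi> = (\<lambda>z. N (prod.swap (D z)))"
  have bij: "bij_betw \<phi> (lcar sw.P) (lcar P)"
  proof (rule bij_betwI')
    fix x y assume "x \<in> lcar sw.P" "y \<in> lcar sw.P"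
    show "(\<phi> x = \<phi> y) = (x = y)" unfolding \<phi>_def by (metis DN ND swap_swap)
  next
    fix x assume "x \<in> lcar sw.P"
    then have "D x \<in> sw.Pc" using sw.P_mem by simp
    then have "prod.swap (D x) \<in> Pc" using sw_facts(1) by auto
    then show "\<phi> x \<in> lcar P" unfolding \<phi>_def using N_mem by simp
  next
    fix z assume z: "z \<in> lcar P"
    then have "D z \<in> Pc" using P_mem by simp
    then have "prod.swap (D z) \<in> sw.Pc" using sw_facts(1) by simp
    then have "N (prod.swap (D z)) \<in> lcar sw.P" using sw.N_mem by simp
    moreover have "z = \<phi> (N (prod.swap (D z)))" unfolding \<phi>_def by simp
    ultimately show "\<exists>x\<in>lcar sw.P. z = \<phi> x" by blast
  qed
  have ord: "\<And>x y. x \<in> lcar sw.P \<Longrightarrow> y \<in> lcar sw.P \<Longrightarrow> lle sw.P x y \<longleftrightarrow> lle P (\<phi> x) (\<phi> y)"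
    unfolding \<phi>_def P_le sw.P_le pl_def sw.pl_def by auto
  have iota: "\<And>x. x \<in> lcar L \<Longrightarrow> ipc x = \<phi> (sw.ipc x)" unfolding \<phi>_def ipc_eq sw.ipc_eq by simp
  have w1: "map \<phi> (map (lift1 L \<iota>2 E1 \<iota>1) J2) = map (lift2 L E1 \<iota>1 \<iota>2) J2"
  proof (unfold map_map, rule map_cong[OF refl])
    fix H assume "H \<in> set J2"
    then have H: "H \<in> lcar E2" using J2 m2.Eg.atoms_in by blast
    have "sw.l1 H = prod.swap (l2 H)" unfolding sw.l1_def l2_def by simp
    then show "(\<phi> \<circ> lift1 L \<iota>2 E1 \<iota>1) H = lift2 L E1 \<iota>1 \<iota>2 H"
      unfolding \<phi>_def using sw.lift1_eq[OF H] lift2_eq[OF H] by simp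
  qed
  have w2: "map \<phi> (map (lift2 L E2 \<iota>2 \<iota>1) J1) = map (lift1 L \<iota>1 E2 \<iota>2) J1"
  proof (unfold map_map, rule map_cong[OF refl])
    fix H assume "H \<in> set J1"
    then have H: "H \<in> lcar E1" using J1 m1.Eg.atoms_in by blast
    have "sw.l2 H = prod.swap (l1 H)" using sw_facts(2) by simp
    then show "(\<phi> \<circ> lift2 L E2 \<iota>2 \<iota>1) H = lift1 L \<iota>1 E2 \<iota>2 H"
      unfolding \<phi>_def using sw.lift2_eq[OF H] lift1_eq[OF H] by simp
  qed
  have words: "map (lift2 L E1 \<iota>1 \<iota>2) J2 @ map (lift1 L \<iota>1 E2 \<iota>2) J1
     = map \<phi> (map (lift1 L \<iota>2 E1 \<iota>1) J2 @ map (lift2 L E2 \<iota>2 \<iota>1) J1)"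
    using w1 w2 by simp
  have "(\<lambda>x. delta (sw.P, sw.ipc, map (lift1 L \<iota>2 E1 \<iota>1) J2 @ map (lift2 L E2 \<iota>2 \<iota>1) J1) x
     - delta (P, ipc, map (lift2 L E1 \<iota>1 \<iota>2) J2 @ map (lift1 L \<iota>1 E2 \<iota>2) J1) x) \<in> Rgen L"
    by (rule iso_Rgen[OF _ d12' bij ord iota words]) (use d21 in simp)
  then show ?thesis by simp
qed


context po
begin

lemma l1_in: "H \<in> atoms E1 \<Longrightarrow> lle E1 H F1 \<Longrightarrow> l1 H = (\<iota>1 (m1.tr H), \<iota>2 (m1.tr H))"
  unfolding l1_def using m1.atom_in_F by simp
lemma l1_out: "\<not> lle E1 H F1 \<Longrightarrow> l1 H = (H, bot E2)"
  unfolding l1_def by simp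
lemma l2_in: "H \<in> atoms E2 \<Longrightarrow> lle E2 H F2 \<Longrightarrow> l2 H = (\<iota>1 (m2.tr H), \<iota>2 (m2.tr H))"
  unfolding l2_def using m2.atom_in_F by simp
lemma l2_out: "\<not> lle E2 H F2 \<Longrightarrow> l2 H = (bot E1, H)"
  unfolding l2_def by simp

lemma ipc_in: "x \<in> lcar L \<Longrightarrow> N (\<iota>1 x, \<iota>2 x) \<in> lcar P"
  using N_mem ipair_Pc by simp

lemma ipc_le_FP: "x \<in> lcar L \<Longrightarrow> lle P (N (\<iota>1 x, \<iota>2 x)) FP"
  unfolding P_le pl_def using m1.le_FF m2.le_FF by simp

lemma tr_P_i: "x \<in> lcar L \<Longrightarrow> mext.tr L P ipc (N (\<iota>1 x, \<iota>2 x)) = x"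
  using tr_P[OF ipair_Pc] m1.tr_i by simp

end

lemma assoc_Rgen:
  assumes gL: "geometric L" and d1: "is_diag L (E1, \<iota>1, J1)" and d2: "is_diag L (E2, \<iota>2, J2)"
    and d3: "is_diag L (E3, \<iota>3, J3)"
  shows "(\<lambda>x. delta (dprod L (dprod L (E1, \<iota>1, J1) (E2, \<iota>2, J2)) (E3, \<iota>3, J3)) x
     - delta (dprod L (E1, \<iota>1, J1) (dprod L (E2, \<iota>2, J2) (E3, \<iota>3, J3))) x) \<in> Rgen L"
proof -
  interpret p12: po L E1 E2 \<iota>1 \<iota>2 using po_of_diag[OF gL d1 d2] .
  interpret p23: po L E2 E3 \<iota>2 \<iota>3 using po_of_diag[OF gL d2 d3] .
  have J1: "set J1 \<subseteq> atoms E1" and J2: "set J2 \<subseteq> atoms E2" and J3: "set J3 \<subseteq> atoms E3" using d1 d2 d3 by auto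
  define W12 where "W12 = map (lift1 L \<iota>1 E2 \<iota>2) J1 @ map (lift2 L E1 \<iota>1 \<iota>2) J2"
  define W23 where "W23 = map (lift1 L \<iota>2 E3 \<iota>3) J2 @ map (lift2 L E2 \<iota>2 \<iota>3) J3"
  have d12: "is_diag L (p12.P, p12.ipc, W12)" using dprod_diag[OF gL d1 d2] unfolding W12_def by simp
  have d23: "is_diag L (p23.P, p23.ipc, W23)" using dprod_diag[OF gL d2 d3] unfolding W23_def by simp
  interpret pA: po L p12.P E3 p12.ipc \<iota>3 using po_of_diag[OF gL d12 d3] .
  interpret pB: po L E1 p23.P \<iota>1 p23.ipc using po_of_diag[OF gL d1 d23] .
  have dA: "is_diag L (dprod L (p12.P, p12.ipc, W12) (E3, \<iota>3, J3))" using dprod_diag[OF gL d12 d3] .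
  have dB: "is_diag L (dprod L (E1, \<iota>1, J1) (p23.P, p23.ipc, W23))" using dprod_diag[OF gL d1 d23] .
  have eqA: "dprod L (dprod L (E1, \<iota>1, J1) (E2, \<iota>2, J2)) (E3, \<iota>3, J3) = dprod L (p12.P, p12.ipc, W12) (E3, \<iota>3, J3)"
    unfolding W12_def by simp
  have eqB: "dprod L (E1, \<iota>1, J1) (dprod L (E2, \<iota>2, J2) (E3, \<iota>3, J3)) = dprod L (E1, \<iota>1, J1) (p23.P, p23.ipc, W23)"
    unfolding W23_def by simp
  define T where "T = (\<lambda>X1 X2 X3. X1 \<in> lcar E1 \<and> X2 \<in> lcar E2 \<and> X3 \<in> lcar E3 \<and>
      p12.m1.tr X1 = p12.m2.tr X2 \<and> p12.m2.tr X2 = p23.m2.tr X3)"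
  have memA: "\<And>X1 X2 X3. prod_encode (prod_encode (X1, X2), X3) \<in> lcar pA.P \<longleftrightarrow> T X1 X2 X3"
  proof -
    fix X1 X2 X3
    show "prod_encode (prod_encode (X1, X2), X3) \<in> lcar pA.P \<longleftrightarrow> T X1 X2 X3"
    proof
      assume "prod_encode (prod_encode (X1, X2), X3) \<in> lcar pA.P"
      then have "(prod_encode (X1, X2), X3) \<in> pA.Pc" using pA.N_mem by simp
      then have a: "prod_encode (X1, X2) \<in> lcar p12.P" "X3 \<in> lcar E3" "mext.tr L p12.P p12.ipc (prod_encode (X1, X2)) = p23.m2.tr X3"
        using pA.PcD by auto
      have b: "(X1, X2) \<in> p12.Pc" using a(1) p12.N_mem by simp
      show "T X1 X2 X3" unfolding T_def using a p12.PcD[OF b] p12.tr_P[OF b] by simp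
    next
      assume t: "T X1 X2 X3"
      then have b: "(X1, X2) \<in> p12.Pc" unfolding T_def using p12.PcI by simp
      have "(prod_encode (X1, X2), X3) \<in> pA.Pc" using pA.PcI p12.N_mem b p12.tr_P[OF b] t unfolding T_def by simp
      then show "prod_encode (prod_encode (X1, X2), X3) \<in> lcar pA.P" using pA.N_mem by simp
    qed
  qed
  have memB: "\<And>X1 X2 X3. prod_encode (X1, prod_encode (X2, X3)) \<in> lcar pB.P \<longleftrightarrow> T X1 X2 X3"
  proof -
    fix X1 X2 X3
    show "prod_encode (X1, prod_encode (X2, X3)) \<in> lcar pB.P \<longleftrightarrow> T X1 X2 X3"
    proof
      assume "prod_encode (X1, prod_encode (X2, X3)) \<in> lcar pB.P"
      then have "(X1, prod_encode (X2, X3)) \<in> pB.Pc" using pB.N_mem by simp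
      then have a: "X1 \<in> lcar E1" "prod_encode (X2, X3) \<in> lcar p23.P" "p12.m1.tr X1 = mext.tr L p23.P p23.ipc (prod_encode (X2, X3))"
        using pB.PcD by auto
      have b: "(X2, X3) \<in> p23.Pc" using a(2) p23.N_mem by simp
      show "T X1 X2 X3" unfolding T_def using a p23.PcD[OF b] p23.tr_P[OF b] by simp
    next
      assume t: "T X1 X2 X3"
      then have b: "(X2, X3) \<in> p23.Pc" unfolding T_def using p23.PcI by simp
      have "(X1, prod_encode (X2, X3)) \<in> pB.Pc" using pB.PcI p23.N_mem b p23.tr_P[OF b] t unfolding T_def by simp
      then show "prod_encode (X1, prod_encode (X2, X3)) \<in> lcar pB.P" using pB.N_mem by simp
    qed
  qed
  have decA: "\<And>z. z \<in> lcar pA.P \<Longrightarrow> \<exists>X1 X2 X3. z = prod_encode (prod_encode (X1, X2), X3)"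
    by (metis prod_decode_inverse prod.collapse)
  have decB: "\<And>z. z \<in> lcar pB.P \<Longrightarrow> \<exists>X1 X2 X3. z = prod_encode (X1, prod_encode (X2, X3))"
    by (metis prod_decode_inverse prod.collapse)
  define \<phi> where "\<phi> = (\<lambda>z. prod_encode (fst (prod_decode (fst (prod_decode z))), prod_encode (snd (prod_decode (fst (prod_decode z))), snd (prod_decode z))))"
  define \<psi> where "\<psi> = (\<lambda>w. prod_encode (prod_encode (fst (prod_decode w), fst (prod_decode (snd (prod_decode w)))), snd (prod_decode (snd (prod_decode w)))))"
  have phi: "\<And>X1 X2 X3. \<phi> (prod_encode (prod_encode (X1, X2), X3)) = prod_encode (X1, prod_encode (X2, X3))" unfolding \<phi>_def by simp
  have psi: "\<And>X1 X2 X3. \<psi> (prod_encode (X1, prod_encode (X2, X3))) = prod_encode (prod_encode (X1, X2), X3)" unfolding \<psi>_def by simp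
  have bij: "bij_betw \<phi> (lcar pA.P) (lcar pB.P)"
  proof (rule bij_betw_byWitness[where f'=\<psi>])
    show "\<forall>a\<in>lcar pA.P. \<psi> (\<phi> a) = a" using decA phi psi by metis
    show "\<forall>a'\<in>lcar pB.P. \<phi> (\<psi> a') = a'" using decB phi psi by metis
    show "\<phi> ` lcar pA.P \<subseteq> lcar pB.P"
    proof
      fix w assume "w \<in> \<phi> ` lcar pA.P"
      then obtain z where z: "z \<in> lcar pA.P" "w = \<phi> z" by blast
      obtain X1 X2 X3 where e: "z = prod_encode (prod_encode (X1, X2), X3)" using decA[OF z(1)] by blast
      have "T X1 X2 X3" using memA z(1) e by simp
      then show "w \<in> lcar pB.P" using memB z(2) e phi by simp
    qed
    show "\<psi> ` lcar pB.P \<subseteq> lcar pA.P"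
    proof
      fix w assume "w \<in> \<psi> ` lcar pB.P"
      then obtain z where z: "z \<in> lcar pB.P" "w = \<psi> z" by blast
      obtain X1 X2 X3 where e: "z = prod_encode (X1, prod_encode (X2, X3))" using decB[OF z(1)] by blast
      have "T X1 X2 X3" using memB z(1) e by simp
      then show "w \<in> lcar pA.P" using memA z(2) e psi by simp
    qed
  qed
  have leA: "\<And>X1 X2 X3 Y1 Y2 Y3. lle pA.P (prod_encode (prod_encode (X1, X2), X3)) (prod_encode (prod_encode (Y1, Y2), Y3)) \<longleftrightarrow>
      lle E1 X1 Y1 \<and> lle E2 X2 Y2 \<and> lle E3 X3 Y3"
    by (simp only: pA.P_le pA.pl_def p12.P_le p12.pl_def prod_encode_inverse fst_conv snd_conv conj_assoc)
  have leB: "\<And>X1 X2 X3 Y1 Y2 Y3. lle pB.P (prod_encode (X1, prod_encode (X2, X3))) (prod_encode (Y1, prod_encode (Y2, Y3))) \<longleftrightarrow>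
      lle E1 X1 Y1 \<and> lle E2 X2 Y2 \<and> lle E3 X3 Y3"
    by (simp only: pB.P_le pB.pl_def p23.P_le p23.pl_def prod_encode_inverse fst_conv snd_conv conj_assoc)
  have ord: "\<And>x y. x \<in> lcar pA.P \<Longrightarrow> y \<in> lcar pA.P \<Longrightarrow> lle pA.P x y \<longleftrightarrow> lle pB.P (\<phi> x) (\<phi> y)"
  proof -
    fix x y assume x: "x \<in> lcar pA.P" and y: "y \<in> lcar pA.P"
    obtain X1 X2 X3 where ex: "x = prod_encode (prod_encode (X1, X2), X3)" using decA[OF x] by blast
    obtain Y1 Y2 Y3 where ey: "y = prod_encode (prod_encode (Y1, Y2), Y3)" using decA[OF y] by blast
    show "lle pA.P x y \<longleftrightarrow> lle pB.P (\<phi> x) (\<phi> y)" unfolding ex ey phi leA leB ..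
  qed
  have iota: "\<And>x. x \<in> lcar L \<Longrightarrow> pB.ipc x = \<phi> (pA.ipc x)"
    using pA.ipc_eq pB.ipc_eq p12.ipc_eq p23.ipc_eq phi by simp
  have FA: "Fi L p12.ipc = p12.FP" using p12.Fi_P .
  have FB: "Fi L p23.ipc = p23.FP" using p23.Fi_P .
  have a1: "\<And>H. H \<in> atoms E1 \<Longrightarrow> \<phi> (lift1 L p12.ipc E3 \<iota>3 (lift1 L \<iota>1 E2 \<iota>2 H)) = lift1 L \<iota>1 p23.P p23.ipc H"
  proof -
    fix H assume H: "H \<in> atoms E1"
    have HC: "H \<in> lcar E1" using p12.m1.Eg.atoms_in[OF H] .
    have yC: "prod_encode (p12.l1 H) \<in> lcar p12.P" using p12.l1_atom[OF H] by (simp add: atoms_def)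
    have L1: "lift1 L \<iota>1 E2 \<iota>2 H = prod_encode (p12.l1 H)" using p12.lift1_eq[OF HC] .
    have L2: "lift1 L p12.ipc E3 \<iota>3 (prod_encode (p12.l1 H)) = prod_encode (pA.l1 (prod_encode (p12.l1 H)))" using pA.lift1_eq[OF yC] .
    have R: "lift1 L \<iota>1 p23.P p23.ipc H = prod_encode (pB.l1 H)" using pB.lift1_eq[OF HC] .
    show "\<phi> (lift1 L p12.ipc E3 \<iota>3 (lift1 L \<iota>1 E2 \<iota>2 H)) = lift1 L \<iota>1 p23.P p23.ipc H"
    proof (cases "lle E1 H p12.F1")
      case True
      define h where "h = p12.m1.tr H"
      have hL: "h \<in> lcar L" unfolding h_def using p12.m1.tr_in[OF HC] .
      have Hh: "\<iota>1 h = H" unfolding h_def using p12.m1.atom_in_F[OF H True] by simp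
      have l: "p12.l1 H = (\<iota>1 h, \<iota>2 h)" using p12.l1_in[OF H True] h_def by simp
      have "pA.l1 (prod_encode (\<iota>1 h, \<iota>2 h)) = (prod_encode (\<iota>1 h, \<iota>2 h), \<iota>3 h)"
        unfolding pA.l1_def FA using p12.ipc_le_FP[OF hL] p12.tr_P_i[OF hL] by simp
      moreover have "pB.l1 H = (\<iota>1 h, prod_encode (\<iota>2 h, \<iota>3 h))"
        unfolding pB.l1_def using True Hh h_def p23.ipc_eq by simp
      ultimately show ?thesis using L1 L2 R l phi by simp
    next
      case False
      have l: "p12.l1 H = (H, bot E2)" using p12.l1_out[OF False] .
      have "\<not> lle p12.P (prod_encode (H, bot E2)) p12.FP" unfolding p12.P_le p12.pl_def using False by simp
      then have "pA.l1 (prod_encode (H, bot E2)) = (prod_encode (H, bot E2), bot E3)" unfolding pA.l1_def FA by simp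
      moreover have "pB.l1 H = (H, prod_encode (bot E2, bot E3))" unfolding pB.l1_def using False p23.P_bot by simp
      ultimately show ?thesis using L1 L2 R l phi by simp
    qed
  qed
  have a2: "\<And>H. H \<in> atoms E2 \<Longrightarrow> \<phi> (lift1 L p12.ipc E3 \<iota>3 (lift2 L E1 \<iota>1 \<iota>2 H)) = lift2 L E1 \<iota>1 p23.ipc (lift1 L \<iota>2 E3 \<iota>3 H)"
  proof -
    fix H assume H: "H \<in> atoms E2"
    have HC: "H \<in> lcar E2" using p12.m2.Eg.atoms_in[OF H] .
    have yC: "prod_encode (p12.l2 H) \<in> lcar p12.P" using p12.l2_atom[OF H] by (simp add: atoms_def)
    have zC: "prod_encode (p23.l1 H) \<in> lcar p23.P" using p23.l1_atom[OF H] by (simp add: atoms_def)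
    have L1: "lift2 L E1 \<iota>1 \<iota>2 H = prod_encode (p12.l2 H)" using p12.lift2_eq[OF HC] .
    have L2: "lift1 L p12.ipc E3 \<iota>3 (prod_encode (p12.l2 H)) = prod_encode (pA.l1 (prod_encode (p12.l2 H)))" using pA.lift1_eq[OF yC] .
    have R1: "lift1 L \<iota>2 E3 \<iota>3 H = prod_encode (p23.l1 H)" using p23.lift1_eq[OF HC] .
    have R2: "lift2 L E1 \<iota>1 p23.ipc (prod_encode (p23.l1 H)) = prod_encode (pB.l2 (prod_encode (p23.l1 H)))" using pB.lift2_eq[OF zC] .
    show "\<phi> (lift1 L p12.ipc E3 \<iota>3 (lift2 L E1 \<iota>1 \<iota>2 H)) = lift2 L E1 \<iota>1 p23.ipc (lift1 L \<iota>2 E3 \<iota>3 H)"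
    proof (cases "lle E2 H p12.F2")
      case True
      define h where "h = p12.m2.tr H"
      have hL: "h \<in> lcar L" unfolding h_def using p12.m2.tr_in[OF HC] .
      have l: "p12.l2 H = (\<iota>1 h, \<iota>2 h)" using p12.l2_in[OF H True] h_def by simp
      have l': "p23.l1 H = (\<iota>2 h, \<iota>3 h)" using p23.l1_in[OF H True] h_def by simp
      have "pA.l1 (prod_encode (\<iota>1 h, \<iota>2 h)) = (prod_encode (\<iota>1 h, \<iota>2 h), \<iota>3 h)"
        unfolding pA.l1_def FA using p12.ipc_le_FP[OF hL] p12.tr_P_i[OF hL] by simp
      moreover have "pB.l2 (prod_encode (\<iota>2 h, \<iota>3 h)) = (\<iota>1 h, prod_encode (\<iota>2 h, \<iota>3 h))"
        unfolding pB.l2_def FB using p23.ipc_le_FP[OF hL] p23.tr_P_i[OF hL] by simp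
      ultimately show ?thesis using L1 L2 R1 R2 l l' phi by simp
    next
      case False
      have l: "p12.l2 H = (bot E1, H)" using p12.l2_out[OF False] .
      have l': "p23.l1 H = (H, bot E3)" using p23.l1_out[OF False] .
      have "\<not> lle p12.P (prod_encode (bot E1, H)) p12.FP" unfolding p12.P_le p12.pl_def using False by simp
      then have "pA.l1 (prod_encode (bot E1, H)) = (prod_encode (bot E1, H), bot E3)" unfolding pA.l1_def FA by simp
      moreover have "\<not> lle p23.P (prod_encode (H, bot E3)) p23.FP" unfolding p23.P_le p23.pl_def using False by simp
      then have "pB.l2 (prod_encode (H, bot E3)) = (bot E1, prod_encode (H, bot E3))" unfolding pB.l2_def FB by simp
      ultimately show ?thesis using L1 L2 R1 R2 l l' phi by simp
    qed
  qed
  have a3: "\<And>H. H \<in> atoms E3 \<Longrightarrow> \<phi> (lift2 L p12.P p12.ipc \<iota>3 H) = lift2 L E1 \<iota>1 p23.ipc (lift2 L E2 \<iota>2 \<iota>3 H)"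
  proof -
    fix H assume H: "H \<in> atoms E3"
    have HC: "H \<in> lcar E3" using p23.m2.Eg.atoms_in[OF H] .
    have zC: "prod_encode (p23.l2 H) \<in> lcar p23.P" using p23.l2_atom[OF H] by (simp add: atoms_def)
    have L: "lift2 L p12.P p12.ipc \<iota>3 H = prod_encode (pA.l2 H)" using pA.lift2_eq[OF HC] .
    have R1: "lift2 L E2 \<iota>2 \<iota>3 H = prod_encode (p23.l2 H)" using p23.lift2_eq[OF HC] .
    have R2: "lift2 L E1 \<iota>1 p23.ipc (prod_encode (p23.l2 H)) = prod_encode (pB.l2 (prod_encode (p23.l2 H)))" using pB.lift2_eq[OF zC] .
    show "\<phi> (lift2 L p12.P p12.ipc \<iota>3 H) = lift2 L E1 \<iota>1 p23.ipc (lift2 L E2 \<iota>2 \<iota>3 H)"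
    proof (cases "lle E3 H p23.F2")
      case True
      define h where "h = p23.m2.tr H"
      have hL: "h \<in> lcar L" unfolding h_def using p23.m2.tr_in[OF HC] .
      have l': "p23.l2 H = (\<iota>2 h, \<iota>3 h)" using p23.l2_in[OF H True] h_def by simp
      have "pA.l2 H = (prod_encode (\<iota>1 h, \<iota>2 h), \<iota>3 h)"
        unfolding pA.l2_def using True h_def p12.ipc_eq p23.m2.atom_in_F[OF H True] by simp
      moreover have "pB.l2 (prod_encode (\<iota>2 h, \<iota>3 h)) = (\<iota>1 h, prod_encode (\<iota>2 h, \<iota>3 h))"
        unfolding pB.l2_def FB using p23.ipc_le_FP[OF hL] p23.tr_P_i[OF hL] by simp
      ultimately show ?thesis using L R1 R2 l' phi by simp
    next
      case False
      have l': "p23.l2 H = (bot E2, H)" using p23.l2_out[OF False] .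
      have "pA.l2 H = (prod_encode (bot E1, bot E2), H)" unfolding pA.l2_def using False p12.P_bot by simp
      moreover have "\<not> lle p23.P (prod_encode (bot E2, H)) p23.FP" unfolding p23.P_le p23.pl_def using False by simp
      then have "pB.l2 (prod_encode (bot E2, H)) = (bot E1, prod_encode (bot E2, H))" unfolding pB.l2_def FB by simp
      ultimately show ?thesis using L R1 R2 l' phi by simp
    qed
  qed
  have words: "map (lift1 L \<iota>1 p23.P p23.ipc) J1 @ map (lift2 L E1 \<iota>1 p23.ipc) W23
      = map \<phi> (map (lift1 L p12.ipc E3 \<iota>3) W12 @ map (lift2 L p12.P p12.ipc \<iota>3) J3)"
  proof -
    have e1: "map \<phi> (map (lift1 L p12.ipc E3 \<iota>3) (map (lift1 L \<iota>1 E2 \<iota>2) J1)) = map (lift1 L \<iota>1 p23.P p23.ipc) J1"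
      unfolding map_map by (rule map_cong[OF refl]) (use a1 J1 in auto)
    have e2: "map \<phi> (map (lift1 L p12.ipc E3 \<iota>3) (map (lift2 L E1 \<iota>1 \<iota>2) J2)) =
        map (lift2 L E1 \<iota>1 p23.ipc) (map (lift1 L \<iota>2 E3 \<iota>3) J2)"
      unfolding map_map by (rule map_cong[OF refl]) (use a2 J2 in auto)
    have e3: "map \<phi> (map (lift2 L p12.P p12.ipc \<iota>3) J3) = map (lift2 L E1 \<iota>1 p23.ipc) (map (lift2 L E2 \<iota>2 \<iota>3) J3)"
      unfolding map_map by (rule map_cong[OF refl]) (use a3 J3 in auto)
    show ?thesis unfolding W12_def W23_def using e1 e2 e3 by simp
  qed
  have "(\<lambda>x. delta (pA.P, pA.ipc, map (lift1 L p12.ipc E3 \<iota>3) W12 @ map (lift2 L p12.P p12.ipc \<iota>3) J3) x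
     - delta (pB.P, pB.ipc, map (lift1 L \<iota>1 p23.P p23.ipc) J1 @ map (lift2 L E1 \<iota>1 p23.ipc) W23) x) \<in> Rgen L"
    by (rule iso_Rgen[OF _ _ bij ord iota words]) (use dA dB in simp_all)
  then show ?thesis unfolding eqA eqB by simp
qed


lemma Rspan_add: "u \<in> Rspan L \<Longrightarrow> v \<in> Rspan L \<Longrightarrow> (\<lambda>d. u d + v d) \<in> Rspan L"
proof (induction u rule: Rspan.induct)
  case zero
  then show ?case by simp
next
  case (step g w c)
  have "(\<lambda>d. c * g d + w d + v d) = (\<lambda>d. c * g d + (w d + v d))" by (simp add: algebra_simps)
  moreover have "(\<lambda>d. c * g d + (w d + v d)) \<in> Rspan L" using Rspan.step[OF step.hyps(1) step.IH[OF step.prems]] .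
  ultimately show ?case by simp
qed

lemma Rspan_smult: "v \<in> Rspan L \<Longrightarrow> (\<lambda>d. c * v d) \<in> Rspan L"
proof (induction v rule: Rspan.induct)
  case zero
  then show ?case using Rspan.zero by simp
next
  case (step g w c')
  have "(\<lambda>d. c * (c' * g d + w d)) = (\<lambda>d. (c * c') * g d + c * w d)" by (simp add: algebra_simps)
  then show ?case using Rspan.step[OF step.hyps(1) step.IH] by simp
qed

lemma Rgen_Rspan: "g \<in> Rgen L \<Longrightarrow> g \<in> Rspan L"
  using Rspan.step[OF _ Rspan.zero, of g L 1] by simp

lemma MDeq_gen: "(\<lambda>d. x d - y d) \<in> Rgen L \<Longrightarrow> MDeq L x y"
  unfolding MDeq_def using Rgen_Rspan by blast

lemma MDeq_refl: "MDeq L x x"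
  unfolding MDeq_def using Rspan.zero by simp

lemma MDeq_sym: assumes "MDeq L x y" shows "MDeq L y x"
proof -
  have "(\<lambda>d. (-1) * (x d - y d)) \<in> Rspan L" using Rspan_smult assms unfolding MDeq_def by blast
  moreover have "(\<lambda>d. (-1) * (x d - y d)) = (\<lambda>d. y d - x d)" by (rule ext) simp
  ultimately show ?thesis unfolding MDeq_def by simp
qed

lemma MDeq_trans: assumes "MDeq L x y" "MDeq L y z" shows "MDeq L x z"
proof -
  have "(\<lambda>d. (x d - y d) + (y d - z d)) \<in> Rspan L" using Rspan_add assms unfolding MDeq_def by blast
  moreover have "(\<lambda>d. (x d - y d) + (y d - z d)) = (\<lambda>d. x d - z d)" by (rule ext) simp
  ultimately show ?thesis unfolding MDeq_def by simp
qed

lemma MDeq_smult: assumes "MDeq L x y" shows "MDeq L (\<lambda>d. c * x d) (\<lambda>d. c * y d)"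
proof -
  have "(\<lambda>d. c * (x d - y d)) \<in> Rspan L" using Rspan_smult assms unfolding MDeq_def by blast
  moreover have "(\<lambda>d. c * (x d - y d)) = (\<lambda>d. c * x d - c * y d)" by (rule ext) (simp add: algebra_simps)
  ultimately show ?thesis unfolding MDeq_def by simp
qed

lemma swap_adj:
  assumes d: "is_diag L (E, \<iota>, A @ [a, b] @ B)"
  shows "MDeq L (delta (E, \<iota>, A @ [a, b] @ B)) (\<lambda>d. - delta (E, \<iota>, A @ [b, a] @ B) d)"
proof -
  let ?J = "A @ [a, b] @ B"
  have i: "length A < length ?J" "Suc (length A) < length ?J" "length A \<noteq> Suc (length A)" by simp_all
  have J': "?J[length A := ?J ! Suc (length A), Suc (length A) := ?J ! length A] = A @ [b, a] @ B"
    by (simp add: list_update_append nth_append)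
  have "(\<lambda>d. delta (E, \<iota>, ?J) d + delta (E, \<iota>, A @ [b, a] @ B) d) \<in>
    {\<lambda>d. delta (E, \<iota>, J) d + delta (E, \<iota>, J') d | E \<iota> J J' i j.
       is_diag L (E, \<iota>, J) \<and> i < length J \<and> j < length J \<and> i \<noteq> j \<and>
       J' = J[i := J ! j, j := J ! i]}"
    apply (simp only: mem_Collect_eq)
    apply (rule exI[where x=E], rule exI[where x=\<iota>], rule exI[where x="?J"], rule exI[where x="A @ [b, a] @ B"],
       rule exI[where x="length A"], rule exI[where x="Suc (length A)"])
    using d i J' by simp
  then have "(\<lambda>d. delta (E, \<iota>, ?J) d + delta (E, \<iota>, A @ [b, a] @ B) d) \<in> Rgen L"
    unfolding Rgen_def by (intro UnI1)
  then show ?thesis using MDeq_gen by simp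
qed

lemma move:
  "is_diag L (E, \<iota>, A @ [b] @ B @ C) \<Longrightarrow>
   MDeq L (delta (E, \<iota>, A @ [b] @ B @ C)) (\<lambda>d. (-1) ^ length B * delta (E, \<iota>, A @ B @ [b] @ C) d)"
proof (induction B arbitrary: A)
  case Nil
  then show ?case using MDeq_refl by simp
next
  case (Cons c B')
  have d1: "is_diag L (E, \<iota>, A @ [b, c] @ (B' @ C))" using Cons.prems by simp
  have s1: "MDeq L (delta (E, \<iota>, A @ b # c # B' @ C)) (\<lambda>d. - delta (E, \<iota>, A @ c # b # B' @ C) d)"
    using swap_adj[OF d1] by simp
  have d2: "is_diag L (E, \<iota>, (A @ [c]) @ [b] @ B' @ C)" using Cons.prems by auto
  have s2: "MDeq L (delta (E, \<iota>, A @ c # b # B' @ C))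
     (\<lambda>d. (-1) ^ length B' * delta (E, \<iota>, A @ c # B' @ b # C) d)" using Cons.IH[OF d2] by simp
  have s2': "MDeq L (\<lambda>d. - delta (E, \<iota>, A @ c # b # B' @ C) d)
     (\<lambda>d. (-1) * ((-1) ^ length B' * delta (E, \<iota>, A @ c # B' @ b # C) d))"
    using MDeq_smult[OF s2, of "-1"] by simp
  have s3: "MDeq L (delta (E, \<iota>, A @ b # c # B' @ C))
     (\<lambda>d. (-1) * ((-1) ^ length B' * delta (E, \<iota>, A @ c # B' @ b # C) d))"
    using MDeq_trans[OF s1 s2'] .
  have fe: "(\<lambda>d. (-1) * ((-1::rat) ^ length B' * delta (E, \<iota>, A @ c # B' @ b # C) d))
     = (\<lambda>d. (-1) ^ length (c # B') * delta (E, \<iota>, A @ (c # B') @ [b] @ C) d)"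
    by (rule ext) simp
  have e1: "A @ [b] @ (c # B') @ C = A @ b # c # B' @ C" by simp
  show ?case unfolding e1 using s3 fe by simp
qed

lemma block:
  "is_diag L (E, \<iota>, A @ X @ Y) \<Longrightarrow>
   MDeq L (delta (E, \<iota>, A @ X @ Y)) (\<lambda>d. (-1) ^ (length X * length Y) * delta (E, \<iota>, A @ Y @ X) d)"
proof (induction X arbitrary: A)
  case Nil
  then show ?case using MDeq_refl by simp
next
  case (Cons x X')
  have d1: "is_diag L (E, \<iota>, (A @ [x]) @ X' @ Y)" using Cons.prems by simp
  have s1: "MDeq L (delta (E, \<iota>, A @ x # X' @ Y))
     (\<lambda>d. (-1) ^ (length X' * length Y) * delta (E, \<iota>, A @ x # Y @ X') d)" using Cons.IH[OF d1] by simp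
  have d2: "is_diag L (E, \<iota>, A @ [x] @ Y @ X')" using Cons.prems by auto
  have s2: "MDeq L (delta (E, \<iota>, A @ x # Y @ X'))
     (\<lambda>d. (-1) ^ length Y * delta (E, \<iota>, A @ Y @ x # X') d)" using move[OF d2] by simp
  have s2': "MDeq L (\<lambda>d. (-1) ^ (length X' * length Y) * delta (E, \<iota>, A @ x # Y @ X') d)
     (\<lambda>d. (-1) ^ (length X' * length Y) * ((-1) ^ length Y * delta (E, \<iota>, A @ Y @ x # X') d))"
    using MDeq_smult[OF s2] .
  have s3: "MDeq L (delta (E, \<iota>, A @ x # X' @ Y))
     (\<lambda>d. (-1) ^ (length X' * length Y) * ((-1) ^ length Y * delta (E, \<iota>, A @ Y @ x # X') d))"
    using MDeq_trans[OF s1 s2'] .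
  have fe: "(\<lambda>d. (-1::rat) ^ (length X' * length Y) * ((-1) ^ length Y * delta (E, \<iota>, A @ Y @ x # X') d))
     = (\<lambda>d. (-1) ^ (length (x # X') * length Y) * delta (E, \<iota>, A @ Y @ (x # X')) d)"
    by (rule ext) (simp add: power_add)
  have e1: "A @ (x # X') @ Y = A @ x # X' @ Y" by simp
  show ?case unfolding e1 using s3 fe by simp
qed

lemma deg_parity: "even (deg L (E, \<iota>, J)) \<longleftrightarrow> even (length J)"
  by simp

lemma sign_eq:
  "(-1::rat) ^ nat \<bar>deg L (E1, \<iota>1, J1) * deg L (E2, \<iota>2, J2)\<bar> = (-1) ^ (length J1 * length J2)"
proof -
  have "even (nat \<bar>deg L (E1, \<iota>1, J1) * deg L (E2, \<iota>2, J2)\<bar>) \<longleftrightarrow> even (deg L (E1, \<iota>1, J1) * deg L (E2, \<iota>2, J2))"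
    using even_nat_iff[of "\<bar>deg L (E1, \<iota>1, J1) * deg L (E2, \<iota>2, J2)\<bar>"] by simp
  also have "\<dots> \<longleftrightarrow> even (length J1 * length J2)"
    using deg_parity[of L E1 \<iota>1 J1] deg_parity[of L E2 \<iota>2 J2] by simp
  finally show ?thesis by (simp add: minus_one_power_iff)
qed

theorem lemma4:
  fixes L :: lat
  assumes "geometric L" and "nontrivial L"
  shows "(\<forall>\<Gamma>1 \<Gamma>2 \<Gamma>3. is_diag L \<Gamma>1 \<and> is_diag L \<Gamma>2 \<and> is_diag L \<Gamma>3 \<longrightarrow>
            MDeq L (delta (dprod L (dprod L \<Gamma>1 \<Gamma>2) \<Gamma>3)) (delta (dprod L \<Gamma>1 (dprod L \<Gamma>2 \<Gamma>3))))
       \<and> (\<forall>\<Gamma>1 \<Gamma>2. is_diag L \<Gamma>1 \<and> is_diag L \<Gamma>2 \<longrightarrow>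
            MDeq L (delta (dprod L \<Gamma>1 \<Gamma>2))
                   (\<lambda>d. (-1::rat) ^ nat \<bar>deg L \<Gamma>1 * deg L \<Gamma>2\<bar> * delta (dprod L \<Gamma>2 \<Gamma>1) d))
       \<and> (\<forall>\<Gamma>1 \<Gamma>2. is_diag L \<Gamma>1 \<and> is_diag L \<Gamma>2 \<longrightarrow>
            deg L (dprod L \<Gamma>1 \<Gamma>2) = deg L \<Gamma>1 + deg L \<Gamma>2)
       \<and> (\<forall>\<Gamma>. is_diag L \<Gamma> \<longrightarrow>
            MDeq L (delta (dprod L (L, id, []) \<Gamma>)) (delta \<Gamma>) \<and>
            MDeq L (delta (dprod L \<Gamma> (L, id, []))) (delta \<Gamma>))"
proof (intro conjI allI impI)
  have gL: "geometric L" by (rule assms(1))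
  fix \<Gamma>1 \<Gamma>2 \<Gamma>3 :: diag
  assume h: "is_diag L \<Gamma>1 \<and> is_diag L \<Gamma>2 \<and> is_diag L \<Gamma>3"
  obtain E1 \<iota>1 J1 where g1: "\<Gamma>1 = (E1, \<iota>1, J1)" by (cases \<Gamma>1) blast
  obtain E2 \<iota>2 J2 where g2: "\<Gamma>2 = (E2, \<iota>2, J2)" by (cases \<Gamma>2) blast
  obtain E3 \<iota>3 J3 where g3: "\<Gamma>3 = (E3, \<iota>3, J3)" by (cases \<Gamma>3) blast
  show "MDeq L (delta (dprod L (dprod L \<Gamma>1 \<Gamma>2) \<Gamma>3)) (delta (dprod L \<Gamma>1 (dprod L \<Gamma>2 \<Gamma>3)))"
    using MDeq_gen[OF assoc_Rgen[OF gL]] h unfolding g1 g2 g3 by blast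
next
  have gL: "geometric L" by (rule assms(1))
  fix \<Gamma>1 \<Gamma>2 :: diag
  assume h: "is_diag L \<Gamma>1 \<and> is_diag L \<Gamma>2"
  obtain E1 \<iota>1 J1 where g1: "\<Gamma>1 = (E1, \<iota>1, J1)" by (cases \<Gamma>1) blast
  obtain E2 \<iota>2 J2 where g2: "\<Gamma>2 = (E2, \<iota>2, J2)" by (cases \<Gamma>2) blast
  have d1: "is_diag L (E1, \<iota>1, J1)" and d2: "is_diag L (E2, \<iota>2, J2)" using h g1 g2 by auto
  interpret po L E1 E2 \<iota>1 \<iota>2 using po_of_diag[OF gL d1 d2] .
  define W1 where "W1 = map (lift1 L \<iota>1 E2 \<iota>2) J1"
  define W2 where "W2 = map (lift2 L E1 \<iota>1 \<iota>2) J2"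
  have d12: "is_diag L (P, ipc, [] @ W1 @ W2)" using dprod_diag[OF gL d1 d2] unfolding W1_def W2_def by simp
  have b: "MDeq L (delta (P, ipc, W1 @ W2))
     (\<lambda>d. (-1) ^ (length W1 * length W2) * delta (P, ipc, W2 @ W1) d)" using block[OF d12] by simp
  have c: "MDeq L (delta (dprod L (E2, \<iota>2, J2) (E1, \<iota>1, J1))) (delta (P, ipc, W2 @ W1))"
    using MDeq_gen[OF comm_Rgen[OF gL d1 d2]] unfolding W1_def W2_def by simp
  have c': "MDeq L (\<lambda>d. (-1) ^ (length W1 * length W2) * delta (P, ipc, W2 @ W1) d)
       (\<lambda>d. (-1) ^ (length W1 * length W2) * delta (dprod L (E2, \<iota>2, J2) (E1, \<iota>1, J1)) d)"
    using MDeq_smult[OF MDeq_sym[OF c]] .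
  have "MDeq L (delta (P, ipc, W1 @ W2))
       (\<lambda>d. (-1) ^ (length W1 * length W2) * delta (dprod L (E2, \<iota>2, J2) (E1, \<iota>1, J1)) d)"
    using MDeq_trans[OF b c'] by simp
  moreover have "dprod L (E1, \<iota>1, J1) (E2, \<iota>2, J2) = (P, ipc, W1 @ W2)" unfolding W1_def W2_def by simp
  moreover have "length W1 = length J1" "length W2 = length J2" unfolding W1_def W2_def by simp_all
  ultimately show "MDeq L (delta (dprod L \<Gamma>1 \<Gamma>2))
       (\<lambda>d. (-1::rat) ^ nat \<bar>deg L \<Gamma>1 * deg L \<Gamma>2\<bar> * delta (dprod L \<Gamma>2 \<Gamma>1) d)"
    unfolding g1 g2 sign_eq by simp
next
  have gL: "geometric L" by (rule assms(1))
  fix \<Gamma>1 \<Gamma>2 :: diag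
  assume h: "is_diag L \<Gamma>1 \<and> is_diag L \<Gamma>2"
  obtain E1 \<iota>1 J1 where g1: "\<Gamma>1 = (E1, \<iota>1, J1)" by (cases \<Gamma>1) blast
  obtain E2 \<iota>2 J2 where g2: "\<Gamma>2 = (E2, \<iota>2, J2)" by (cases \<Gamma>2) blast
  have d1: "is_diag L (E1, \<iota>1, J1)" and d2: "is_diag L (E2, \<iota>2, J2)" using h g1 g2 by auto
  interpret po L E1 E2 \<iota>1 \<iota>2 using po_of_diag[OF gL d1 d2] .
  have "set J1 \<subseteq> atoms E1" "set J2 \<subseteq> atoms E2" using d1 d2 by auto
  then show "deg L (dprod L \<Gamma>1 \<Gamma>2) = deg L \<Gamma>1 + deg L \<Gamma>2"
    unfolding g1 g2 using deg_add by simp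
next
  have gL: "geometric L" by (rule assms(1))
  fix \<Gamma> :: diag
  assume h: "is_diag L \<Gamma>"
  obtain E \<iota> J where g: "\<Gamma> = (E, \<iota>, J)" by (cases \<Gamma>) blast
  show "MDeq L (delta (dprod L (L, id, []) \<Gamma>)) (delta \<Gamma>)"
    using MDeq_sym[OF MDeq_gen[OF unit_left_Rgen[OF gL]]] h unfolding g by blast
  show "MDeq L (delta (dprod L \<Gamma> (L, id, []))) (delta \<Gamma>)"
    using MDeq_sym[OF MDeq_gen[OF unit_right_Rgen[OF gL]]] h unfolding g by blast
qed


end
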